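(* A collection of polynomials $\{\psi^p(x)=b_px+c_px^2\colon p\text{ prime}\}$ in $\mathbf{Z}[x]/(x^3)$ (with $b_p,c_p\in\mathbf{Z}$) is the set of Adams operations of a filtered $\lambda$-ring structure on $\mathbf{Z}[x]/(x^3)$ if and only if: (1) $b_p\equiv0\pmod p$ for all primes $p$; (2) $c_2\equiv1\pmod2$ and $c_p\equiv0\pmod p$ for all primes $p>2$; and (3) $(b_q^2-b_q)c_p=(b_p^2-b_p)c_q$ for all primes $p,q$. Moreover, when these conditions hold: if $b_2\ne0$ then $b_p^2-b_p\equiv0\pmod{2^{\theta_2(b_2)}}$ for all odd primes $p$; and if $b_2=0$ then $b_p=0$ for all odd primes $p$.
   Context: A (special) $\lambda$-ring is a commutative ring with operations $\lambda^i$ satisfying the Atiyah–Tall axioms; a filtered $\lambda$-ring is a $\lambda$-ring with decreasing filtration by ideals closed under $\lambda^i$, $i\ge1$. $\mathbf{Z}[x]/(x^3)$ is filtered with $x$ in a fixed positive filtration $d$ ($I^k$ generated by the $x^j$ with $jd\ge k$). $\theta_2(m)$ denotes the largest integer with $2^{\theta_2(m)}\mid m$. *)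

theory Defs
  imports Main "HOL-Library.Poly_Mapping" "HOL-Computational_Algebra.Primes"
begin

type_synonym mpoly = "(nat \<Rightarrow>\<^sub>0 nat) \<Rightarrow>\<^sub>0 int"

definition mmono :: "(nat \<Rightarrow> 'a::comm_ring_1) \<Rightarrow> (nat \<Rightarrow>\<^sub>0 nat) \<Rightarrow> 'a" where
  "mmono v mon = (\<Prod>i\<in>Poly_Mapping.keys mon. v i ^ Poly_Mapping.lookup mon i)"

definition mpeval :: "(nat \<Rightarrow> 'a::comm_ring_1) \<Rightarrow> mpoly \<Rightarrow> 'a" where
  "mpeval v P = (\<Sum>mon\<in>Poly_Mapping.keys P. of_int (Poly_Mapping.lookup P mon) * mmono v mon)"

definition esymS :: "nat \<Rightarrow> 'b set \<Rightarrow> ('b \<Rightarrow> int) \<Rightarrow> int" where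
  "esymS k A c = (\<Sum>S\<in>{S. S \<subseteq> A \<and> card S = k}. \<Prod>i\<in>S. c i)"

text \<open>Universal polynomial P_n: coefficient of t^n in the product over i,j<n of (1 + xi_i eta_j t),
  written as a polynomial in e_1(xi),...,e_n(xi) (variables 0..n-1) and e_1(eta),...,e_n(eta)
  (variables n..2n-1).  Polynomial identities over Z are detected on integer points.\<close>
definition Pmul :: "nat \<Rightarrow> mpoly" where
  "Pmul n = (SOME P. \<forall>\<xi> \<eta> :: nat \<Rightarrow> int.
      mpeval (\<lambda>j. if j < n then of_int (esymS (j+1) {..<n} \<xi>)
                  else if j < 2*n then of_int (esymS (j-n+1) {..<n} \<eta>) else 0) P
      = esymS n ({..<n} \<times> {..<n}) (\<lambda>(i,j). \<xi> i * \<eta> j))"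

text \<open>Universal polynomial P_{m,n}: coefficient of t^m in the product over n-element subsets S of
  {0..<mn} of (1 + (prod_{i in S} xi_i) t), as a polynomial in e_1(xi),...,e_{mn}(xi).\<close>
definition Pcomp :: "nat \<Rightarrow> nat \<Rightarrow> mpoly" where
  "Pcomp m n = (SOME P. \<forall>\<xi> :: nat \<Rightarrow> int.
      mpeval (\<lambda>j. if j < m*n then of_int (esymS (j+1) {..<m*n} \<xi>) else 0) P
      = esymS m {S. S \<subseteq> {..<m*n} \<and> card S = n} (\<lambda>S. \<Prod>i\<in>S. \<xi> i))"

section \<open>(Special) lambda-rings in the sense of Atiyah--Tall\<close>

definition pre_lambda_ring :: "(nat \<Rightarrow> 'a::comm_ring_1 \<Rightarrow> 'a) \<Rightarrow> bool" where
  "pre_lambda_ring lam \<longleftrightarrow>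
     (\<forall>x. lam 0 x = 1) \<and> (\<forall>x. lam 1 x = x) \<and>
     (\<forall>n x y. lam n (x + y) = (\<Sum>i\<le>n. lam i x * lam (n - i) y))"

definition lambda_ring :: "(nat \<Rightarrow> 'a::comm_ring_1 \<Rightarrow> 'a) \<Rightarrow> bool" where
  "lambda_ring lam \<longleftrightarrow> pre_lambda_ring lam \<and>
     (\<forall>n\<ge>2. lam n 1 = 0) \<and>
     (\<forall>n\<ge>1. \<forall>x y. lam n (x * y) =
         mpeval (\<lambda>j. if j < n then lam (j+1) x else if j < 2*n then lam (j-n+1) y else 0) (Pmul n)) \<and>
     (\<forall>m\<ge>1. \<forall>n\<ge>1. \<forall>x. lam m (lam n x) =
         mpeval (\<lambda>j. if j < m*n then lam (j+1) x else 0) (Pcomp m n))"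

text \<open>Adams operations via the Newton formula
  psi^n - lam^1 psi^(n-1) + ... + (-1)^(n-1) lam^(n-1) psi^1 + (-1)^n n lam^n = 0.\<close>
fun adams :: "(nat \<Rightarrow> 'a::comm_ring_1 \<Rightarrow> 'a) \<Rightarrow> nat \<Rightarrow> 'a \<Rightarrow> 'a" where
  "adams lam 0 x = 0"
| "adams lam (Suc n) x =
     (-1)^n * of_nat (Suc n) * lam (Suc n) x
     + (\<Sum>j<n. (-1)^(n - j + 1) * lam (n - j) x * adams lam (Suc j) x)"

datatype tr3 = Tr int int int   (* Tr a b c = a + b x + c x^2 *)

instantiation tr3 :: comm_ring_1
begin
definition "0 = Tr 0 0 0"
definition "1 = Tr 1 0 0"
fun plus_tr3 where "Tr a b c + Tr a' b' c' = Tr (a+a') (b+b') (c+c')"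
fun minus_tr3 where "Tr a b c - Tr a' b' c' = Tr (a-a') (b-b') (c-c')"
fun uminus_tr3 where "- Tr a b c = Tr (-a) (-b) (-c)"
fun times_tr3 where "Tr a b c * Tr a' b' c' = Tr (a*a') (a*b' + b*a') (a*c' + b*b' + c*a')"
instance
proof
  fix x y z :: tr3
  show "x * y * z = x * (y * z)"
    by (cases x; cases y; cases z; simp add: algebra_simps)
  show "x * y = y * x" by (cases x; cases y; simp add: algebra_simps)
  show "1 * x = x" by (cases x; simp add: one_tr3_def)
  show "x + y + z = x + (y + z)" by (cases x; cases y; cases z; simp)
  show "x + y = y + x" by (cases x; cases y; simp)
  show "0 + x = x" by (cases x; simp add: zero_tr3_def)
  show "- x + x = 0" by (cases x; simp add: zero_tr3_def)
  show "x - y = x + - y" by (cases x; cases y; simp)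
  show "(x + y) * z = x * z + y * z" by (cases x; cases y; cases z; simp add: algebra_simps)
  show "(0::tr3) \<noteq> 1" by (simp add: zero_tr3_def one_tr3_def)
qed
end

definition X :: tr3 where "X = Tr 0 1 0"

text \<open>Filtration with x in filtration d: I^k is the ideal generated by the x^j with j*d \<ge> k,
  i.e. the elements whose coefficient of x^j vanishes whenever j*d < k.\<close>
definition fil :: "nat \<Rightarrow> nat \<Rightarrow> tr3 set" where
  "fil d k = {Tr a b c | a b c. (0*d < k \<longrightarrow> a = 0) \<and> (1*d < k \<longrightarrow> b = 0) \<and> (2*d < k \<longrightarrow> c = 0)}"

definition filtered_lambda_ring :: "nat \<Rightarrow> (nat \<Rightarrow> tr3 \<Rightarrow> tr3) \<Rightarrow> bool" where
  "filtered_lambda_ring d lam \<longleftrightarrow> lambda_ring lam \<and>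
     (\<forall>k i. i \<ge> 1 \<longrightarrow> (\<forall>r\<in>fil d k. lam i r \<in> fil d k))"

end

theory Submission
  imports Defs "HOL-Computational_Algebra.Computational_Algebra"
begin


definition rhom :: "('a::comm_ring_1 \<Rightarrow> 'b::comm_ring_1) \<Rightarrow> bool" where
  "rhom h \<longleftrightarrow> (\<forall>x y. h (x + y) = h x + h y) \<and> (\<forall>x y. h (x * y) = h x * h y) \<and> h 1 = 1"

lemma rhom_add: "rhom h \<Longrightarrow> h (x + y) = h x + h y" by (simp add: rhom_def)
lemma rhom_mult: "rhom h \<Longrightarrow> h (x * y) = h x * h y" by (simp add: rhom_def)
lemma rhom_1: "rhom h \<Longrightarrow> h 1 = 1" by (simp add: rhom_def)
lemma rhom_0: "rhom h \<Longrightarrow> h 0 = 0"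
proof -
  assume "rhom h"
  then have "h (0 + 0) = h 0 + h 0" by (rule rhom_add)
  then show ?thesis by simp
qed
lemma rhom_uminus: "rhom h \<Longrightarrow> h (- x) = - h x"
proof -
  assume h: "rhom h"
  then have "h (x + - x) = h x + h (- x)" by (rule rhom_add)
  then have "h x + h (- x) = 0" using rhom_0[OF h] by simp
  then show ?thesis by (simp add: add_eq_0_iff)
qed
lemma rhom_diff: "rhom h \<Longrightarrow> h (x - y) = h x - h y"
  using rhom_add[of h x "- y"] rhom_uminus[of h y] by simp
lemma rhom_sum: "rhom h \<Longrightarrow> h (sum f A) = (\<Sum>a\<in>A. h (f a))"
  by (induction A rule: infinite_finite_induct) (auto simp: rhom_0 rhom_add)
lemma rhom_prod: "rhom h \<Longrightarrow> h (prod f A) = (\<Prod>a\<in>A. h (f a))"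
  by (induction A rule: infinite_finite_induct) (auto simp: rhom_1 rhom_mult)
lemma rhom_power: "rhom h \<Longrightarrow> h (x ^ n) = h x ^ n"
  by (induction n) (auto simp: rhom_1 rhom_mult)
lemma rhom_of_nat: "rhom h \<Longrightarrow> h (of_nat n) = of_nat n"
  by (induction n) (auto simp: rhom_0 rhom_1 rhom_add)
lemma rhom_of_int: "rhom h \<Longrightarrow> h (of_int n) = of_int n"
  by (cases n) (auto simp: rhom_of_nat rhom_uminus rhom_diff rhom_1)
lemma rhom_id: "rhom (\<lambda>x. x)" by (simp add: rhom_def)
lemma rhom_of_int_fun: "rhom (of_int :: int \<Rightarrow> 'a::comm_ring_1)" by (simp add: rhom_def)
lemma rhom_comp: "rhom h \<Longrightarrow> rhom g \<Longrightarrow> rhom (\<lambda>x. g (h x))"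
  by (simp add: rhom_def)

lemma mpeval_superset:
  assumes "finite S" "Poly_Mapping.keys P \<subseteq> S"
  shows "mpeval v P = (\<Sum>m\<in>S. of_int (Poly_Mapping.lookup P m) * mmono v m)"
  unfolding mpeval_def using assms
  by (intro sum.mono_neutral_left) (auto simp: in_keys_iff)

lemma mpeval_add: "mpeval v (P + Q) = mpeval v P + mpeval v Q"
proof -
  let ?S = "Poly_Mapping.keys P \<union> Poly_Mapping.keys Q"
  have fin: "finite ?S" by simp
  have k: "Poly_Mapping.keys (P + Q) \<subseteq> ?S" by (rule keys_add)
  have 1: "mpeval v (P + Q) = (\<Sum>m\<in>?S. of_int (Poly_Mapping.lookup (P + Q) m) * mmono v m)"
    by (rule mpeval_superset[OF fin k])
  have 2: "mpeval v P = (\<Sum>m\<in>?S. of_int (Poly_Mapping.lookup P m) * mmono v m)"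
    by (rule mpeval_superset[OF fin]) auto
  have 3: "mpeval v Q = (\<Sum>m\<in>?S. of_int (Poly_Mapping.lookup Q m) * mmono v m)"
    by (rule mpeval_superset[OF fin]) auto
  show ?thesis unfolding 1 2 3
    by (simp add: lookup_add distrib_right sum.distrib)
qed

lemma mpeval_zero [simp]: "mpeval v 0 = 0"
  by (simp add: mpeval_def)

lemma mpeval_single: "mpeval v (Poly_Mapping.single m c) = of_int c * mmono v m"
  by (simp add: mpeval_def)

lemma mpeval_sum: "mpeval v (sum f A) = (\<Sum>a\<in>A. mpeval v (f a))"
  by (induction A rule: infinite_finite_induct) (auto simp: mpeval_add)

lemma mpeval_uminus: "mpeval v (- P) = - mpeval v P"
proof -
  have "P + - P = 0" by simp
  then have "mpeval v (P + - P) = 0" by simp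
  then have "mpeval v P + mpeval v (- P) = 0" by (simp only: mpeval_add)
  then show ?thesis by (simp add: add_eq_0_iff)
qed

lemma mpeval_diff: "mpeval v (P - Q) = mpeval v P - mpeval v Q"
  using mpeval_add[of v P "- Q"] by (simp add: mpeval_uminus)

lemma poly_mapping_sum_single:
  "P = (\<Sum>m\<in>Poly_Mapping.keys P. Poly_Mapping.single m (Poly_Mapping.lookup P m))"
proof (rule poly_mapping_eqI)
  fix k
  show "Poly_Mapping.lookup P k = Poly_Mapping.lookup (\<Sum>m\<in>Poly_Mapping.keys P. Poly_Mapping.single m (Poly_Mapping.lookup P m)) k"
    by (cases "k \<in> Poly_Mapping.keys P")
      (auto simp: lookup_sum lookup_single when_def in_keys_iff sum.delta)
qed

lemma mmono_superset:
  assumes "finite S" "Poly_Mapping.keys m \<subseteq> S"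
  shows "mmono v m = (\<Prod>i\<in>S. v i ^ Poly_Mapping.lookup m i)"
  unfolding mmono_def using assms
  by (intro prod.mono_neutral_left) (auto simp: in_keys_iff)

lemma mmono_add: "mmono v (a + b) = mmono v a * mmono v b"
proof -
  let ?S = "Poly_Mapping.keys a \<union> Poly_Mapping.keys b"
  have fin: "finite ?S" by simp
  have k: "Poly_Mapping.keys (a + b) \<subseteq> ?S" by (rule keys_add)
  have 1: "mmono v (a + b) = (\<Prod>i\<in>?S. v i ^ Poly_Mapping.lookup (a + b) i)"
    by (rule mmono_superset[OF fin k])
  have 2: "mmono v a = (\<Prod>i\<in>?S. v i ^ Poly_Mapping.lookup a i)"
    by (rule mmono_superset[OF fin]) auto
  have 3: "mmono v b = (\<Prod>i\<in>?S. v i ^ Poly_Mapping.lookup b i)"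
    by (rule mmono_superset[OF fin]) auto
  show ?thesis unfolding 1 2 3
    by (simp add: lookup_add power_add prod.distrib)
qed

lemma mmono_zero [simp]: "mmono v 0 = 1"
  by (simp add: mmono_def)

lemma mpeval_mult: "mpeval v (P * Q) = mpeval v P * mpeval v Q"
proof -
  let ?A = "Poly_Mapping.keys P" and ?B = "Poly_Mapping.keys Q"
  have "P * Q = (\<Sum>a\<in>?A. Poly_Mapping.single a (Poly_Mapping.lookup P a)) *
                (\<Sum>b\<in>?B. Poly_Mapping.single b (Poly_Mapping.lookup Q b))"
    by (subst (1) poly_mapping_sum_single[of P], subst (1) poly_mapping_sum_single[of Q]) (rule refl)
  also have "\<dots> = (\<Sum>a\<in>?A. \<Sum>b\<in>?B. Poly_Mapping.single (a + b) (Poly_Mapping.lookup P a * Poly_Mapping.lookup Q b))"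
    by (simp add: sum_product mult_single)
  finally have "mpeval v (P * Q) = (\<Sum>a\<in>?A. \<Sum>b\<in>?B. of_int (Poly_Mapping.lookup P a * Poly_Mapping.lookup Q b) * mmono v (a + b))"
    by (simp add: mpeval_sum mpeval_single)
  also have "\<dots> = (\<Sum>a\<in>?A. of_int (Poly_Mapping.lookup P a) * mmono v a) * (\<Sum>b\<in>?B. of_int (Poly_Mapping.lookup Q b) * mmono v b)"
    by (simp add: sum_product mmono_add algebra_simps)
  finally show ?thesis by (simp add: mpeval_def)
qed

lemma mpeval_one [simp]: "mpeval v 1 = 1"
  by (simp add: mpeval_def lookup_one)

lemma mpeval_of_int: "mpeval v (of_int c) = of_int c"
proof -
  have "(of_int c :: mpoly) = Poly_Mapping.single 0 c" by (metis single_of_int of_int_eq_id id_apply)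
  then show ?thesis by (simp add: mpeval_single)
qed

lemma mpeval_power: "mpeval v (P ^ n) = mpeval v P ^ n"
  by (induction n) (auto simp: mpeval_mult)

definition mvar :: "nat \<Rightarrow> mpoly" where
  "mvar i = Poly_Mapping.single (Poly_Mapping.single i 1) 1"

lemma mpeval_mvar [simp]: "mpeval v (mvar i) = v i"
  by (simp add: mvar_def mpeval_single mmono_def)

lemma mmono_hom: "rhom h \<Longrightarrow> h (mmono v m) = mmono (\<lambda>i. h (v i)) m"
  by (simp add: mmono_def rhom_prod rhom_power)

lemma mpeval_hom: "rhom h \<Longrightarrow> h (mpeval v P) = mpeval (\<lambda>i. h (v i)) P"
  by (simp add: mpeval_def rhom_sum rhom_mult rhom_of_int mmono_hom)

lemma mmono_cong: "(\<And>i. i \<in> Poly_Mapping.keys m \<Longrightarrow> v i = w i) \<Longrightarrow> mmono v m = mmono w m"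
  by (simp add: mmono_def)


definition esym :: "nat \<Rightarrow> 'b set \<Rightarrow> ('b \<Rightarrow> 'a::comm_ring_1) \<Rightarrow> 'a" where
  "esym k A c = (\<Sum>S\<in>{S. S \<subseteq> A \<and> card S = k}. \<Prod>i\<in>S. c i)"

lemma esymS_esym: "esymS k A c = esym k A c"
  by (simp add: esymS_def esym_def)

lemma esym_hom: "rhom h \<Longrightarrow> h (esym k A c) = esym k A (\<lambda>i. h (c i))"
  by (simp add: esym_def rhom_sum rhom_prod)

lemma esym_0: "finite A \<Longrightarrow> esym 0 A c = 1"
proof -
  assume "finite A"
  then have "{S. S \<subseteq> A \<and> card S = 0} = {{}}"
    by (auto dest: finite_subset)
  then show ?thesis by (simp add: esym_def)
qed

lemma esym_empty_Suc: "esym (Suc k) {} c = 0"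
proof -
  have E: "{S. S \<subseteq> {} \<and> card S = Suc k} = {}" by auto
  show ?thesis unfolding esym_def E by simp
qed

lemma esym_gt: "finite A \<Longrightarrow> card A < k \<Longrightarrow> esym k A c = 0"
proof -
  assume "finite A" "card A < k"
  have E: "{S. S \<subseteq> A \<and> card S = k} = {}"
  proof (intro equalityI subsetI)
    fix S assume "S \<in> {S. S \<subseteq> A \<and> card S = k}"
    then have "S \<subseteq> A" "card S = k" by auto
    then have "card S \<le> card A" using card_mono[OF \<open>finite A\<close>] by blast
    then show "S \<in> {}" using \<open>card S = k\<close> \<open>card A < k\<close> by simp
  qed simp
  show ?thesis unfolding esym_def E by (simp only: sum.empty)
qed

lemma esym_insert:
  assumes fin: "finite A" and a: "a \<notin> A"
  shows "esym (Suc k) (insert a A) c = esym (Suc k) A c + c a * esym k A c"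
proof -
  let ?L = "{S. S \<subseteq> insert a A \<and> card S = Suc k}"
  let ?B = "{S. S \<subseteq> A \<and> card S = Suc k}"
  let ?C = "{S. S \<subseteq> A \<and> card S = k}"
  have split: "?L = ?B \<union> insert a ` ?C"
  proof (intro equalityI subsetI)
    fix S assume "S \<in> ?L"
    then have S: "S \<subseteq> insert a A" "card S = Suc k" by auto
    show "S \<in> ?B \<union> insert a ` ?C"
    proof (cases "a \<in> S")
      case True
      have "finite S" using S(1) fin finite_subset by blast
      then have "card (S - {a}) = k" using S True by simp
      moreover have "S - {a} \<subseteq> A" using S by auto
      moreover have "S = insert a (S - {a})" using True by auto
      ultimately show ?thesis by blast
    next
      case False
      then show ?thesis using S by auto
    qed
  next
    fix S assume "S \<in> ?B \<union> insert a ` ?C"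
    then show "S \<in> ?L"
    proof
      assume "S \<in> ?B" then show ?thesis by auto
    next
      assume "S \<in> insert a ` ?C"
      then obtain T where T: "T \<subseteq> A" "card T = k" "S = insert a T" by auto
      have "finite T" using T(1) fin finite_subset by blast
      moreover have "a \<notin> T" using T(1) a by auto
      ultimately have "card S = Suc k" using T by simp
      then show ?thesis using T by auto
    qed
  qed
  have disj: "?B \<inter> insert a ` ?C = {}" using a by auto
  have finB: "finite ?B" using fin by (auto intro: finite_subset[of _ "Pow A"])
  have finC: "finite ?C" using fin by (auto intro: finite_subset[of _ "Pow A"])
  have inj: "inj_on (insert a) ?C"
  proof (rule inj_onI)
    fix S T assume S: "S \<in> ?C" and T: "T \<in> ?C" and e: "insert a S = insert a T"
    have "a \<notin> S" "a \<notin> T" using S T a by auto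
    then have "S = insert a S - {a}" "T = insert a T - {a}" by auto
    then show "S = T" using e by simp
  qed
  have "esym (Suc k) (insert a A) c = (\<Sum>S\<in>?B. \<Prod>i\<in>S. c i) + (\<Sum>S\<in>insert a ` ?C. \<Prod>i\<in>S. c i)"
    unfolding esym_def split using finB finC disj by (intro sum.union_disjoint) auto
  also have "(\<Sum>S\<in>insert a ` ?C. \<Prod>i\<in>S. c i) = (\<Sum>T\<in>?C. \<Prod>i\<in>insert a T. c i)"
    using inj by (simp add: sum.reindex)
  also have "\<dots> = (\<Sum>T\<in>?C. c a * (\<Prod>i\<in>T. c i))"
  proof (rule sum.cong)
    fix T assume "T \<in> ?C"
    then have "finite T" "a \<notin> T" using fin a finite_subset by auto
    then show "(\<Prod>i\<in>insert a T. c i) = c a * (\<Prod>i\<in>T. c i)" by simp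
  qed simp
  finally show ?thesis by (simp add: esym_def sum_distrib_left)
qed

lemma esym_reindex:
  assumes "bij_betw f A B"
  shows "esym k B c = esym k A (\<lambda>i. c (f i))"
proof -
  have inj: "inj_on f A" using assms by (simp add: bij_betw_def)
  have img: "f ` A = B" using assms by (simp add: bij_betw_def)
  have 1: "{S. S \<subseteq> B \<and> card S = k} = (\<lambda>S. f ` S) ` {S. S \<subseteq> A \<and> card S = k}"
  proof (intro equalityI subsetI)
    fix S assume S: "S \<in> {S. S \<subseteq> B \<and> card S = k}"
    let ?T = "{x\<in>A. f x \<in> S}"
    have "f ` ?T = S" using S img by auto
    moreover have "card ?T = k"
    proof -
      have "inj_on f ?T" using inj by (rule inj_on_subset) auto
      then have "card (f ` ?T) = card ?T" by (rule card_image)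
      then show ?thesis using S \<open>f ` ?T = S\<close> by simp
    qed
    moreover have "?T \<subseteq> A" by blast
    ultimately show "S \<in> (\<lambda>S. f ` S) ` {S. S \<subseteq> A \<and> card S = k}"
      by (intro image_eqI[of _ _ ?T]) auto
  next
    fix S assume "S \<in> (\<lambda>S. f ` S) ` {S. S \<subseteq> A \<and> card S = k}"
    then obtain T where T: "T \<subseteq> A" "card T = k" "S = f ` T" by auto
    have "inj_on f T" using inj T(1) by (rule inj_on_subset)
    then have "card S = k" using T by (simp add: card_image)
    then show "S \<in> {S. S \<subseteq> B \<and> card S = k}" using T img by auto
  qed
  have 2: "inj_on (\<lambda>S. f ` S) {S. S \<subseteq> A \<and> card S = k}"
    using inj by (auto simp: inj_on_def inj_on_image_eq_iff)
  show ?thesis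
    unfolding esym_def 1 using 2
    by (simp add: sum.reindex prod.reindex inj_on_subset[OF inj])
qed

definition ispoly :: "('a::comm_ring_1 \<Rightarrow> 'a) \<Rightarrow> bool" where
  "ispoly f \<longleftrightarrow> (\<exists>p. \<forall>z. f z = poly p z)"

lemma ispoly_const [simp, intro]: "ispoly (\<lambda>z. c)"
  unfolding ispoly_def by (rule exI[of _ "[:c:]"]) simp

lemma ispoly_id [simp, intro]: "ispoly (\<lambda>z. z)"
  unfolding ispoly_def by (rule exI[of _ "[:0, 1:]"]) simp

lemma ispoly_add [intro]: "ispoly f \<Longrightarrow> ispoly g \<Longrightarrow> ispoly (\<lambda>z. f z + g z)"
  unfolding ispoly_def by (metis poly_add)

lemma ispoly_mult [intro]: "ispoly f \<Longrightarrow> ispoly g \<Longrightarrow> ispoly (\<lambda>z. f z * g z)"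
  unfolding ispoly_def by (metis poly_mult)

lemma ispoly_uminus [intro]: "ispoly f \<Longrightarrow> ispoly (\<lambda>z. - f z)"
  unfolding ispoly_def by (metis poly_minus)

lemma ispoly_diff [intro]: "ispoly f \<Longrightarrow> ispoly g \<Longrightarrow> ispoly (\<lambda>z. f z - g z)"
  unfolding ispoly_def by (metis poly_diff)

lemma ispoly_sum [intro]: "(\<And>a. a \<in> A \<Longrightarrow> ispoly (f a)) \<Longrightarrow> ispoly (\<lambda>z. \<Sum>a\<in>A. f a z)"
proof (induction A rule: infinite_finite_induct)
  case (insert x F)
  then show ?case by (simp add: ispoly_add)
qed auto

lemma ispoly_prod [intro]: "(\<And>a. a \<in> A \<Longrightarrow> ispoly (f a)) \<Longrightarrow> ispoly (\<lambda>z. \<Prod>a\<in>A. f a z)"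
proof (induction A rule: infinite_finite_induct)
  case (insert x F)
  then show ?case by (simp add: ispoly_mult)
qed auto

lemma ispoly_power [intro]: "ispoly f \<Longrightarrow> ispoly (\<lambda>z. f z ^ n)"
  by (induction n) (auto simp: ispoly_mult)

lemma ispoly_mpeval:
  assumes "\<And>i. ispoly (\<lambda>z. v z i)"
  shows "ispoly (\<lambda>z. mpeval (v z) P)"
  unfolding mpeval_def mmono_def using assms
  by (intro ispoly_sum ispoly_mult ispoly_prod ispoly_power ispoly_const) auto

lemma ispoly_esym:
  assumes "\<And>i. ispoly (\<lambda>z. c z i)"
  shows "ispoly (\<lambda>z. esym k A (c z))"
  unfolding esym_def using assms
  by (intro ispoly_sum ispoly_prod) auto

lemma ispoly_upd: "ispoly (\<lambda>z. (v(k := z)) i)"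
  by (cases "i = k") auto

lemma ispoly_zero:
  fixes f :: "'a::idom \<Rightarrow> 'a"
  assumes "ispoly f" "infinite {z. f z = 0}"
  shows "f z = 0"
proof -
  obtain p where p: "\<And>z. f z = poly p z" using assms(1) unfolding ispoly_def by blast
  have "p = 0"
  proof (rule ccontr)
    assume "p \<noteq> 0"
    then have "finite {z. poly p z = 0}" by (rule poly_roots_finite)
    then show False using assms(2) p by simp
  qed
  then show ?thesis using p by simp
qed


section \<open>Newton recursion\<close>

fun nw :: "(nat \<Rightarrow> 'a::comm_ring_1) \<Rightarrow> nat \<Rightarrow> 'a" where
  "nw u 0 = 0"
| "nw u (Suc n) =
     (-1)^n * of_nat (Suc n) * u (Suc n)
     + (\<Sum>j<n. (-1)^(n - j + 1) * u (n - j) * nw u (Suc j))"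

declare nw.simps [simp del] adams.simps [simp del]

lemma nw_0 [simp]: "nw u 0 = 0" by (simp add: nw.simps)

lemma adams_nw: "adams lam n x = nw (\<lambda>i. lam i x) n"
proof (induction n rule: less_induct)
  case (less n)
  show ?case
  proof (cases n)
    case (Suc m)
    have "\<And>j. j \<in> {..<m} \<Longrightarrow> adams lam (Suc j) x = nw (\<lambda>i. lam i x) (Suc j)"
      using less Suc by simp
    then have "(\<Sum>j<m. (-1)^(m - j + 1) * lam (m - j) x * adams lam (Suc j) x) =
          (\<Sum>j<m. (-1)^(m - j + 1) * lam (m - j) x * nw (\<lambda>i. lam i x) (Suc j))"
      by (intro sum.cong refl) simp
    then show ?thesis unfolding Suc by (subst adams.simps(2), subst nw.simps(2)) simp
  qed (simp add: adams.simps)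
qed

fun NI :: "(nat \<Rightarrow> 'a) \<Rightarrow> (nat \<Rightarrow> 'a::comm_ring_1) \<Rightarrow> nat \<Rightarrow> 'a" where
  "NI iv s 0 = 1"
| "NI iv s (Suc n) = iv (Suc n) * ((-1)^n * (s (Suc n) -
      (\<Sum>j<n. (-1)^(n - j + 1) * NI iv s (n - j) * s (Suc j))))"

declare NI.simps [simp del]

definition Newt :: "(nat \<Rightarrow> 'a::comm_ring_1) \<Rightarrow> (nat \<Rightarrow> 'a) \<Rightarrow> bool" where
  "Newt u s \<longleftrightarrow> (\<forall>k\<ge>1. (\<Sum>i<k. (-1)^i * u i * s (k - i)) = (-1)^(k - 1) * of_nat k * u k)"

lemma sum_refl_aux:
  "(\<Sum>j<n. (-1)^(n - j + 1) * u (n - j) * s (Suc j)) =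
   (\<Sum>i<n. (-1)^i * (u (Suc i) :: 'a::comm_ring_1) * s (n - i))"
proof -
  have "(\<Sum>j<n. (-1)^(n - j + 1) * u (n - j) * s (Suc j)) =
        (\<Sum>i<n. (-1)^(n - (n - Suc i) + 1) * u (n - (n - Suc i)) * s (Suc (n - Suc i)))"
    by (rule sum.nat_diff_reindex[symmetric])
  also have "\<dots> = (\<Sum>i<n. (-1)^i * u (Suc i) * s (n - i))"
  proof (rule sum.cong)
    fix i assume "i \<in> {..<n}"
    then have i: "i < n" by simp
    then have 1: "n - (n - Suc i) = Suc i" and 2: "Suc (n - Suc i) = n - i" by auto
    have 3: "(-1::'a)^(Suc i + 1) = (-1)^i" by simp
    show "(-1)^(n - (n - Suc i) + 1) * u (n - (n - Suc i)) * s (Suc (n - Suc i)) = (-1)^i * u (Suc i) * s (n - i)"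
      unfolding 1 2 3 ..
  qed simp
  finally show ?thesis .
qed

lemma Newt_sum_Suc:
  "(\<Sum>i<Suc n. (-1)^i * u i * s (Suc n - i)) =
   u 0 * s (Suc n) - (\<Sum>i<n. (-1)^i * (u (Suc i) :: 'a::comm_ring_1) * s (n - i))"
proof -
  have "(\<Sum>i<Suc n. (-1)^i * u i * s (Suc n - i)) = (-1)^0 * u 0 * s (Suc n - 0) + (\<Sum>i<n. (-1)^(Suc i) * u (Suc i) * s (Suc n - Suc i))"
    by (rule sum.lessThan_Suc_shift)
  also have "(\<Sum>i<n. (-1)^(Suc i) * u (Suc i) * s (Suc n - Suc i)) = - (\<Sum>i<n. (-1)^i * u (Suc i) * s (n - i))"
    by (simp add: sum_negf[symmetric])
  finally show ?thesis by simp
qed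

lemma nw_Suc_alt:
  "nw u (Suc n) = (-1)^n * of_nat (Suc n) * u (Suc n) + (\<Sum>i<n. (-1)^i * u (Suc i) * nw u (n - i))"
proof -
  have "(\<Sum>i<n. (-1)^i * u (Suc i) * nw u (n - i)) = (\<Sum>j<n. (-1)^(n - j + 1) * u (n - j) * nw u (Suc j))"
    by (rule sum_refl_aux[symmetric])
  then show ?thesis by (subst nw.simps(2)) simp
qed

lemma NI_Suc_alt:
  "NI iv s (Suc n) = iv (Suc n) * ((-1)^n * (s (Suc n) - (\<Sum>i<n. (-1)^i * NI iv s (Suc i) * s (n - i))))"
proof -
  have "(\<Sum>j<n. (-1)^(n - j + 1) * NI iv s (n - j) * s (Suc j)) = (\<Sum>i<n. (-1)^i * NI iv s (Suc i) * s (n - i))"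
    by (rule sum_refl_aux)
  then show ?thesis by (subst NI.simps(2)) simp
qed

lemma NI_0 [simp]: "NI iv s 0 = 1" by (simp add: NI.simps)

lemma Newt_nw: "u 0 = 1 \<Longrightarrow> Newt u (nw u)"
  unfolding Newt_def
proof (intro allI impI)
  fix k :: nat assume u0: "u 0 = 1" and k: "k \<ge> 1"
  then obtain n where n: "k = Suc n" by (cases k) auto
  show "(\<Sum>i<k. (-1)^i * u i * nw u (k - i)) = (-1)^(k - 1) * of_nat k * u k"
    unfolding n Newt_sum_Suc using u0 by (simp add: nw_Suc_alt)
qed

lemma Newt_nw_eq:
  assumes u0: "u 0 = 1" and N: "Newt u s"
  shows "k \<ge> 1 \<Longrightarrow> s k = nw u k"
proof (induction k rule: less_induct)
  case (less k)
  then obtain n where n: "k = Suc n" by (cases k) auto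
  have IH: "\<And>i. i < n \<Longrightarrow> s (n - i) = nw u (n - i)"
    using less n by auto
  have "(\<Sum>i<k. (-1)^i * u i * s (k - i)) = (-1)^(k - 1) * of_nat k * u k"
    using N less.prems unfolding Newt_def by blast
  then have "s (Suc n) - (\<Sum>i<n. (-1)^i * u (Suc i) * s (n - i)) = (-1)^n * of_nat (Suc n) * u (Suc n)"
    unfolding n Newt_sum_Suc using u0 by simp
  moreover have "(\<Sum>i<n. (-1)^i * u (Suc i) * s (n - i)) = (\<Sum>i<n. (-1)^i * u (Suc i) * nw u (n - i))"
    using IH by (intro sum.cong) auto
  ultimately show ?case unfolding n nw_Suc_alt by (simp add: algebra_simps)
qed

definition ivcond :: "(nat \<Rightarrow> 'a::comm_ring_1) \<Rightarrow> bool" where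
  "ivcond iv \<longleftrightarrow> (\<forall>k\<ge>1. of_nat k * iv k = 1)"

lemma Newt_NI:
  assumes iv: "ivcond iv"
  shows "Newt (NI iv s) s"
  unfolding Newt_def
proof (intro allI impI)
  fix k :: nat assume k: "k \<ge> 1"
  then obtain n where n: "k = Suc n" by (cases k) auto
  have ivn: "of_nat (Suc n) * iv (Suc n) = 1" using iv unfolding ivcond_def by auto
  let ?A = "s (Suc n) - (\<Sum>i<n. (-1)^i * NI iv s (Suc i) * s (n - i))"
  have "(-1)^n * of_nat (Suc n) * NI iv s (Suc n) = ((-1)^n * (-1)^n) * (of_nat (Suc n) * iv (Suc n)) * ?A"
    by (subst NI_Suc_alt) (simp only: mult_ac)
  also have "\<dots> = ?A"
  proof -
    have m1: "((-1::'a)^n * (-1)^n) = 1" by (simp flip: power_add)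
    show ?thesis by (simp only: m1 ivn mult_1_left)
  qed
  finally show "(\<Sum>i<k. (-1)^i * NI iv s i * s (k - i)) = (-1)^(k - 1) * of_nat k * NI iv s k"
    unfolding n Newt_sum_Suc by simp
qed

lemma Newt_NI_eq:
  assumes iv: "ivcond iv" and u0: "u 0 = 1" and N: "Newt u s"
  shows "u k = NI iv s k"
proof (induction k rule: less_induct)
  case (less k)
  show ?case
  proof (cases k)
    case 0 then show ?thesis using u0 by simp
  next
    case (Suc n)
    have ivn: "of_nat (Suc n) * iv (Suc n) = 1" using iv unfolding ivcond_def by auto
    have "(\<Sum>i<Suc n. (-1)^i * u i * s (Suc n - i)) = (-1)^n * of_nat (Suc n) * u (Suc n)"
      using N unfolding Newt_def by (metis diff_Suc_1 le_add1 plus_1_eq_Suc)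
    then have E: "s (Suc n) - (\<Sum>i<n. (-1)^i * u (Suc i) * s (n - i)) = (-1)^n * of_nat (Suc n) * u (Suc n)"
      unfolding Newt_sum_Suc using u0 by simp
    have IH: "\<And>i. i \<in> {..<n} \<Longrightarrow> NI iv s (Suc i) = u (Suc i)"
      using less.IH Suc by simp
    have S: "(\<Sum>i<n. (-1)^i * NI iv s (Suc i) * s (n - i)) = (\<Sum>i<n. (-1)^i * u (Suc i) * s (n - i))"
      by (rule sum.cong[OF refl]) (simp only: IH)
    have "NI iv s (Suc n) = iv (Suc n) * ((-1)^n * (s (Suc n) - (\<Sum>i<n. (-1)^i * u (Suc i) * s (n - i))))"
      by (subst NI_Suc_alt) (simp only: S)
    also have "\<dots> = ((-1)^n * (-1)^n) * (of_nat (Suc n) * iv (Suc n)) * u (Suc n)"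
      unfolding E by (simp only: mult_ac)
    also have "\<dots> = u (Suc n)"
    proof -
      have m1: "((-1::'a)^n * (-1)^n) = 1" by (simp flip: power_add)
      show ?thesis by (simp only: m1 ivn mult_1_left)
    qed
    finally show ?thesis using Suc by simp
  qed
qed


lemma nw_cong: "(\<And>i. 1 \<le> i \<Longrightarrow> i \<le> k \<Longrightarrow> u i = v i) \<Longrightarrow> nw u k = nw v k"
proof (induction k rule: less_induct)
  case (less k)
  show ?case
  proof (cases k)
    case (Suc n)
    have 1: "\<And>j. j \<in> {..<n} \<Longrightarrow> (-1)^(n - j + 1) * u (n - j) * nw u (Suc j) = (-1)^(n - j + 1) * v (n - j) * nw v (Suc j)"
    proof -
      fix j assume "j \<in> {..<n}"
      then have j: "j < n" by simp
      have "u (n - j) = v (n - j)" using less.prems Suc j by simp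
      moreover have "nw u (Suc j) = nw v (Suc j)" using less Suc j by simp
      ultimately show "(-1)^(n - j + 1) * u (n - j) * nw u (Suc j) = (-1)^(n - j + 1) * v (n - j) * nw v (Suc j)"
        by simp
    qed
    have 2: "u (Suc n) = v (Suc n)" using less.prems Suc by simp
    show ?thesis unfolding Suc
      by (subst nw.simps(2), subst nw.simps(2)) (simp only: 2 sum.cong[OF refl 1])
  qed simp
qed

lemma NI_cong: "(\<And>i. 1 \<le> i \<Longrightarrow> i \<le> k \<Longrightarrow> s i = r i) \<Longrightarrow> NI iv s k = NI iv r k"
proof (induction k rule: less_induct)
  case (less k)
  show ?case
  proof (cases k)
    case (Suc n)
    have 1: "\<And>j. j \<in> {..<n} \<Longrightarrow> (-1)^(n - j + 1) * NI iv s (n - j) * s (Suc j) = (-1)^(n - j + 1) * NI iv r (n - j) * r (Suc j)"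
    proof -
      fix j assume "j \<in> {..<n}"
      then have j: "j < n" by simp
      have "s (Suc j) = r (Suc j)" using less.prems Suc j by simp
      moreover have "NI iv s (n - j) = NI iv r (n - j)" using less Suc j by simp
      ultimately show "(-1)^(n - j + 1) * NI iv s (n - j) * s (Suc j) = (-1)^(n - j + 1) * NI iv r (n - j) * r (Suc j)"
        by simp
    qed
    have 2: "s (Suc n) = r (Suc n)" using less.prems Suc by simp
    show ?thesis unfolding Suc
      by (subst NI.simps(2), subst NI.simps(2)) (simp only: 2 sum.cong[OF refl 1])
  qed simp
qed

lemma nw_hom: "rhom h \<Longrightarrow> h (nw u k) = nw (\<lambda>i. h (u i)) k"
proof (induction k rule: less_induct)
  case (less k)
  show ?case
  proof (cases k)
    case (Suc n)
    have 1: "\<And>j. j \<in> {..<n} \<Longrightarrow> h ((-1)^(n - j + 1) * u (n - j) * nw u (Suc j)) = (-1)^(n - j + 1) * h (u (n - j)) * nw (\<lambda>i. h (u i)) (Suc j)"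
    proof -
      fix j assume "j \<in> {..<n}"
      then have j: "j < n" by simp
      have "h (nw u (Suc j)) = nw (\<lambda>i. h (u i)) (Suc j)" using less Suc j by simp
      then show "h ((-1)^(n - j + 1) * u (n - j) * nw u (Suc j)) = (-1)^(n - j + 1) * h (u (n - j)) * nw (\<lambda>i. h (u i)) (Suc j)"
        using less.prems by (simp add: rhom_mult rhom_power rhom_uminus rhom_1)
    qed
    have 2: "h ((-1)^n * of_nat (Suc n) * u (Suc n)) = (-1)^n * of_nat (Suc n) * h (u (Suc n))"
      using less.prems by (simp only: rhom_mult rhom_power rhom_uminus rhom_1 rhom_of_nat)
    show ?thesis unfolding Suc
      by (subst nw.simps(2), subst nw.simps(2)) (simp only: 2 rhom_add[OF less.prems] rhom_sum[OF less.prems] sum.cong[OF refl 1])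
  qed (use less.prems in \<open>simp add: rhom_0\<close>)
qed

lemma NI_hom:
  assumes h: "rhom h" and iv: "\<And>i. h (iv i) = iv' i"
  shows "h (NI iv s k) = NI iv' (\<lambda>i. h (s i)) k"
proof (induction k rule: less_induct)
  case (less k)
  show ?case
  proof (cases k)
    case (Suc n)
    have 1: "\<And>j. j \<in> {..<n} \<Longrightarrow> h ((-1)^(n - j + 1) * NI iv s (n - j) * s (Suc j)) = (-1)^(n - j + 1) * NI iv' (\<lambda>i. h (s i)) (n - j) * h (s (Suc j))"
    proof -
      fix j assume "j \<in> {..<n}"
      then have j: "j < n" by simp
      have "h (NI iv s (n - j)) = NI iv' (\<lambda>i. h (s i)) (n - j)" using less Suc j by simp
      then show "h ((-1)^(n - j + 1) * NI iv s (n - j) * s (Suc j)) = (-1)^(n - j + 1) * NI iv' (\<lambda>i. h (s i)) (n - j) * h (s (Suc j))"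
        using h by (simp add: rhom_mult rhom_power rhom_uminus rhom_1)
    qed
    have S: "h (\<Sum>j<n. (-1)^(n - j + 1) * NI iv s (n - j) * s (Suc j)) = (\<Sum>j<n. (-1)^(n - j + 1) * NI iv' (\<lambda>i. h (s i)) (n - j) * h (s (Suc j)))"
    proof -
      have "h (\<Sum>j<n. (-1)^(n - j + 1) * NI iv s (n - j) * s (Suc j)) = (\<Sum>j<n. h ((-1)^(n - j + 1) * NI iv s (n - j) * s (Suc j)))"
        by (rule rhom_sum[OF h])
      also have "\<dots> = (\<Sum>j<n. (-1)^(n - j + 1) * NI iv' (\<lambda>i. h (s i)) (n - j) * h (s (Suc j)))"
        by (rule sum.cong[OF refl 1])
      finally show ?thesis .
    qed
    show ?thesis unfolding Suc
      by (subst NI.simps(2), subst NI.simps(2))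
        (simp only: iv rhom_mult[OF h] rhom_power[OF h] rhom_uminus[OF h] rhom_1[OF h] rhom_diff[OF h] S)
  qed (simp add: rhom_1[OF h])
qed

definition conv :: "(nat \<Rightarrow> 'a::comm_ring_1) \<Rightarrow> (nat \<Rightarrow> 'a) \<Rightarrow> nat \<Rightarrow> 'a" where
  "conv u v k = (\<Sum>i\<le>k. u i * v (k - i))"

definition psf :: "(nat \<Rightarrow> 'a::comm_ring_1) \<Rightarrow> 'a fps" where
  "psf s = Abs_fps (\<lambda>k. if k = 0 then 0 else (-1)^(k - 1) * s k)"

lemma neg1_pow_diff: "i \<le> m \<Longrightarrow> (-1::'a::comm_ring_1)^(m - i) = (-1)^m * (-1)^i"
proof -
  assume "i \<le> m"
  then have "(-1::'a)^m = (-1)^(m - i) * (-1)^i" by (simp flip: power_add)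
  then have "(-1::'a)^m * (-1)^i = (-1)^(m - i) * ((-1)^i * (-1)^i)" by (simp add: mult_ac)
  also have "(-1::'a)^i * (-1)^i = 1" by (simp flip: power_add)
  finally show ?thesis by simp
qed

lemma fps_psf_nth:
  fixes u s :: "nat \<Rightarrow> 'a::comm_ring_1"
  shows "(Abs_fps u * psf s) $ Suc n = (-1)^n * (\<Sum>i<Suc n. (-1)^i * u i * s (Suc n - i))"
proof -
  have "(Abs_fps u * psf s) $ Suc n = (\<Sum>i=0..Suc n. u i * psf s $ (Suc n - i))"
    by (simp add: fps_mult_nth)
  also have "\<dots> = (\<Sum>i<Suc n. u i * psf s $ (Suc n - i))"
    by (simp add: atLeast0AtMost lessThan_Suc_atMost[symmetric] psf_def)
  also have "\<dots> = (\<Sum>i<Suc n. (-1)^n * ((-1)^i * u i * s (Suc n - i)))"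
  proof (rule sum.cong)
    fix i assume "i \<in> {..<Suc n}"
    then have i: "i \<le> n" by simp
    have "psf s $ (Suc n - i) = (-1)^(n - i) * s (Suc n - i)"
      using i by (simp add: psf_def Suc_diff_le)
    then show "u i * psf s $ (Suc n - i) = (-1)^n * ((-1)^i * u i * s (Suc n - i))"
      using i by (simp add: neg1_pow_diff mult_ac)
  qed simp
  finally show ?thesis by (simp only: sum_distrib_left)
qed

lemma Newt_fps: "Newt u s \<longleftrightarrow> Abs_fps u * psf s = fps_X * fps_deriv (Abs_fps u)"
proof
  assume N: "Newt u s"
  show "Abs_fps u * psf s = fps_X * fps_deriv (Abs_fps u)"
  proof (rule fps_ext)
    fix k show "(Abs_fps u * psf s) $ k = (fps_X * fps_deriv (Abs_fps u)) $ k"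
    proof (cases k)
      case 0 then show ?thesis by (simp add: fps_mult_nth psf_def)
    next
      case (Suc n)
      have "(\<Sum>i<Suc n. (-1)^i * u i * s (Suc n - i)) = (-1)^n * of_nat (Suc n) * u (Suc n)"
        using N unfolding Newt_def by (metis diff_Suc_1 le_add1 plus_1_eq_Suc)
      then have "(Abs_fps u * psf s) $ Suc n = ((-1)^n * (-1)^n) * of_nat (Suc n) * u (Suc n)"
        by (simp add: fps_psf_nth mult_ac)
      also have "(-1::'a)^n * (-1)^n = 1" by (simp flip: power_add)
      finally show ?thesis using Suc by (simp add: fps_deriv_def)
    qed
  qed
next
  assume E: "Abs_fps u * psf s = fps_X * fps_deriv (Abs_fps u)"
  show "Newt u s" unfolding Newt_def
  proof (intro allI impI)
    fix k :: nat assume "k \<ge> 1"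
    then obtain n where n: "k = Suc n" by (cases k) auto
    have "(Abs_fps u * psf s) $ Suc n = (fps_X * fps_deriv (Abs_fps u)) $ Suc n" using E by simp
    then have "(-1)^n * (\<Sum>i<Suc n. (-1)^i * u i * s (Suc n - i)) = of_nat (Suc n) * u (Suc n)"
      by (simp add: fps_psf_nth fps_deriv_def)
    then have "((-1)^n * (-1)^n) * (\<Sum>i<Suc n. (-1)^i * u i * s (Suc n - i)) = (-1)^n * of_nat (Suc n) * u (Suc n)"
      by (metis mult.assoc)
    also have "(-1::'a)^n * (-1)^n = 1" by (simp flip: power_add)
    finally show "(\<Sum>i<k. (-1)^i * u i * s (k - i)) = (-1)^(k - 1) * of_nat k * u k"
      unfolding n by simp
  qed
qed

lemma psf_add: "psf (\<lambda>k. s k + r k) = psf s + psf r"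
  by (rule fps_ext) (simp add: psf_def algebra_simps)

lemma Abs_fps_conv: "Abs_fps (conv u v) = Abs_fps u * Abs_fps v"
  by (rule fps_ext) (simp add: conv_def fps_mult_nth atLeast0AtMost)

lemma Newt_conv:
  assumes "Newt u s" "Newt v r"
  shows "Newt (conv u v) (\<lambda>k. s k + r k)"
proof -
  let ?U = "Abs_fps u" and ?V = "Abs_fps v"
  have 1: "?U * psf s = fps_X * fps_deriv ?U" using assms(1) by (simp add: Newt_fps)
  have 2: "?V * psf r = fps_X * fps_deriv ?V" using assms(2) by (simp add: Newt_fps)
  have "(?U * ?V) * (psf s + psf r) = (?U * psf s) * ?V + (?V * psf r) * ?U"
    by (simp add: algebra_simps)
  also have "\<dots> = fps_X * fps_deriv (?U * ?V)"
    unfolding 1 2 fps_deriv_mult by (simp add: algebra_simps)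
  finally show ?thesis by (simp add: Newt_fps Abs_fps_conv psf_add)
qed

lemma Newt_cong: "Newt u s \<Longrightarrow> (\<And>k. k \<ge> 1 \<Longrightarrow> s k = r k) \<Longrightarrow> Newt u r"
  unfolding Newt_def
proof (intro allI impI)
  fix k :: nat assume N: "\<forall>k\<ge>1. (\<Sum>i<k. (-1)^i * u i * s (k - i)) = (-1)^(k - 1) * of_nat k * u k"
    and e: "\<And>k. k \<ge> 1 \<Longrightarrow> s k = r k" and k: "k \<ge> 1"
  have "(\<Sum>i<k. (-1)^i * u i * r (k - i)) = (\<Sum>i<k. (-1)^i * u i * s (k - i))"
    using e by (intro sum.cong) auto
  then show "(\<Sum>i<k. (-1)^i * u i * r (k - i)) = (-1)^(k - 1) * of_nat k * u k" using N k by simp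
qed

lemma Abs_fps_nth: "Abs_fps (\<lambda>k. f $ k) = f"
  by (rule fps_ext) simp

lemma esym_fps_insert:
  assumes "finite A" "a \<notin> A"
  shows "Abs_fps (\<lambda>k. esym k (insert a A) c) = (1 + fps_const (c a) * fps_X) * Abs_fps (\<lambda>k. esym k A c)"
proof (rule fps_ext)
  fix k show "Abs_fps (\<lambda>k. esym k (insert a A) c) $ k = ((1 + fps_const (c a) * fps_X) * Abs_fps (\<lambda>k. esym k A c)) $ k"
    using assms by (cases k) (simp_all add: esym_0 esym_insert distrib_right mult.assoc fps_X_mult_nth)
qed

lemma Newt_single: "Newt (\<lambda>k. (1 + fps_const x * fps_X) $ k) (\<lambda>k. x ^ k)"
proof -
  have "(1 + fps_const x * fps_X) * psf (\<lambda>k. x ^ k) = fps_X * fps_deriv (1 + fps_const x * fps_X)"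
  proof (rule fps_ext)
    fix k show "((1 + fps_const x * fps_X) * psf (\<lambda>k. x ^ k)) $ k = (fps_X * fps_deriv (1 + fps_const x * fps_X)) $ k"
    proof (cases k)
      case 0 then show ?thesis by (simp add: psf_def distrib_right mult.assoc fps_X_mult_nth)
    next
      case (Suc n)
      show ?thesis
      proof (cases n)
        case 0 then show ?thesis using Suc by (simp add: psf_def distrib_right mult.assoc fps_X_mult_nth)
      next
        case (Suc m)
        have "((1 + fps_const x * fps_X) * psf (\<lambda>k. x ^ k)) $ Suc (Suc m) = (-1)^(Suc m) * x^(Suc (Suc m)) + x * ((-1)^m * x^(Suc m))"
          by (simp add: psf_def distrib_right mult.assoc fps_X_mult_nth)
        also have "\<dots> = 0" by simp
        finally show ?thesis using \<open>k = Suc n\<close> Suc by (simp add: fps_X_mult_nth)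
      qed
    qed
  qed
  moreover have "Abs_fps (\<lambda>k. (1 + fps_const x * fps_X) $ k) = 1 + fps_const x * fps_X"
    by (rule Abs_fps_nth)
  ultimately show ?thesis by (simp add: Newt_fps)
qed

lemma Newt_esym:
  assumes "finite A"
  shows "Newt (\<lambda>k. esym k A c) (\<lambda>k. \<Sum>a\<in>A. c a ^ k)"
  using assms
proof (induction A rule: finite_induct)
  case empty
  show ?case unfolding Newt_def
  proof (intro allI impI)
    fix k :: nat assume "k \<ge> 1"
    then obtain n where "k = Suc n" by (cases k) auto
    then show "(\<Sum>i<k. (-1)^i * esym i {} c * (\<Sum>a\<in>{}. c a ^ (k - i))) = (-1)^(k - 1) * of_nat k * esym k {} c"
      by (simp add: esym_empty_Suc)
  qed
next
  case (insert a A)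
  have N1: "Newt (\<lambda>k. (1 + fps_const (c a) * fps_X) $ k) (\<lambda>k. c a ^ k)" by (rule Newt_single)
  have C: "Newt (conv (\<lambda>k. (1 + fps_const (c a) * fps_X) $ k) (\<lambda>k. esym k A c)) (\<lambda>k. c a ^ k + (\<Sum>a\<in>A. c a ^ k))"
    by (rule Newt_conv[OF N1 insert.IH])
  have "conv (\<lambda>k. (1 + fps_const (c a) * fps_X) $ k) (\<lambda>k. esym k A c) = (\<lambda>k. esym k (insert a A) c)"
  proof -
    have "Abs_fps (conv (\<lambda>k. (1 + fps_const (c a) * fps_X) $ k) (\<lambda>k. esym k A c)) = Abs_fps (\<lambda>k. esym k (insert a A) c)"
      unfolding Abs_fps_conv esym_fps_insert[OF insert.hyps] Abs_fps_nth ..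
    then show ?thesis by (metis fps_nth_Abs_fps)
  qed
  moreover have "(\<lambda>k. c a ^ k + (\<Sum>a\<in>A. c a ^ k)) = (\<lambda>k. \<Sum>a\<in>insert a A. c a ^ k)"
    using insert.hyps by simp
  ultimately show ?case using C by simp
qed

lemma nw_esym:
  assumes "finite A" "k \<ge> 1"
  shows "nw (\<lambda>k. esym k A c) k = (\<Sum>a\<in>A. c a ^ k)"
  using Newt_nw_eq[of "\<lambda>k. esym k A c" "\<lambda>k. \<Sum>a\<in>A. c a ^ k" k] esym_0[OF assms(1), of c] Newt_esym[OF assms(1), of c] assms(2)
  by simp

lemma NI_nw:
  assumes "ivcond iv" "u 0 = 1"
  shows "NI iv (nw u) k = u k"
  using Newt_NI_eq[of iv u "nw u" k] Newt_nw[of u] assms by simp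

lemma nw_NI:
  assumes "ivcond iv" "k \<ge> 1"
  shows "nw (NI iv s) k = s k"
  using Newt_nw_eq[of "NI iv s" s k] Newt_NI[of iv s] assms by simp

lemma NI_esym:
  assumes "ivcond iv" "finite A"
  shows "NI iv (\<lambda>k. \<Sum>a\<in>A. c a ^ k) k = esym k A c"
  using Newt_NI_eq[of iv "\<lambda>k. esym k A c" "\<lambda>k. \<Sum>a\<in>A. c a ^ k" k] esym_0[OF assms(2), of c] Newt_esym[OF assms(2), of c] assms(1)
  by simp


section \<open>Extending vanishing of polynomial functions\<close>

lemma vanish_ext_int:
  fixes H :: "(nat \<Rightarrow> 'a::{idom,ring_char_0}) \<Rightarrow> 'a"
  assumes P: "\<And>v k. ispoly (\<lambda>z. H (v(k := z)))"
    and Z: "\<And>v. (\<And>i. v i \<in> \<int>) \<Longrightarrow> H v = 0"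
  shows "(\<And>i. i \<ge> M \<Longrightarrow> v i \<in> \<int>) \<Longrightarrow> H v = 0"
proof (induction M arbitrary: v)
  case 0 then show ?case using Z by simp
next
  case (Suc M)
  have "\<And>z. z \<in> \<int> \<Longrightarrow> H (v(M := z)) = 0"
  proof -
    fix z :: 'a assume z: "z \<in> \<int>"
    show "H (v(M := z)) = 0"
      by (rule Suc.IH) (use z Suc.prems in \<open>auto simp: not_less_eq_eq\<close>)
  qed
  then have "\<int> \<subseteq> {z. H (v(M := z)) = 0}" by auto
  moreover have "infinite (\<int> :: 'a set)"
  proof -
    have "inj (of_int :: int \<Rightarrow> 'a)" by (simp add: inj_on_def)
    then have "infinite (range (of_int :: int \<Rightarrow> 'a))"
      using finite_imageD[of "of_int :: int \<Rightarrow> 'a" UNIV] infinite_UNIV_int by blast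
    then show ?thesis by (simp add: Ints_def)
  qed
  ultimately have "infinite {z. H (v(M := z)) = 0}" using infinite_super by blast
  then have "H (v(M := v M)) = 0" by (rule ispoly_zero[OF P])
  then show ?case by simp
qed

lemma vanish_ext_inj:
  fixes H :: "(nat \<Rightarrow> 'a::{idom,ring_char_0}) \<Rightarrow> 'a"
  assumes P: "\<And>v k. ispoly (\<lambda>z. H (v(k := z)))"
    and Z: "\<And>v. inj_on v {..<M} \<Longrightarrow> H v = 0"
  shows "H v = 0"
proof -
  have key: "inj_on v {j..<M} \<Longrightarrow> H v = 0" for j v
  proof (induction j arbitrary: v)
    case 0 then show ?case using Z by (simp add: atLeast0LessThan)
  next
    case (Suc j)
    show ?case
    proof (cases "j < M")
      case False
      then have "{j..<M} = {Suc j..<M}" by auto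
      then show ?thesis using Suc by simp
    next
      case True
      let ?B = "v ` {Suc j..<M}"
      have "\<And>z. z \<notin> ?B \<Longrightarrow> H (v(j := z)) = 0"
      proof -
        fix z assume z: "z \<notin> ?B"
        have "{j..<M} = insert j {Suc j..<M}" using True by auto
        moreover have "inj_on (v(j := z)) {Suc j..<M}"
          using Suc.prems by (auto simp: inj_on_def)
        moreover have "(v(j := z)) j \<notin> (v(j := z)) ` {Suc j..<M}" using z by auto
        ultimately have "inj_on (v(j := z)) {j..<M}" by simp
        then show "H (v(j := z)) = 0" by (rule Suc.IH)
      qed
      then have "- ?B \<subseteq> {z. H (v(j := z)) = 0}" by auto
      moreover have "infinite (- ?B)"
      proof -
        have "finite ?B" by simp
        moreover have "infinite (UNIV :: 'a set)"
        proof -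
          have "inj (of_nat :: nat \<Rightarrow> 'a)" by (simp add: inj_on_def)
          then show ?thesis using infinite_UNIV_nat infinite_iff_countable_subset by blast
        qed
        ultimately show ?thesis using Diff_infinite_finite[of ?B UNIV] by (simp add: Compl_eq_Diff_UNIV)
      qed
      ultimately have "infinite {z. H (v(j := z)) = 0}" using infinite_super by blast
      then have "H (v(j := v j)) = 0" by (rule ispoly_zero[OF P])
      then show ?thesis by simp
    qed
  qed
  show ?thesis using key[of v M] by simp
qed

section \<open>Splitting over the complex numbers\<close>

lemma coeff_prod_linear:
  fixes \<xi> :: "'b \<Rightarrow> 'a::comm_ring_1"
  assumes "finite A"
  shows "coeff (\<Prod>i\<in>A. [:\<xi> i, 1:]) m = (if m \<le> card A then esym (card A - m) A \<xi> else 0)"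
  using assms
proof (induction A arbitrary: m rule: finite_induct)
  case empty
  then show ?case by (cases m) (simp_all add: esym_0)
next
  case (insert a A)
  let ?q = "\<Prod>i\<in>A. [:\<xi> i, 1:]"
  let ?n = "card A"
  have cA: "card (insert a A) = Suc ?n" using insert by simp
  have "(\<Prod>i\<in>insert a A. [:\<xi> i, 1:]) = [:\<xi> a, 1:] * ?q" using insert by simp
  also have "[:\<xi> a, 1:] * ?q = smult (\<xi> a) ?q + pCons 0 ?q"
    by (simp add: mult_pCons_left)
  finally have E: "coeff (\<Prod>i\<in>insert a A. [:\<xi> i, 1:]) m = \<xi> a * coeff ?q m + (if m = 0 then 0 else coeff ?q (m - 1))"
    by (cases m) simp_all
  show ?case
  proof (cases "m = 0")
    case True
    have "esym (Suc ?n) (insert a A) \<xi> = esym (Suc ?n) A \<xi> + \<xi> a * esym ?n A \<xi>"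
      using insert by (simp add: esym_insert)
    moreover have "esym (Suc ?n) A \<xi> = 0" using insert by (simp add: esym_gt)
    ultimately show ?thesis using E True cA insert by simp
  next
    case False
    then obtain m' where m': "m = Suc m'" by (cases m) auto
    show ?thesis
    proof (cases "m' < ?n")
      case True
      have "esym (Suc (?n - Suc m')) (insert a A) \<xi> = esym (Suc (?n - Suc m')) A \<xi> + \<xi> a * esym (?n - Suc m') A \<xi>"
        using insert by (simp add: esym_insert)
      moreover have "Suc (?n - Suc m') = ?n - m'" using True by simp
      moreover have "Suc ?n - m = ?n - m'" using m' by simp
      ultimately show ?thesis using E True cA insert m' by (simp add: add.commute)
    next
      case False
      show ?thesis
      proof (cases "m' = ?n")
        case True
        then show ?thesis using E cA insert m' by (simp add: esym_0)
      next
        case False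
        then show ?thesis using E cA insert m' \<open>\<not> m' < ?n\<close> by simp
      qed
    qed
  qed
qed

lemma split_complex:
  fixes u :: "nat \<Rightarrow> complex"
  shows "\<exists>\<xi>. \<forall>j. 1 \<le> j \<longrightarrow> j \<le> N \<longrightarrow> esym j {..<N} \<xi> = u j"
proof -
  let ?u = "\<lambda>j. if j = 0 then 1 else u j"
  define p where "p = (\<Sum>j\<le>N. monom (?u j) (N - j))"
  have cp: "coeff p m = (if m \<le> N then ?u (N - m) else 0)" for m
  proof -
    have "coeff p m = (\<Sum>j\<le>N. if N - j = m then ?u j else 0)"
      by (simp add: p_def coeff_sum coeff_monom)
    also have "\<dots> = (if m \<le> N then ?u (N - m) else 0)"
    proof (cases "m \<le> N")
      case True
      have "(\<Sum>j\<le>N. if N - j = m then ?u j else 0) = (\<Sum>j\<in>{N - m}. ?u j)"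
        by (rule sum.mono_neutral_cong_right) (use True in auto)
      then show ?thesis using True by simp
    next
      case False
      then show ?thesis by (intro trans[OF sum.neutral]) auto
    qed
    finally show ?thesis .
  qed
  have degp: "degree p = N"
  proof (rule antisym)
    show "degree p \<le> N" by (rule degree_le) (simp add: cp)
    show "N \<le> degree p" by (rule le_degree) (simp add: cp)
  qed
  have lc: "lead_coeff p = 1" using degp cp by simp
  obtain root where r: "smult (lead_coeff p) (\<Prod>i<degree p. [:-root i, 1:]) = p"
    by (rule complex_poly_decompose')
  then have pr: "p = (\<Prod>i<N. [:-root i, 1:])" using lc degp by simp
  have "\<forall>j. 1 \<le> j \<longrightarrow> j \<le> N \<longrightarrow> esym j {..<N} (\<lambda>i. - root i) = u j"
  proof (intro allI impI)
    fix j assume j: "1 \<le> j" "j \<le> N"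
    have "coeff p (N - j) = esym (N - (N - j)) {..<N} (\<lambda>i. - root i)"
      unfolding pr by (subst coeff_prod_linear) simp_all
    then show "esym j {..<N} (\<lambda>i. - root i) = u j" using j cp by simp
  qed
  then show ?thesis by blast
qed


definition isP :: "((nat \<Rightarrow> int) \<Rightarrow> int) \<Rightarrow> bool" where
  "isP F \<longleftrightarrow> (\<exists>P. \<forall>v. F v = mpeval v P)"

lemma isP_const [intro, simp]: "isP (\<lambda>v. c)"
  unfolding isP_def by (rule exI[of _ "of_int c"]) (simp add: mpeval_of_int)

lemma isP_var [intro, simp]: "isP (\<lambda>v. v i)"
  unfolding isP_def by (rule exI[of _ "mvar i"]) simp

lemma isP_add [intro]: "isP F \<Longrightarrow> isP G \<Longrightarrow> isP (\<lambda>v. F v + G v)"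
  unfolding isP_def by (metis mpeval_add)

lemma isP_mult [intro]: "isP F \<Longrightarrow> isP G \<Longrightarrow> isP (\<lambda>v. F v * G v)"
  unfolding isP_def by (metis mpeval_mult)

lemma isP_uminus [intro]: "isP F \<Longrightarrow> isP (\<lambda>v. - F v)"
  unfolding isP_def by (metis mpeval_uminus)

lemma isP_diff [intro]: "isP F \<Longrightarrow> isP G \<Longrightarrow> isP (\<lambda>v. F v - G v)"
  unfolding isP_def by (metis mpeval_diff)

lemma isP_sum [intro]: "(\<And>a. a \<in> A \<Longrightarrow> isP (F a)) \<Longrightarrow> isP (\<lambda>v. \<Sum>a\<in>A. F a v)"
proof (induction A rule: infinite_finite_induct)
  case (insert x F)
  then show ?case by (simp add: isP_add)
qed auto

lemma isP_prod [intro]: "(\<And>a. a \<in> A \<Longrightarrow> isP (F a)) \<Longrightarrow> isP (\<lambda>v. \<Prod>a\<in>A. F a v)"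
proof (induction A rule: infinite_finite_induct)
  case (insert x F)
  then show ?case by (simp add: isP_mult)
qed auto

lemma isP_power [intro]: "isP F \<Longrightarrow> isP (\<lambda>v. F v ^ n)"
  by (induction n) (auto simp: isP_mult)

lemma isP_mpeval:
  assumes "\<And>j. isP (\<lambda>v. w v j)"
  shows "isP (\<lambda>v. mpeval (w v) P)"
  unfolding mpeval_def mmono_def using assms
  by (intro isP_sum isP_mult isP_prod isP_power isP_const) auto

lemma isP_comp:
  assumes "isP G" "\<And>j. isP (\<lambda>v. w v j)"
  shows "isP (\<lambda>v. G (w v))"
proof -
  obtain P where P: "\<And>v. G v = mpeval v P" using assms(1) unfolding isP_def by blast
  show ?thesis unfolding P by (rule isP_mpeval[OF assms(2)])
qed

lemma isP_esym:
  assumes "\<And>i. isP (\<lambda>v. c v i)"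
  shows "isP (\<lambda>v. esym k A (c v))"
  unfolding esym_def using assms by (intro isP_sum isP_prod) auto

lemma isP_ispoly:
  assumes "isP F"
  shows "ispoly (\<lambda>z. F (v(k := z)))"
proof -
  obtain P where P: "\<And>v. F v = mpeval v P" using assms unfolding isP_def by blast
  show ?thesis unfolding P by (rule ispoly_mpeval) (rule ispoly_upd)
qed

lemma esym_cong: "(\<And>i. i \<in> A \<Longrightarrow> c i = d i) \<Longrightarrow> esym k A c = esym k A d"
  unfolding esym_def by (intro sum.cong refl prod.cong) auto

definition sub :: "nat \<Rightarrow> (nat \<Rightarrow> 'a::comm_ring_1) \<Rightarrow> nat \<Rightarrow> 'a" where
  "sub N v j = (if j < N then esym (Suc j) {..<N} v else v j)"

lemma isP_sub [intro]: "isP (\<lambda>v. sub N v j)"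
  unfolding sub_def by (cases "j < N") (auto intro: isP_esym)

lemma isP_comp_sub: "isP G \<Longrightarrow> isP (\<lambda>v. G (sub N v))"
  by (rule isP_comp) auto

lemma isP_comp_map:
  assumes "isP G" shows "isP (\<lambda>v. G (\<lambda>i. v (\<sigma> i)))"
proof (rule isP_comp[OF assms])
  fix j show "isP (\<lambda>v. v (\<sigma> j))" by (rule isP_var)
qed

lemma sub_hom: "rhom h \<Longrightarrow> sub N (\<lambda>i. h (v i)) j = h (sub N v j)"
  by (simp add: sub_def esym_hom)

definition tsw :: "nat \<Rightarrow> nat \<Rightarrow> nat \<Rightarrow> nat" where
  "tsw a b k = (if k = a then b else if k = b then a else k)"

lemma tsw_bij: "a < N \<Longrightarrow> b < N \<Longrightarrow> bij_betw (tsw a b) {..<N} {..<N}"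
  unfolding bij_betw_def inj_on_def tsw_def by (auto simp: image_def)

lemma tsw_tsw [simp]: "tsw a b (tsw a b k) = k"
  by (simp add: tsw_def)

definition symm :: "nat \<Rightarrow> ((nat \<Rightarrow> 'a) \<Rightarrow> 'b) \<Rightarrow> bool" where
  "symm N F \<longleftrightarrow> (\<forall>a b v. a < N \<longrightarrow> b < N \<longrightarrow> F (\<lambda>k. v (tsw a b k)) = F v)"

lemma sub_tsw:
  assumes "a < N" "b < N"
  shows "sub N (\<lambda>k. v (tsw a b k)) = sub N v"
proof
  fix j show "sub N (\<lambda>k. v (tsw a b k)) j = sub N v j"
  proof (cases "j < N")
    case True
    have "esym (Suc j) {..<N} v = esym (Suc j) {..<N} (\<lambda>k. v (tsw a b k))"
      by (rule esym_reindex[OF tsw_bij[OF assms]])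
    then show ?thesis using True by (simp add: sub_def)
  next
    case False
    then have "tsw a b j = j" using assms by (auto simp: tsw_def)
    then show ?thesis using False by (simp add: sub_def)
  qed
qed

section \<open>The fundamental theorem on symmetric polynomials (functional form)\<close>

definition Kc :: "nat \<Rightarrow> ((nat \<Rightarrow> int) \<Rightarrow> int) \<Rightarrow> bool" where
  "Kc N f \<longleftrightarrow> (\<exists>G. (\<forall>k. isP (G k)) \<and> (\<forall>v. f v = (\<Sum>k\<le>N. G k (sub (Suc N) v) * v N ^ k)))"

lemma sum_delta0: "(\<Sum>k\<le>(N::nat). (if k = 0 then a else 0)) = (a :: 'a::comm_monoid_add)"
  by (induction N) auto

lemma Kc_sub: "isP G \<Longrightarrow> Kc N (\<lambda>v. G (sub (Suc N) v))"
  unfolding Kc_def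
proof (rule exI[of _ "\<lambda>k. if k = 0 then G else (\<lambda>_. 0)"], intro conjI allI)
  fix k v assume "isP G"
  then show "isP (if k = 0 then G else (\<lambda>_. 0))" by simp
next
  fix v :: "nat \<Rightarrow> int"
  have "(\<Sum>k\<le>N. (if k = 0 then G else (\<lambda>_. 0)) (sub (Suc N) v) * v N ^ k) = (\<Sum>k\<le>N. (if k = 0 then G (sub (Suc N) v) else 0))"
    by (intro sum.cong) auto
  then show "G (sub (Suc N) v) = (\<Sum>k\<le>N. (if k = 0 then G else (\<lambda>_. 0)) (sub (Suc N) v) * v N ^ k)"
    by (simp only: sum_delta0)
qed

lemma Kc_const: "Kc N (\<lambda>v. c)"
  using Kc_sub[of "\<lambda>_. c" N] by simp

lemma Kc_add: "Kc N f \<Longrightarrow> Kc N g \<Longrightarrow> Kc N (\<lambda>v. f v + g v)"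
proof -
  assume "Kc N f" "Kc N g"
  then obtain F G where F: "\<forall>k. isP (F k)" "\<forall>v. f v = (\<Sum>k\<le>N. F k (sub (Suc N) v) * v N ^ k)"
    and G: "\<forall>k. isP (G k)" "\<forall>v. g v = (\<Sum>k\<le>N. G k (sub (Suc N) v) * v N ^ k)"
    unfolding Kc_def by blast
  show ?thesis unfolding Kc_def
    by (rule exI[of _ "\<lambda>k w. F k w + G k w"]) (use F G in \<open>auto simp: distrib_right sum.distrib\<close>)
qed

lemma Kc_scal: "Kc N f \<Longrightarrow> isP H \<Longrightarrow> Kc N (\<lambda>v. f v * H (sub (Suc N) v))"
proof -
  assume "Kc N f" and H: "isP H"
  then obtain F where F: "\<forall>k. isP (F k)" "\<forall>v. f v = (\<Sum>k\<le>N. F k (sub (Suc N) v) * v N ^ k)"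
    unfolding Kc_def by blast
  have "f v * H (sub (Suc N) v) = (\<Sum>k\<le>N. (F k (sub (Suc N) v) * H (sub (Suc N) v)) * v N ^ k)" for v
  proof -
    have "f v * H (sub (Suc N) v) = (\<Sum>k\<le>N. F k (sub (Suc N) v) * v N ^ k * H (sub (Suc N) v))"
      using F(2) by (simp add: sum_distrib_right)
    also have "\<dots> = (\<Sum>k\<le>N. (F k (sub (Suc N) v) * H (sub (Suc N) v)) * v N ^ k)"
      by (intro sum.cong) (simp_all add: mult_ac)
    finally show ?thesis .
  qed
  moreover have "\<forall>k. isP (\<lambda>w. F k w * H w)" using F(1) H by auto
  ultimately show ?thesis unfolding Kc_def
    by (intro exI[of _ "\<lambda>k w. F k w * H w"]) auto
qed

lemma esym_uminus: "esym k A (\<lambda>i. - c i) = (-1)^k * esym k A c"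
  unfolding esym_def sum_distrib_left
proof (intro sum.cong refl)
  fix S assume "S \<in> {S. S \<subseteq> A \<and> card S = k}"
  then have cS: "card S = k" by simp
  have "(\<Prod>i\<in>S. - c i) = (\<Prod>i\<in>S. (-1) * c i)" by simp
  also have "\<dots> = (\<Prod>i\<in>S. -1) * (\<Prod>i\<in>S. c i)" by (rule prod.distrib)
  also have "(\<Prod>i\<in>S. (-1::'a)) = (-1)^k" using cS by simp
  finally show "(\<Prod>i\<in>S. - c i) = (-1)^k * (\<Prod>i\<in>S. c i)" .
qed

lemma sum_atMost_shift0: "(\<Sum>k\<le>N. f k) = f 0 + (\<Sum>k<N. f (Suc k))"
proof (cases N)
  case (Suc n)
  show ?thesis unfolding Suc sum.atMost_Suc_shift lessThan_Suc_atMost ..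
qed simp

lemma root_relation:
  fixes v :: "nat \<Rightarrow> int"
  shows "v N ^ Suc N = (\<Sum>m\<le>N. (- ((-1)^(Suc N - m) * sub (Suc N) v (N - m))) * v N ^ m)"
proof -
  let ?p = "\<Prod>i<Suc N. [:- v i, 1:]"
  have cp: "coeff ?p m = (if m \<le> Suc N then esym (Suc N - m) {..<Suc N} (\<lambda>i. - v i) else 0)" for m
    by (subst coeff_prod_linear) simp_all
  have dp: "degree ?p \<le> Suc N"
  proof (rule degree_le, intro allI impI)
    fix i assume "Suc N < i"
    then show "coeff ?p i = 0" by (subst cp) simp
  qed
  have "poly ?p (v N) = (\<Prod>i<Suc N. v N - v i)" by (simp add: poly_prod)
  also have "\<dots> = 0" by (rule prod_zero) (auto intro: bexI[of _ N])
  finally have 0: "poly ?p (v N) = 0" .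
  have "poly ?p (v N) = (\<Sum>m\<le>degree ?p. coeff ?p m * v N ^ m)" by (rule poly_altdef)
  also have "\<dots> = (\<Sum>m\<le>Suc N. coeff ?p m * v N ^ m)"
  proof (rule sum.mono_neutral_left)
    show "finite {..Suc N}" by simp
    show "{..degree ?p} \<subseteq> {..Suc N}" using dp by auto
    show "\<forall>i\<in>{..Suc N} - {..degree ?p}. coeff ?p i * v N ^ i = 0"
    proof
      fix i assume "i \<in> {..Suc N} - {..degree ?p}"
      then have "degree ?p < i" by simp
      then show "coeff ?p i * v N ^ i = 0" by (simp only: coeff_eq_0 mult_zero_left)
    qed
  qed
  also have "\<dots> = (\<Sum>m\<le>N. coeff ?p m * v N ^ m) + v N ^ Suc N"
  proof -
    have C1: "coeff ?p (Suc N) = 1" by (subst cp) (simp add: esym_0)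
    show ?thesis by (simp only: sum.atMost_Suc C1 mult_1_left)
  qed
  finally have E: "v N ^ Suc N = - (\<Sum>m\<le>N. coeff ?p m * v N ^ m)" using 0 by simp
  have "\<And>m. m \<in> {..N} \<Longrightarrow> coeff ?p m = (-1)^(Suc N - m) * sub (Suc N) v (N - m)"
  proof -
    fix m assume "m \<in> {..N}"
    then have m: "m \<le> N" by simp
    have "coeff ?p m = (-1)^(Suc N - m) * esym (Suc N - m) {..<Suc N} v"
      using m by (subst cp) (simp add: esym_uminus)
    moreover have "sub (Suc N) v (N - m) = esym (Suc N - m) {..<Suc N} v"
      using m unfolding sub_def by (subst if_P) (simp_all add: Suc_diff_le)
    ultimately show "coeff ?p m = (-1)^(Suc N - m) * sub (Suc N) v (N - m)"
      by (simp only:)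
  qed
  then have "(\<Sum>m\<le>N. coeff ?p m * v N ^ m) = (\<Sum>m\<le>N. ((-1)^(Suc N - m) * sub (Suc N) v (N - m)) * v N ^ m)"
    by (intro sum.cong) auto
  then show ?thesis unfolding E by (simp only: sum_negf[symmetric] mult_minus_left)
qed

lemma Kc_mulx: "Kc N f \<Longrightarrow> Kc N (\<lambda>v. f v * v N)"
proof -
  assume "Kc N f"
  then obtain F where F: "\<forall>k. isP (F k)" "\<forall>v. f v = (\<Sum>k\<le>N. F k (sub (Suc N) v) * v N ^ k)"
    unfolding Kc_def by blast
  define cc where "cc m w = - ((-1)^(Suc N - m) * w (N - m))" for m and w :: "nat \<Rightarrow> int"
  have cc: "\<And>v. v N ^ Suc N = (\<Sum>m\<le>N. cc m (sub (Suc N) v) * v N ^ m)"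
    unfolding cc_def by (rule root_relation)
  define G where "G k w = (if k = 0 then 0 else F (k - 1) w) + F N w * cc k w" for k w
  have isc: "isP (\<lambda>w. cc k w)" for k
    unfolding cc_def by (rule isP_uminus, rule isP_mult, rule isP_const, rule isP_var)
  have "isP (G k)" for k
  proof (cases "k = 0")
    case True
    then have "G k = (\<lambda>w. 0 + F N w * cc k w)" by (simp add: G_def fun_eq_iff)
    then show ?thesis using F(1) isc by (auto intro!: isP_add isP_mult)
  next
    case False
    then have "G k = (\<lambda>w. F (k - 1) w + F N w * cc k w)" by (simp add: G_def fun_eq_iff)
    then show ?thesis using F(1) isc by (auto intro!: isP_add isP_mult)
  qed
  moreover have "f v * v N = (\<Sum>k\<le>N. G k (sub (Suc N) v) * v N ^ k)" for v
  proof -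
    let ?w = "sub (Suc N) v"
    have "f v * v N = (\<Sum>k\<le>N. F k ?w * v N ^ k) * v N" using F(2) by simp
    also have "\<dots> = (\<Sum>k\<le>N. F k ?w * v N ^ k * v N)" by (rule sum_distrib_right)
    also have "\<dots> = (\<Sum>k\<le>N. F k ?w * v N ^ Suc k)"
      by (intro sum.cong) (simp_all add: mult_ac)
    finally have "f v * v N = (\<Sum>k\<le>N. F k ?w * v N ^ Suc k)" .
    also have "\<dots> = (\<Sum>k<N. F k ?w * v N ^ Suc k) + F N ?w * v N ^ Suc N"
      by (simp add: lessThan_Suc_atMost[symmetric])
    also have "(\<Sum>k<N. F k ?w * v N ^ Suc k) = (\<Sum>k\<le>N. (if k = 0 then 0 else F (k - 1) ?w) * v N ^ k)"
      by (subst sum_atMost_shift0) simp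
    also have "F N ?w * v N ^ Suc N = (\<Sum>k\<le>N. F N ?w * cc k ?w * v N ^ k)"
      by (subst cc) (simp add: sum_distrib_left mult_ac)
    finally show ?thesis by (simp add: G_def distrib_right sum.distrib)
  qed
  ultimately show ?thesis unfolding Kc_def by blast
qed

lemma Kc_mulxpow: "Kc N f \<Longrightarrow> Kc N (\<lambda>v. f v * v N ^ m)"
proof (induction m)
  case 0 then show ?case by simp
next
  case (Suc m)
  have "Kc N (\<lambda>v. (f v * v N ^ m) * v N)" by (rule Kc_mulx[OF Suc.IH[OF Suc.prems]])
  then show ?case by (simp add: mult_ac)
qed

lemma Kc_sum: "(\<And>a. a \<in> A \<Longrightarrow> Kc N (f a)) \<Longrightarrow> Kc N (\<lambda>v. \<Sum>a\<in>A. f a v)"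
proof (induction A rule: infinite_finite_induct)
  case (infinite A) then show ?case by (simp add: Kc_const)
next
  case empty then show ?case by (simp add: Kc_const)
next
  case (insert x F) then show ?case by (simp add: Kc_add)
qed

lemma Kc_mult: "Kc N f \<Longrightarrow> Kc N g \<Longrightarrow> Kc N (\<lambda>v. f v * g v)"
proof -
  assume f: "Kc N f" and "Kc N g"
  then obtain G where G: "\<forall>k. isP (G k)" "\<forall>v. g v = (\<Sum>k\<le>N. G k (sub (Suc N) v) * v N ^ k)"
    unfolding Kc_def by blast
  have "Kc N (\<lambda>v. \<Sum>k\<le>N. (f v * G k (sub (Suc N) v)) * v N ^ k)"
    by (intro Kc_sum Kc_mulxpow Kc_scal f) (use G in auto)
  then show ?thesis using G(2) by (simp add: sum_distrib_left mult_ac)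
qed

lemma Kc_prod: "(\<And>a. a \<in> A \<Longrightarrow> Kc N (f a)) \<Longrightarrow> Kc N (\<lambda>v. \<Prod>a\<in>A. f a v)"
proof (induction A rule: infinite_finite_induct)
  case (infinite A) then show ?case by (simp add: Kc_const)
next
  case empty then show ?case by (simp add: Kc_const)
next
  case (insert x F) then show ?case by (simp add: Kc_mult)
qed

lemma Kc_power: "Kc N f \<Longrightarrow> Kc N (\<lambda>v. f v ^ m)"
  by (induction m) (auto simp: Kc_const Kc_mult)

lemma Kc_diff: "Kc N f \<Longrightarrow> Kc N g \<Longrightarrow> Kc N (\<lambda>v. f v - g v)"
proof -
  assume "Kc N f" "Kc N g"
  then have "Kc N (\<lambda>v. g v * (\<lambda>_. -1) (sub (Suc N) v))" by (intro Kc_scal) auto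
  then have "Kc N (\<lambda>v. f v + g v * (\<lambda>_. -1) (sub (Suc N) v))" using \<open>Kc N f\<close> by (rule Kc_add[rotated])
  then show ?thesis by simp
qed

lemma Kc_mpeval: "(\<And>j. Kc N (\<lambda>v. w v j)) \<Longrightarrow> Kc N (\<lambda>v. mpeval (w v) P)"
  unfolding mpeval_def mmono_def
  by (intro Kc_sum Kc_mult Kc_prod Kc_power Kc_const)

lemma Kc_x: "Kc N (\<lambda>v. v N)"
  using Kc_mulx[OF Kc_const[of N 1]] by simp

lemma Kc_esym: "Kc N (\<lambda>v. esym k {..<N} v)"
proof (induction k)
  case 0 then show ?case by (simp add: esym_0 Kc_const)
next
  case (Suc k)
  have ins: "{..<Suc N} = insert N {..<N}" by auto
  have E: "esym (Suc k) {..<N} v = esym (Suc k) {..<Suc N} v - v N * esym k {..<N} v" for v :: "nat \<Rightarrow> int"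
    unfolding ins by (simp add: esym_insert)
  have 1: "Kc N (\<lambda>v. esym (Suc k) {..<Suc N} v)"
  proof (cases "k < Suc N")
    case True
    then have "\<And>v::nat\<Rightarrow>int. esym (Suc k) {..<Suc N} v = sub (Suc N) v k" by (simp add: sub_def)
    then show ?thesis using Kc_sub[of "\<lambda>w. w k" N] by simp
  next
    case False
    then have "\<And>v::nat\<Rightarrow>int. esym (Suc k) {..<Suc N} v = 0" by (intro esym_gt) auto
    then show ?thesis by (simp add: Kc_const)
  qed
  have 2: "Kc N (\<lambda>v. esym k {..<N} v * v N)" by (rule Kc_mulx[OF Suc.IH])
  show ?case unfolding E using Kc_diff[OF 1 2] by (simp add: mult_ac)
qed

lemma Kc_subN: "Kc N (\<lambda>v. sub N v j)"
proof -
  consider "j < N" | "j = N" | "j > N" by linarith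
  then show ?thesis
  proof cases
    case 1 then show ?thesis by (simp add: sub_def Kc_esym)
  next
    case 2 then show ?thesis by (simp add: sub_def Kc_x)
  next
    case 3
    then have "\<And>v::nat\<Rightarrow>int. sub N v j = sub (Suc N) v j" by (simp add: sub_def)
    then show ?thesis using Kc_sub[of "\<lambda>w. w j" N] by simp
  qed
qed

lemma sub_0: "sub 0 v = v"
  by (simp add: sub_def fun_eq_iff)

theorem FTSP:
  assumes "isP F" "symm N F"
  shows "\<exists>G. isP G \<and> (\<forall>v. F v = G (sub N v))"
  using assms
proof (induction N arbitrary: F)
  case 0
  then show ?case by (intro exI[of _ F]) (simp add: sub_0)
next
  case (Suc N)
  have "symm N F" using Suc.prems(2) unfolding symm_def by auto
  then obtain G1 where G1: "isP G1" "\<And>v. F v = G1 (sub N v)" using Suc.IH Suc.prems(1) by blast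
  obtain P1 where P1: "\<And>v. G1 v = mpeval v P1" using G1(1) unfolding isP_def by blast
  have "Kc N (\<lambda>v. mpeval (sub N v) P1)" by (rule Kc_mpeval[OF Kc_subN])
  moreover have "F = (\<lambda>v. mpeval (sub N v) P1)" using G1(2) P1 by (simp add: fun_eq_iff)
  ultimately have "Kc N F" by simp
  then obtain G where G: "\<forall>k. isP (G k)" "\<forall>v. F v = (\<Sum>k\<le>N. G k (sub (Suc N) v) * v N ^ k)"
    unfolding Kc_def by blast
  have inj_case: "F v = G 0 (sub (Suc N) v)" if inj: "inj_on v {..<Suc N}" for v
  proof -
    let ?w = "sub (Suc N) v"
    define q where "q = (\<Sum>k\<le>N. monom (G k ?w) k) - [:F v:]"
    have cq: "coeff q m = (if m \<le> N then G m ?w else 0) - (if m = 0 then F v else 0)" for m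
    proof -
      have "(\<Sum>k\<le>N. coeff (monom (G k ?w) k) m) = (if m \<le> N then G m ?w else 0)"
        by (simp add: coeff_monom if_distrib sum.delta cong: if_cong)
      then show ?thesis by (simp add: q_def coeff_sum coeff_diff coeff_pCons split: nat.split)
    qed
    have roots: "poly q (v i) = 0" if i: "i < Suc N" for i
    proof -
      have "F v = F (\<lambda>k. v (tsw i N k))" using Suc.prems(2) i unfolding symm_def by auto
      also have "\<dots> = (\<Sum>k\<le>N. G k (sub (Suc N) (\<lambda>k. v (tsw i N k))) * v (tsw i N N) ^ k)" using G(2) by blast
      also have "sub (Suc N) (\<lambda>k. v (tsw i N k)) = ?w" using i by (intro sub_tsw) auto
      also have "tsw i N N = i" by (simp add: tsw_def)
      finally have "F v = (\<Sum>k\<le>N. G k ?w * v i ^ k)" .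
      then show ?thesis by (simp add: q_def poly_sum poly_monom)
    qed
    have "q = 0"
    proof (rule ccontr)
      assume q0: "q \<noteq> 0"
      have "degree q \<le> N" by (rule degree_le) (simp add: cq)
      moreover have "card {x. poly q x = 0} \<le> degree q" by (rule card_poly_roots_bound[OF q0])
      moreover have "v ` {..<Suc N} \<subseteq> {x. poly q x = 0}" using roots by auto
      then have "card (v ` {..<Suc N}) \<le> card {x. poly q x = 0}"
        using poly_roots_finite[OF q0] by (intro card_mono) auto
      moreover have "card (v ` {..<Suc N}) = Suc N" using inj by (simp add: card_image)
      ultimately show False by simp
    qed
    then have "coeff q 0 = 0" by simp
    then show ?thesis by (simp add: cq)
  qed
  have isPD: "isP (\<lambda>v. F v - G 0 (sub (Suc N) v))"
    using Suc.prems(1) G(1) by (intro isP_diff isP_comp_sub) auto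
  have "\<And>v. F v - G 0 (sub (Suc N) v) = 0"
    by (rule vanish_ext_inj[OF isP_ispoly[OF isPD], of "Suc N"]) (simp add: inj_case)
  then show ?case using G(1) by (intro exI[of _ "G 0"]) auto
qed


lemma bij_invol: "(\<And>x. x \<in> A \<Longrightarrow> f x \<in> A) \<Longrightarrow> (\<And>x. x \<in> A \<Longrightarrow> f (f x) = x) \<Longrightarrow> bij_betw f A A"
  by (rule bij_betw_byWitness[of A f f]) auto

lemma Ints_fun: "(\<And>i. v i \<in> \<int>) \<Longrightarrow> \<exists>f. v = (\<lambda>i. of_int (f i))"
proof -
  assume "\<And>i. v i \<in> \<int>"
  then have "\<forall>i. \<exists>n. v i = of_int n" by (metis Ints_cases)
  then obtain f where "\<forall>i. v i = of_int (f i)" by metis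
  then show ?thesis by auto
qed

lemma ispoly_sub: "ispoly (\<lambda>z. sub N (v(k := z)) j)"
proof (cases "j < N")
  case True
  have "ispoly (\<lambda>z. esym (Suc j) {..<N} (v(k := z)))" by (rule ispoly_esym) (rule ispoly_upd)
  then show ?thesis using True unfolding sub_def by simp
next
  case False
  have "ispoly (\<lambda>z. (v(k := z)) j)" by (rule ispoly_upd)
  then show ?thesis using False unfolding sub_def by simp
qed

lemma lemD:
  assumes HP: "isP H" and Z: "\<And>v. H (sub N v) = 0"
  shows "H w = 0"
proof -
  obtain Q where Q: "\<And>v. H v = mpeval v Q" using HP unfolding isP_def by blast
  define Hc where "Hc v = mpeval (sub N v) Q" for v :: "nat \<Rightarrow> complex"
  have P: "ispoly (\<lambda>z. Hc (v(k := z)))" for v k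
    unfolding Hc_def by (rule ispoly_mpeval) (rule ispoly_sub)
  have I: "Hc v = 0" if "\<And>i. v i \<in> \<int>" for v
  proof -
    have "\<exists>f. v = (\<lambda>i. of_int (f i))" by (rule Ints_fun) (rule that)
    then obtain f where f: "v = (\<lambda>i. of_int (f i))" by blast
    have "sub N (\<lambda>i. complex_of_int (f i)) = (\<lambda>j. of_int (sub N f j))"
      by (rule ext) (rule sub_hom[OF rhom_of_int_fun])
    then have "Hc v = mpeval (\<lambda>j. of_int (sub N f j)) Q"
      unfolding Hc_def f by simp
    also have "\<dots> = of_int (mpeval (sub N f) Q)"
      by (rule mpeval_hom[OF rhom_of_int_fun, symmetric])
    also have "\<dots> = 0" using Z Q by simp
    finally show ?thesis .
  qed
  have E: "Hc v = 0" if "\<And>i. i \<ge> N \<Longrightarrow> v i \<in> \<int>" for v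
    by (rule vanish_ext_int[OF P I that]) auto
  from split_complex[of N "\<lambda>j. of_int (w (j - 1))"]
  obtain \<xi> :: "nat \<Rightarrow> complex" where \<xi>: "\<forall>j. 1 \<le> j \<longrightarrow> j \<le> N \<longrightarrow> esym j {..<N} \<xi> = complex_of_int (w (j - 1))" ..
  define v where "v i = (if i < N then \<xi> i else of_int (w i))" for i
  have sv: "sub N v = (\<lambda>j. of_int (w j))"
  proof
    fix j show "sub N v j = of_int (w j)"
    proof (cases "j < N")
      case True
      have "esym (Suc j) {..<N} v = esym (Suc j) {..<N} \<xi>" by (rule esym_cong) (simp add: v_def)
      then show ?thesis using True \<xi> by (simp add: sub_def)
    next
      case False then show ?thesis by (simp add: sub_def v_def)
    qed
  qed
  have "Hc v = 0" by (rule E) (simp add: v_def)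
  then have "mpeval (\<lambda>j. of_int (w j) :: complex) Q = 0" by (simp add: Hc_def sv)
  then have "(of_int (mpeval w Q) :: complex) = 0" by (simp add: mpeval_hom[OF rhom_of_int_fun])
  then show ?thesis using Q by simp
qed

section \<open>Existence of the universal polynomials\<close>

lemma Pmul_ex:
  "\<exists>P. \<forall>\<xi> \<eta> :: nat \<Rightarrow> int.
      mpeval (\<lambda>j. if j < n then of_int (esymS (j+1) {..<n} \<xi>)
                  else if j < 2*n then of_int (esymS (j-n+1) {..<n} \<eta>) else 0) P
      = esymS n ({..<n} \<times> {..<n}) (\<lambda>(i,j). \<xi> i * \<eta> j)"
proof -
  let ?I = "{..<n}"
  define F where "F v = esym n (?I \<times> ?I) (\<lambda>(i,j). v i * v (n + j))" for v :: "nat \<Rightarrow> int"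
  have isF: "isP F" unfolding F_def
  proof (rule isP_esym)
    fix x :: "nat \<times> nat" show "isP (\<lambda>v. case x of (i, j) \<Rightarrow> v i * v (n + j))"
      by (cases x) auto
  qed
  have symF: "symm n F" unfolding symm_def
  proof (intro allI impI)
    fix a b v assume ab: "a < n" "b < n"
    let ?f = "\<lambda>(i::nat, j::nat). (tsw a b i, j)"
    have bij: "bij_betw ?f (?I \<times> ?I) (?I \<times> ?I)"
      by (rule bij_invol) (use tsw_bij[OF ab] in \<open>auto simp: bij_betw_def\<close>)
    have "F v = esym n (?I \<times> ?I) (\<lambda>x. (\<lambda>(i,j). v i * v (n + j)) (?f x))"
      unfolding F_def by (rule esym_reindex[OF bij])
    also have "\<dots> = F (\<lambda>k. v (tsw a b k))"
      unfolding F_def by (rule esym_cong) (use ab in \<open>auto simp: tsw_def\<close>)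
    finally show "F (\<lambda>k. v (tsw a b k)) = F v" by simp
  qed
  obtain G1 where G1: "isP G1" "\<And>v. F v = G1 (sub n v)" using FTSP[OF isF symF] by blast
  have symF2: "F (\<lambda>k. v (tsw (n + a) (n + b) k)) = F v" if ab: "a < n" "b < n" for a b v
  proof -
    let ?f = "\<lambda>(i::nat, j::nat). (i, tsw a b j)"
    have bij: "bij_betw ?f (?I \<times> ?I) (?I \<times> ?I)"
      by (rule bij_invol) (use tsw_bij[OF ab] in \<open>auto simp: bij_betw_def\<close>)
    have "F v = esym n (?I \<times> ?I) (\<lambda>x. (\<lambda>(i,j). v i * v (n + j)) (?f x))"
      unfolding F_def by (rule esym_reindex[OF bij])
    also have "\<dots> = F (\<lambda>k. v (tsw (n + a) (n + b) k))"
      unfolding F_def by (rule esym_cong) (use ab in \<open>auto simp: tsw_def\<close>)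
    finally show ?thesis by simp
  qed
  have symG1: "G1 (\<lambda>k. u (tsw (n + a) (n + b) k)) = G1 u" if ab: "a < n" "b < n" for a b u
  proof -
    let ?t = "tsw (n + a) (n + b)"
    have "isP (\<lambda>u. G1 (\<lambda>k. u (?t k)) - G1 u)" by (rule isP_diff[OF isP_comp_map[OF G1(1)] G1(1)])
    moreover have "G1 (\<lambda>k. sub n v (?t k)) - G1 (sub n v) = 0" for v
    proof -
      have "(\<lambda>k. sub n v (?t k)) = sub n (\<lambda>k. v (?t k))"
      proof
        fix k show "sub n v (?t k) = sub n (\<lambda>k. v (?t k)) k"
        proof (cases "k < n")
          case True
          then have "?t k = k" by (simp add: tsw_def)
          moreover have "esym (Suc k) ?I v = esym (Suc k) ?I (\<lambda>k. v (?t k))"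
            by (rule esym_cong) (simp add: tsw_def)
          ultimately show ?thesis using True by (simp add: sub_def)
        next
          case False
          then have "\<not> ?t k < n" by (simp add: tsw_def)
          then show ?thesis using False by (simp add: sub_def)
        qed
      qed
      then have "G1 (\<lambda>k. sub n v (?t k)) = F (\<lambda>k. v (?t k))" using G1(2) by simp
      also have "\<dots> = F v" by (rule symF2[OF ab])
      finally show ?thesis using G1(2) by simp
    qed
    ultimately have "G1 (\<lambda>k. u (?t k)) - G1 u = 0" by (rule lemD)
    then show ?thesis by simp
  qed
  define \<pi> where "\<pi> k = (if k < n then n + k else if k < 2*n then k - n else k)" for k
  have pp: "\<pi> (\<pi> k) = k" for k by (auto simp: \<pi>_def)
  define G2 where "G2 u = G1 (\<lambda>k. u (\<pi> k))" for u
  have isG2: "isP G2" unfolding G2_def using G1(1) by (rule isP_comp_map)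
  have symG2: "symm n G2" unfolding symm_def
  proof (intro allI impI)
    fix a b u assume ab: "a < n" "b < n"
    have "\<And>k. tsw a b (\<pi> k) = \<pi> (tsw (n + a) (n + b) k)"
      using ab by (auto simp: tsw_def \<pi>_def)
    then have "G2 (\<lambda>k. u (tsw a b k)) = G1 (\<lambda>k. (\<lambda>k. u (\<pi> k)) (tsw (n + a) (n + b) k))"
      by (simp add: G2_def)
    also have "\<dots> = G2 u" unfolding G2_def by (rule symG1[OF ab])
    finally show "G2 (\<lambda>k. u (tsw a b k)) = G2 u" .
  qed
  obtain G3 where G3: "isP G3" "\<And>u. G2 u = G3 (sub n u)" using FTSP[OF isG2 symG2] by blast
  define G4 where "G4 y = G3 (\<lambda>k. y (\<pi> k))" for y
  have "isP G4" unfolding G4_def using G3(1) by (rule isP_comp_map)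
  then obtain P where P: "\<And>y. G4 y = mpeval y P" unfolding isP_def by blast
  show ?thesis
  proof (intro exI allI)
    fix \<xi> \<eta> :: "nat \<Rightarrow> int"
    define v where "v k = (if k < n then \<xi> k else if k < 2*n then \<eta> (k - n) else 0)" for k
    define E :: "nat \<Rightarrow> int" where "E j = (if j < n then of_int (esymS (j+1) ?I \<xi>) else if j < 2*n then of_int (esymS (j-n+1) ?I \<eta>) else 0)" for j
    have Fv: "F v = esymS n (?I \<times> ?I) (\<lambda>(i,j). \<xi> i * \<eta> j)"
      unfolding F_def esymS_esym by (rule esym_cong) (auto simp: v_def)
    have "G1 u = G3 (sub n (\<lambda>k. u (\<pi> k)))" for u
    proof -
      have "G1 u = G2 (\<lambda>k. u (\<pi> k))" by (simp add: G2_def pp)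
      then show ?thesis using G3(2) by simp
    qed
    then have "F v = G3 (sub n (\<lambda>k. sub n v (\<pi> k)))" using G1(2) by simp
    also have "sub n (\<lambda>k. sub n v (\<pi> k)) = (\<lambda>k. E (\<pi> k))"
    proof
      fix k show "sub n (\<lambda>k. sub n v (\<pi> k)) k = E (\<pi> k)"
      proof (cases "k < n")
        case True
        have "esym (Suc k) ?I (\<lambda>k. sub n v (\<pi> k)) = esym (Suc k) ?I \<eta>"
          by (rule esym_cong) (simp add: \<pi>_def sub_def v_def)
        then show ?thesis using True by (simp add: sub_def \<pi>_def E_def esymS_esym)
      next
        case False
        show ?thesis
        proof (cases "k < 2 * n")
          case True
          have "esym (Suc (k - n)) ?I v = esym (Suc (k - n)) ?I \<xi>"
            by (rule esym_cong) (simp add: v_def)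
          moreover have "k - n < n" "\<pi> k = k - n" using True False by (simp_all add: \<pi>_def)
          ultimately show ?thesis using True False by (simp add: sub_def E_def esymS_esym)
        next
          case False
          then show ?thesis using \<open>\<not> k < n\<close> by (simp add: sub_def \<pi>_def E_def v_def)
        qed
      qed
    qed
    also have "G3 (\<lambda>k. E (\<pi> k)) = mpeval E P" using P by (simp add: G4_def)
    finally show "mpeval (\<lambda>j. if j < n then of_int (esymS (j+1) ?I \<xi>)
                  else if j < 2*n then of_int (esymS (j-n+1) ?I \<eta>) else 0) P
      = esymS n (?I \<times> ?I) (\<lambda>(i,j). \<xi> i * \<eta> j)"
      using Fv unfolding E_def[abs_def] by simp
  qed
qed

lemma Pcomp_ex:
  "\<exists>P. \<forall>\<xi> :: nat \<Rightarrow> int.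
      mpeval (\<lambda>j. if j < m*n then of_int (esymS (j+1) {..<m*n} \<xi>) else 0) P
      = esymS m {S. S \<subseteq> {..<m*n} \<and> card S = n} (\<lambda>S. \<Prod>i\<in>S. \<xi> i)"
proof -
  let ?N = "m * n"
  let ?S = "{S. S \<subseteq> {..<?N} \<and> card S = n}"
  define F where "F v = esym m ?S (\<lambda>S. \<Prod>i\<in>S. v i)" for v :: "nat \<Rightarrow> int"
  have isF: "isP F" unfolding F_def by (intro isP_esym isP_prod) auto
  have symF: "symm ?N F" unfolding symm_def
  proof (intro allI impI)
    fix a b v assume ab: "a < ?N" "b < ?N"
    have tb: "bij_betw (tsw a b) {..<?N} {..<?N}" by (rule tsw_bij[OF ab])
    have bij: "bij_betw (\<lambda>S. tsw a b ` S) ?S ?S"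
    proof (rule bij_invol)
      fix S assume S: "S \<in> ?S"
      then have "inj_on (tsw a b) S" using tb by (auto simp: bij_betw_def intro: inj_on_subset)
      then have "card (tsw a b ` S) = n" using S by (simp add: card_image)
      moreover have "tsw a b ` S \<subseteq> {..<?N}" using S tb by (auto simp: bij_betw_def)
      ultimately show "tsw a b ` S \<in> ?S" by simp
    next
      fix S show "tsw a b ` tsw a b ` S = S" by (simp add: image_image)
    qed
    have "F v = esym m ?S (\<lambda>S. (\<lambda>T. \<Prod>i\<in>T. v i) (tsw a b ` S))"
      unfolding F_def by (rule esym_reindex[OF bij])
    also have "\<dots> = F (\<lambda>k. v (tsw a b k))"
      unfolding F_def
    proof (rule esym_cong)
      fix S assume "S \<in> ?S"
      have "inj_on (tsw a b) S" by (auto simp: inj_on_def tsw_def split: if_splits)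
      then show "(\<Prod>i\<in>tsw a b ` S. v i) = (\<Prod>i\<in>S. v (tsw a b i))" by (simp add: prod.reindex)
    qed
    finally show "F (\<lambda>k. v (tsw a b k)) = F v" by simp
  qed
  obtain G where G: "isP G" "\<And>v. F v = G (sub ?N v)" using FTSP[OF isF symF] by blast
  then obtain P where P: "\<And>y. G y = mpeval y P" unfolding isP_def by blast
  show ?thesis
  proof (intro exI allI)
    fix \<xi> :: "nat \<Rightarrow> int"
    define v where "v k = (if k < ?N then \<xi> k else 0)" for k
    have Fv: "F v = esymS m ?S (\<lambda>S. \<Prod>i\<in>S. \<xi> i)"
      unfolding F_def esymS_esym
      by (rule esym_cong) (auto simp: v_def intro!: prod.cong)
    have "sub ?N v = (\<lambda>j. if j < ?N then of_int (esymS (j+1) {..<?N} \<xi>) else 0)"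
    proof
      fix j show "sub ?N v j = (if j < ?N then of_int (esymS (j+1) {..<?N} \<xi>) else 0)"
      proof (cases "j < ?N")
        case True
        have "esym (Suc j) {..<?N} v = esym (Suc j) {..<?N} \<xi>" by (rule esym_cong) (simp add: v_def)
        then show ?thesis using True by (simp add: sub_def esymS_esym)
      next
        case False then show ?thesis by (simp add: sub_def v_def)
      qed
    qed
    then show "mpeval (\<lambda>j. if j < ?N then of_int (esymS (j+1) {..<?N} \<xi>) else 0) P
      = esymS m ?S (\<lambda>S. \<Prod>i\<in>S. \<xi> i)"
      using Fv G(2) P by metis
  qed
qed

lemma Pmul_spec:
  "mpeval (\<lambda>j. if j < n then of_int (esymS (j+1) {..<n} \<xi>)
                  else if j < 2*n then of_int (esymS (j-n+1) {..<n} \<eta>) else 0) (Pmul n)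
      = esymS n ({..<n} \<times> {..<n}) (\<lambda>(i,j). \<xi> i * \<eta> j)"
  using someI_ex[OF Pmul_ex[of n]] unfolding Pmul_def by blast

lemma Pcomp_spec:
  "mpeval (\<lambda>j. if j < m*n then of_int (esymS (j+1) {..<m*n} \<xi>) else 0) (Pcomp m n)
      = esymS m {S. S \<subseteq> {..<m*n} \<and> card S = n} (\<lambda>S. \<Prod>i\<in>S. \<xi> i)"
  using someI_ex[OF Pcomp_ex[of m n]] unfolding Pcomp_def by blast


definition Ev :: "nat \<Rightarrow> (nat \<Rightarrow> 'a) \<Rightarrow> (nat \<Rightarrow> 'a) \<Rightarrow> nat \<Rightarrow> 'a::zero" where
  "Ev n u v j = (if j < n then u (j+1) else if j < 2*n then v (j-n+1) else 0)"

definition Cv :: "nat \<Rightarrow> (nat \<Rightarrow> 'a) \<Rightarrow> nat \<Rightarrow> 'a::zero" where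
  "Cv N u j = (if j < N then u (j+1) else 0)"

lemma Ev_hom: "rhom h \<Longrightarrow> (\<lambda>j. h (Ev n u v j)) = Ev n (\<lambda>i. h (u i)) (\<lambda>i. h (v i))"
  by (rule ext) (simp add: Ev_def rhom_0)

lemma Cv_hom: "rhom h \<Longrightarrow> (\<lambda>j. h (Cv N u j)) = Cv N (\<lambda>i. h (u i))"
  by (rule ext) (simp add: Cv_def rhom_0)

lemma ispoly_ifz: "ispoly (\<lambda>z. if b then z else c)"
  by (cases b) auto

lemma Pmul_complex:
  fixes \<xi> \<eta> :: "nat \<Rightarrow> complex"
  shows "mpeval (Ev n (\<lambda>j. esym j {..<n} \<xi>) (\<lambda>j. esym j {..<n} \<eta>)) (Pmul n)
       = esym n ({..<n} \<times> {..<n}) (\<lambda>(i,j). \<xi> i * \<eta> j)"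
proof -
  let ?I = "{..<n}"
  define H where "H w = mpeval (Ev n (\<lambda>j. esym j ?I w) (\<lambda>j. esym j ?I (\<lambda>i. w (n + i)))) (Pmul n)
      - esym n (?I \<times> ?I) (\<lambda>(i,j). w i * w (n + j))" for w :: "nat \<Rightarrow> complex"
  have P: "ispoly (\<lambda>z. H (w(k := z)))" for w k
    unfolding H_def
  proof (rule ispoly_diff)
    show "ispoly (\<lambda>z. mpeval (Ev n (\<lambda>j. esym j ?I (w(k := z))) (\<lambda>j. esym j ?I (\<lambda>i. (w(k := z)) (n + i)))) (Pmul n))"
    proof (rule ispoly_mpeval)
      fix j
      show "ispoly (\<lambda>z. Ev n (\<lambda>j. esym j ?I (w(k := z))) (\<lambda>j. esym j ?I (\<lambda>i. (w(k := z)) (n + i))) j)"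
        unfolding Ev_def
        by (cases "j < n"; cases "j < 2 * n") (auto intro!: ispoly_esym ispoly_upd ispoly_ifz)
    qed
    show "ispoly (\<lambda>z. esym n (?I \<times> ?I) (\<lambda>(i, j). (w(k := z)) i * (w(k := z)) (n + j)))"
    proof (rule ispoly_esym)
      fix x :: "nat \<times> nat"
      show "ispoly (\<lambda>z. case x of (i, j) \<Rightarrow> (w(k := z)) i * (w(k := z)) (n + j))"
        by (cases x) (auto intro!: ispoly_mult ispoly_upd ispoly_ifz)
    qed
  qed
  have I: "H w = 0" if "\<And>i. w i \<in> \<int>" for w
  proof -
    have "\<exists>f. w = (\<lambda>i. of_int (f i))" by (rule Ints_fun) (rule that)
    then obtain f where f: "w = (\<lambda>i. of_int (f i))" by blast
    have spec: "mpeval (\<lambda>j. if j < n then of_int (esymS (j+1) ?I f)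
                  else if j < 2*n then of_int (esymS (j-n+1) ?I (\<lambda>i. f (n + i))) else 0) (Pmul n)
      = esymS n (?I \<times> ?I) (\<lambda>(i,j). f i * f (n + j))"
      by (rule Pmul_spec)
    have "Ev n (\<lambda>j. esym j ?I w) (\<lambda>j. esym j ?I (\<lambda>i. w (n + i))) =
          (\<lambda>j. of_int (if j < n then of_int (esymS (j+1) ?I f)
                  else if j < 2*n then of_int (esymS (j-n+1) ?I (\<lambda>i. f (n + i))) else 0))"
      by (rule ext) (simp add: Ev_def f esymS_esym esym_hom[OF rhom_of_int_fun])
    then have "mpeval (Ev n (\<lambda>j. esym j ?I w) (\<lambda>j. esym j ?I (\<lambda>i. w (n + i)))) (Pmul n)
        = of_int (esymS n (?I \<times> ?I) (\<lambda>(i,j). f i * f (n + j)))"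
      using spec by (simp add: mpeval_hom[OF rhom_of_int_fun, symmetric])
    moreover have "esym n (?I \<times> ?I) (\<lambda>(i,j). w i * w (n + j)) = of_int (esymS n (?I \<times> ?I) (\<lambda>(i,j). f i * f (n + j)))"
      unfolding esymS_esym f esym_hom[OF rhom_of_int_fun]
      by (rule esym_cong) auto
    ultimately show ?thesis by (simp add: H_def)
  qed
  define w where "w k = (if k < n then \<xi> k else if k < 2*n then \<eta> (k - n) else 0)" for k
  have "H w = 0" by (rule vanish_ext_int[OF P I, of "2*n"]) (auto simp: w_def)
  moreover have "(\<lambda>j. esym j ?I w) = (\<lambda>j. esym j ?I \<xi>)"
    by (rule ext, rule esym_cong) (simp add: w_def)
  moreover have "(\<lambda>j. esym j ?I (\<lambda>i. w (n + i))) = (\<lambda>j. esym j ?I \<eta>)"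
    by (rule ext, rule esym_cong) (simp add: w_def)
  moreover have "esym n (?I \<times> ?I) (\<lambda>(i,j). w i * w (n + j)) = esym n (?I \<times> ?I) (\<lambda>(i,j). \<xi> i * \<eta> j)"
    by (rule esym_cong) (auto simp: w_def)
  ultimately show ?thesis by (simp add: H_def)
qed

lemma Pcomp_complex:
  fixes \<xi> :: "nat \<Rightarrow> complex"
  shows "mpeval (Cv (m*n) (\<lambda>j. esym j {..<m*n} \<xi>)) (Pcomp m n)
       = esym m {S. S \<subseteq> {..<m*n} \<and> card S = n} (\<lambda>S. \<Prod>i\<in>S. \<xi> i)"
proof -
  let ?N = "m * n"
  let ?S = "{S. S \<subseteq> {..<?N} \<and> card S = n}"
  define H where "H w = mpeval (Cv ?N (\<lambda>j. esym j {..<?N} w)) (Pcomp m n)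
      - esym m ?S (\<lambda>S. \<Prod>i\<in>S. w i)" for w :: "nat \<Rightarrow> complex"
  have P: "ispoly (\<lambda>z. H (w(k := z)))" for w k
    unfolding H_def
  proof (rule ispoly_diff)
    show "ispoly (\<lambda>z. mpeval (Cv ?N (\<lambda>j. esym j {..<?N} (w(k := z)))) (Pcomp m n))"
    proof (rule ispoly_mpeval)
      fix j
      show "ispoly (\<lambda>z. Cv ?N (\<lambda>j. esym j {..<?N} (w(k := z))) j)"
        unfolding Cv_def by (cases "j < ?N") (auto intro!: ispoly_esym ispoly_upd)
    qed
    show "ispoly (\<lambda>z. esym m ?S (\<lambda>S. \<Prod>i\<in>S. (w(k := z)) i))"
      by (intro ispoly_esym ispoly_prod ispoly_upd)
  qed
  have I: "H w = 0" if "\<And>i. w i \<in> \<int>" for w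
  proof -
    have "\<exists>f. w = (\<lambda>i. of_int (f i))" by (rule Ints_fun) (rule that)
    then obtain f where f: "w = (\<lambda>i. of_int (f i))" by blast
    have spec: "mpeval (\<lambda>j. if j < ?N then of_int (esymS (j+1) {..<?N} f) else 0) (Pcomp m n)
      = esymS m ?S (\<lambda>S. \<Prod>i\<in>S. f i)"
      by (rule Pcomp_spec)
    have "Cv ?N (\<lambda>j. esym j {..<?N} w) = (\<lambda>j. of_int (if j < ?N then of_int (esymS (j+1) {..<?N} f) else 0))"
      by (rule ext) (simp add: Cv_def f esymS_esym esym_hom[OF rhom_of_int_fun])
    then have "mpeval (Cv ?N (\<lambda>j. esym j {..<?N} w)) (Pcomp m n) = of_int (esymS m ?S (\<lambda>S. \<Prod>i\<in>S. f i))"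
      using spec by (simp add: mpeval_hom[OF rhom_of_int_fun, symmetric])
    moreover have "esym m ?S (\<lambda>S. \<Prod>i\<in>S. w i) = of_int (esymS m ?S (\<lambda>S. \<Prod>i\<in>S. f i))"
      unfolding esymS_esym f esym_hom[OF rhom_of_int_fun]
      by (rule esym_cong) (simp add: rhom_prod[OF rhom_of_int_fun])
    ultimately show ?thesis by (simp add: H_def)
  qed
  define w where "w k = (if k < ?N then \<xi> k else 0)" for k
  have "H w = 0" by (rule vanish_ext_int[OF P I, of ?N]) (auto simp: w_def)
  moreover have "(\<lambda>j. esym j {..<?N} w) = (\<lambda>j. esym j {..<?N} \<xi>)"
    by (rule ext, rule esym_cong) (simp add: w_def)
  moreover have "esym m ?S (\<lambda>S. \<Prod>i\<in>S. w i) = esym m ?S (\<lambda>S. \<Prod>i\<in>S. \<xi> i)"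
    by (rule esym_cong) (auto simp: w_def intro!: prod.cong)
  ultimately show ?thesis by (simp add: H_def)
qed


definition ivc :: "nat \<Rightarrow> complex" where "ivc k = inverse (of_nat k)"

lemma ivcond_ivc: "ivcond ivc"
  by (simp add: ivcond_def ivc_def)

lemma Imul_complex:
  fixes u v :: "nat \<Rightarrow> complex"
  shows "mpeval (Ev n u v) (Pmul n) = NI ivc (\<lambda>k. nw u k * nw v k) n"
proof -
  let ?I = "{..<n}"
  from split_complex[of n u] obtain \<xi> :: "nat \<Rightarrow> complex" where \<xi>: "\<forall>j. 1 \<le> j \<longrightarrow> j \<le> n \<longrightarrow> esym j ?I \<xi> = u j" ..
  from split_complex[of n v] obtain \<eta> :: "nat \<Rightarrow> complex" where \<eta>: "\<forall>j. 1 \<le> j \<longrightarrow> j \<le> n \<longrightarrow> esym j ?I \<eta> = v j" ..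
  have "Ev n u v = Ev n (\<lambda>j. esym j ?I \<xi>) (\<lambda>j. esym j ?I \<eta>)"
    by (rule ext) (simp add: Ev_def \<xi> \<eta>)
  then have L: "mpeval (Ev n u v) (Pmul n) = esym n (?I \<times> ?I) (\<lambda>(i,j). \<xi> i * \<eta> j)"
    by (simp add: Pmul_complex)
  have "NI ivc (\<lambda>k. nw u k * nw v k) n = NI ivc (\<lambda>k. \<Sum>x\<in>?I \<times> ?I. (case x of (i, j) \<Rightarrow> \<xi> i * \<eta> j) ^ k) n"
  proof (rule NI_cong)
    fix k assume k: "1 \<le> k" "k \<le> n"
    have "nw u k = nw (\<lambda>j. esym j ?I \<xi>) k" by (rule nw_cong) (use k \<xi> in auto)
    also have "\<dots> = (\<Sum>a\<in>?I. \<xi> a ^ k)" using k by (simp add: nw_esym)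
    finally have 1: "nw u k = (\<Sum>a\<in>?I. \<xi> a ^ k)" .
    have "nw v k = nw (\<lambda>j. esym j ?I \<eta>) k" by (rule nw_cong) (use k \<eta> in auto)
    also have "\<dots> = (\<Sum>a\<in>?I. \<eta> a ^ k)" using k by (simp add: nw_esym)
    finally have 2: "nw v k = (\<Sum>a\<in>?I. \<eta> a ^ k)" .
    show "nw u k * nw v k = (\<Sum>x\<in>?I \<times> ?I. (case x of (i, j) \<Rightarrow> \<xi> i * \<eta> j) ^ k)"
      unfolding 1 2 sum_product sum.cartesian_product by (simp add: power_mult_distrib split_def)
  qed
  also have "\<dots> = esym n (?I \<times> ?I) (\<lambda>(i,j). \<xi> i * \<eta> j)"
    by (rule NI_esym[OF ivcond_ivc]) simp
  finally show ?thesis using L by simp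
qed

lemma Icomp_complex:
  fixes u :: "nat \<Rightarrow> complex"
  shows "mpeval (Cv (m*n) u) (Pcomp m n) = NI ivc (\<lambda>j. NI ivc (\<lambda>k. nw u (j*k)) n) m"
proof -
  let ?N = "m * n"
  let ?S = "{S. S \<subseteq> {..<?N} \<and> card S = n}"
  from split_complex[of ?N u] obtain \<xi> :: "nat \<Rightarrow> complex" where \<xi>: "\<forall>j. 1 \<le> j \<longrightarrow> j \<le> ?N \<longrightarrow> esym j {..<?N} \<xi> = u j" ..
  have "Cv ?N u = Cv ?N (\<lambda>j. esym j {..<?N} \<xi>)"
    by (rule ext) (simp add: Cv_def \<xi>)
  then have L: "mpeval (Cv ?N u) (Pcomp m n) = esym m ?S (\<lambda>S. \<Prod>i\<in>S. \<xi> i)"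
    by (simp add: Pcomp_complex)
  have "NI ivc (\<lambda>j. NI ivc (\<lambda>k. nw u (j*k)) n) m = NI ivc (\<lambda>j. \<Sum>S\<in>?S. (\<Prod>i\<in>S. \<xi> i) ^ j) m"
  proof (rule NI_cong)
    fix j assume j: "1 \<le> j" "j \<le> m"
    have "NI ivc (\<lambda>k. nw u (j*k)) n = NI ivc (\<lambda>k. \<Sum>i\<in>{..<?N}. (\<xi> i ^ j) ^ k) n"
    proof (rule NI_cong)
      fix k assume k: "1 \<le> k" "k \<le> n"
      have jk: "1 \<le> j * k" "j * k \<le> ?N" using j k by (simp_all add: mult_le_mono)
      have "nw u (j*k) = nw (\<lambda>i. esym i {..<?N} \<xi>) (j*k)" by (rule nw_cong) (use jk \<xi> in auto)
      also have "\<dots> = (\<Sum>i\<in>{..<?N}. \<xi> i ^ (j*k))" using jk by (simp add: nw_esym)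
      finally show "nw u (j*k) = (\<Sum>i\<in>{..<?N}. (\<xi> i ^ j) ^ k)" by (simp add: power_mult)
    qed
    also have "\<dots> = esym n {..<?N} (\<lambda>i. \<xi> i ^ j)" by (rule NI_esym[OF ivcond_ivc]) simp
    also have "\<dots> = (\<Sum>S\<in>?S. (\<Prod>i\<in>S. \<xi> i) ^ j)" by (simp add: esym_def prod_power_distrib)
    finally show "NI ivc (\<lambda>k. nw u (j*k)) n = (\<Sum>S\<in>?S. (\<Prod>i\<in>S. \<xi> i) ^ j)" .
  qed
  also have "\<dots> = esym m ?S (\<lambda>S. \<Prod>i\<in>S. \<xi> i)"
    by (rule NI_esym[OF ivcond_ivc]) (auto intro: finite_subset[of _ "Pow {..<?N}"])
  finally show ?thesis using L by simp
qed

datatype ct = CT complex complex complex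

instantiation ct :: comm_ring_1
begin
definition "0 = CT 0 0 0"
definition "1 = CT 1 0 0"
fun plus_ct where "CT a b c + CT a' b' c' = CT (a+a') (b+b') (c+c')"
fun minus_ct where "CT a b c - CT a' b' c' = CT (a-a') (b-b') (c-c')"
fun uminus_ct where "- CT a b c = CT (-a) (-b) (-c)"
fun times_ct where "CT a b c * CT a' b' c' = CT (a*a') (a*b' + b*a') (a*c' + b*b' + c*a')"
instance
proof
  fix x y z :: ct
  show "x * y * z = x * (y * z)"
    by (cases x; cases y; cases z; simp add: algebra_simps)
  show "x * y = y * x" by (cases x; cases y; simp add: algebra_simps)
  show "1 * x = x" by (cases x; simp add: one_ct_def)
  show "x + y + z = x + (y + z)" by (cases x; cases y; cases z; simp)
  show "x + y = y + x" by (cases x; cases y; simp)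
  show "0 + x = x" by (cases x; simp add: zero_ct_def)
  show "- x + x = 0" by (cases x; simp add: zero_ct_def)
  show "x - y = x + - y" by (cases x; cases y; simp)
  show "(x + y) * z = x * z + y * z" by (cases x; cases y; cases z; simp add: algebra_simps)
  show "(0::ct) \<noteq> 1" by (simp add: zero_ct_def one_ct_def)
qed
end

definition trunc :: "complex poly \<Rightarrow> ct" where
  "trunc p = CT (coeff p 0) (coeff p 1) (coeff p 2)"

definition lift :: "ct \<Rightarrow> complex poly" where
  "lift x = (case x of CT a b c \<Rightarrow> [:a, b, c:])"

lemma trunc_lift [simp]: "trunc (lift x) = x"
  by (cases x) (simp add: trunc_def lift_def numeral_2_eq_2)

lemma coeff_mult_0: "coeff (p * q) 0 = coeff p 0 * coeff q 0"
  by (simp add: coeff_mult)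
lemma coeff_mult_1: "coeff (p * q) (Suc 0) = coeff p 0 * coeff q (Suc 0) + coeff p (Suc 0) * coeff q 0"
  by (simp add: coeff_mult)
lemma coeff_mult_2: "coeff (p * q) (Suc (Suc 0)) = coeff p 0 * coeff q (Suc (Suc 0)) + coeff p (Suc 0) * coeff q (Suc 0) + coeff p (Suc (Suc 0)) * coeff q 0"
  by (simp add: coeff_mult atMost_Suc algebra_simps)

lemma rhom_trunc: "rhom trunc"
  unfolding rhom_def
  by (simp add: trunc_def coeff_mult_0 coeff_mult_1 coeff_mult_2 one_ct_def numeral_2_eq_2)

lemma rhom_poly: "rhom (\<lambda>p. poly p z)"
  by (simp add: rhom_def poly_mult)

definition ivp :: "nat \<Rightarrow> complex poly" where "ivp k = [:inverse (of_nat k):]"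
definition ivt :: "nat \<Rightarrow> ct" where "ivt k = CT (inverse (of_nat k)) 0 0"

lemma poly_ivp: "poly (ivp k) z = ivc k" by (simp add: ivp_def ivc_def)
lemma trunc_ivp: "trunc (ivp k) = ivt k" by (simp add: ivp_def ivt_def trunc_def numeral_2_eq_2)

lemma of_nat_ct: "(of_nat k :: ct) = CT (of_nat k) 0 0"
  by (induction k) (simp_all add: zero_ct_def one_ct_def)

lemma ivcond_ivt: "ivcond ivt"
  by (simp add: ivcond_def ivt_def of_nat_ct one_ct_def)

lemma poly_eqI_all: "(\<And>z. poly p z = poly q (z::complex)) \<Longrightarrow> p = q"
  by (metis poly_eq_poly_eq_iff ext)

lemma Imul_ct:
  fixes u v :: "nat \<Rightarrow> ct"
  shows "mpeval (Ev n u v) (Pmul n) = NI ivt (\<lambda>k. nw u k * nw v k) n"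
proof -
  let ?U = "\<lambda>i. lift (u i)" and ?V = "\<lambda>i. lift (v i)"
  have E: "mpeval (Ev n ?U ?V) (Pmul n) = NI ivp (\<lambda>k. nw ?U k * nw ?V k) n"
  proof (rule poly_eqI_all)
    fix z
    have "poly (mpeval (Ev n ?U ?V) (Pmul n)) z = mpeval (Ev n (\<lambda>i. poly (?U i) z) (\<lambda>i. poly (?V i) z)) (Pmul n)"
      by (simp add: mpeval_hom[OF rhom_poly] Ev_hom[OF rhom_poly])
    also have "\<dots> = NI ivc (\<lambda>k. nw (\<lambda>i. poly (?U i) z) k * nw (\<lambda>i. poly (?V i) z) k) n"
      by (rule Imul_complex)
    also have "\<dots> = poly (NI ivp (\<lambda>k. nw ?U k * nw ?V k) n) z"
      by (simp add: NI_hom[OF rhom_poly poly_ivp] nw_hom[OF rhom_poly] poly_mult)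
    finally show "poly (mpeval (Ev n ?U ?V) (Pmul n)) z = poly (NI ivp (\<lambda>k. nw ?U k * nw ?V k) n) z" .
  qed
  have "trunc (mpeval (Ev n ?U ?V) (Pmul n)) = mpeval (Ev n u v) (Pmul n)"
    by (simp add: mpeval_hom[OF rhom_trunc] Ev_hom[OF rhom_trunc])
  moreover have "trunc (NI ivp (\<lambda>k. nw ?U k * nw ?V k) n) = NI ivt (\<lambda>k. nw u k * nw v k) n"
    by (simp add: NI_hom[OF rhom_trunc trunc_ivp] nw_hom[OF rhom_trunc] rhom_mult[OF rhom_trunc])
  ultimately show ?thesis using E by simp
qed

lemma Icomp_ct:
  fixes u :: "nat \<Rightarrow> ct"
  shows "mpeval (Cv (m*n) u) (Pcomp m n) = NI ivt (\<lambda>j. NI ivt (\<lambda>k. nw u (j*k)) n) m"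
proof -
  let ?U = "\<lambda>i. lift (u i)"
  have E: "mpeval (Cv (m*n) ?U) (Pcomp m n) = NI ivp (\<lambda>j. NI ivp (\<lambda>k. nw ?U (j*k)) n) m"
  proof (rule poly_eqI_all)
    fix z
    have "poly (mpeval (Cv (m*n) ?U) (Pcomp m n)) z = mpeval (Cv (m*n) (\<lambda>i. poly (?U i) z)) (Pcomp m n)"
      by (simp add: mpeval_hom[OF rhom_poly] Cv_hom[OF rhom_poly])
    also have "\<dots> = NI ivc (\<lambda>j. NI ivc (\<lambda>k. nw (\<lambda>i. poly (?U i) z) (j*k)) n) m"
      by (rule Icomp_complex)
    also have "\<dots> = poly (NI ivp (\<lambda>j. NI ivp (\<lambda>k. nw ?U (j*k)) n) m) z"
      by (simp add: NI_hom[OF rhom_poly poly_ivp] nw_hom[OF rhom_poly])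
    finally show "poly (mpeval (Cv (m*n) ?U) (Pcomp m n)) z = poly (NI ivp (\<lambda>j. NI ivp (\<lambda>k. nw ?U (j*k)) n) m) z" .
  qed
  have "trunc (mpeval (Cv (m*n) ?U) (Pcomp m n)) = mpeval (Cv (m*n) u) (Pcomp m n)"
    by (simp add: mpeval_hom[OF rhom_trunc] Cv_hom[OF rhom_trunc])
  moreover have "trunc (NI ivp (\<lambda>j. NI ivp (\<lambda>k. nw ?U (j*k)) n) m) = NI ivt (\<lambda>j. NI ivt (\<lambda>k. nw u (j*k)) n) m"
    by (simp add: NI_hom[OF rhom_trunc trunc_ivp] nw_hom[OF rhom_trunc])
  ultimately show ?thesis using E by simp
qed


definition emb :: "tr3 \<Rightarrow> ct" where
  "emb x = (case x of Tr a b c \<Rightarrow> CT (of_int a) (of_int b) (of_int c))"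

lemma emb_Tr [simp]: "emb (Tr a b c) = CT (of_int a) (of_int b) (of_int c)"
  by (simp add: emb_def)

lemma rhom_emb: "rhom emb"
  unfolding rhom_def
proof (intro conjI allI)
  fix x y :: tr3
  show "emb (x + y) = emb x + emb y" by (cases x; cases y) simp
  show "emb (x * y) = emb x * emb y" by (cases x; cases y) simp
  show "emb 1 = 1" by (simp add: one_tr3_def one_ct_def)
qed

lemma emb_inj: "emb x = emb y \<Longrightarrow> x = y"
  by (cases x; cases y) simp

lemma of_nat_tr3: "(of_nat k :: tr3) = Tr (of_nat k) 0 0"
  by (induction k) (simp_all add: zero_tr3_def one_tr3_def)

lemma of_int_tr3: "(of_int k :: tr3) = Tr k 0 0"
  by (cases k) (simp_all add: of_nat_tr3 one_tr3_def)

lemma X2: "X ^ 2 = Tr 0 0 1"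
  by (simp add: X_def power2_eq_square)

lemma Tr_decomp: "Tr a b c = of_int a + of_int b * X + of_int c * X ^ 2"
  unfolding X2 by (simp add: of_int_tr3 X_def)

section \<open>Newton formula for square-zero sequences\<close>

lemma sum_rev_1: "(\<Sum>i\<in>{1..<Suc m}. f i) = (\<Sum>i<m. f (m - i))"
proof -
  have "(\<Sum>i\<in>{1..<Suc m}. f i) = (\<Sum>i<m. f (Suc i))"
    unfolding One_nat_def sum.shift_bounds_Suc_ivl atLeast0LessThan ..
  also have "\<dots> = (\<Sum>i<m. f (Suc (m - Suc i)))" by (rule sum.nat_diff_reindex[symmetric])
  also have "\<dots> = (\<Sum>i<m. f (m - i))" by (intro sum.cong) (auto simp: Suc_diff_Suc)
  finally show ?thesis .
qed

lemma nw_nil: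
  fixes u :: "nat \<Rightarrow> 'a::comm_ring_1"
  assumes Z: "\<And>i j k. 1 \<le> i \<Longrightarrow> 1 \<le> j \<Longrightarrow> 1 \<le> k \<Longrightarrow> u i * u j * u k = 0"
  shows "n \<ge> 1 \<Longrightarrow> nw u n = (-1)^(n - 1) * (of_nat n * u n - (\<Sum>i\<in>{1..<n}. of_nat i * u i * u (n - i)))"
proof (induction n rule: less_induct)
  case (less n)
  then obtain m where n: "n = Suc m" by (cases n) auto
  have T: "u (Suc i) * nw u (m - i) = (-1)^(m - i - 1) * (of_nat (m - i) * u (Suc i) * u (m - i))" if i: "i < m" for i
  proof -
    define S where "S = (\<Sum>l\<in>{1..<m - i}. of_nat l * u l * u (m - i - l))"
    have A: "nw u (m - i) = (-1)^(m - i - 1) * (of_nat (m - i) * u (m - i) - S)"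
      using less.IH[of "m - i"] n i by (simp add: S_def)
    have B: "u (Suc i) * S = 0" unfolding S_def
      unfolding sum_distrib_left
    proof (rule sum.neutral, intro ballI)
      fix l assume "l \<in> {1..<m - i}"
      then have "1 \<le> l" "1 \<le> m - i - l" by auto
      then have "u (Suc i) * u l * u (m - i - l) = 0" by (intro Z) auto
      then show "u (Suc i) * (of_nat l * u l * u (m - i - l)) = 0" by (simp add: mult_ac)
    qed
    have "u (Suc i) * nw u (m - i) = (-1)^(m - i - 1) * (of_nat (m - i) * u (Suc i) * u (m - i)) - (-1)^(m - i - 1) * (u (Suc i) * S)"
      unfolding A by (simp add: algebra_simps)
    then show ?thesis unfolding B by simp
  qed
  have "(\<Sum>i<m. (-1)^i * u (Suc i) * nw u (m - i)) = (\<Sum>i<m. (-1)^(m - 1) * (of_nat (m - i) * u (m - i) * u (Suc i)))"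
  proof (rule sum.cong)
    fix i assume "i \<in> {..<m}"
    then have i: "i < m" by simp
    have s: "(-1::'a)^i * (-1)^(m - i - 1) = (-1)^(m - 1)"
      using i by (simp flip: power_add)
    have "(-1)^i * u (Suc i) * nw u (m - i) = (-1)^i * (u (Suc i) * nw u (m - i))" by (rule mult.assoc)
    also have "\<dots> = (-1)^i * ((-1)^(m - i - 1) * (of_nat (m - i) * u (Suc i) * u (m - i)))" by (simp only: T[OF i])
    also have "\<dots> = ((-1)^i * (-1)^(m - i - 1)) * (of_nat (m - i) * u (m - i) * u (Suc i))" by (simp only: mult_ac)
    finally have "(-1)^i * u (Suc i) * nw u (m - i) = ((-1)^i * (-1)^(m - i - 1)) * (of_nat (m - i) * u (m - i) * u (Suc i))" .
    then show "(-1)^i * u (Suc i) * nw u (m - i) = (-1)^(m - 1) * (of_nat (m - i) * u (m - i) * u (Suc i))"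
      by (simp only: s)
  qed simp
  also have "\<dots> = (-1)^(m - 1) * (\<Sum>i\<in>{1..<Suc m}. of_nat i * u i * u (Suc m - i))"
  proof -
    have "(\<Sum>i\<in>{1..<Suc m}. of_nat i * u i * u (Suc m - i)) = (\<Sum>i<m. of_nat (m - i) * u (m - i) * u (Suc m - (m - i)))"
      by (rule sum_rev_1)
    also have "\<dots> = (\<Sum>i<m. of_nat (m - i) * u (m - i) * u (Suc i))"
      by (intro sum.cong) (auto simp: Suc_diff_le)
    finally show ?thesis by (simp only: sum_distrib_left)
  qed
  finally have S: "(\<Sum>i<m. (-1)^i * u (Suc i) * nw u (m - i)) = (-1)^(m - 1) * (\<Sum>i\<in>{1..<Suc m}. of_nat i * u i * u (Suc m - i))" .
  have sg: "(-1::'a)^(m - 1) = - ((-1)^m)" if "m \<ge> 1" using that by (cases m) simp_all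
  show ?case
  proof (cases "m = 0")
    case True
    then show ?thesis using n by (simp add: nw_Suc_alt)
  next
    case False
    then show ?thesis unfolding n nw_Suc_alt S using sg[of] by (simp add: algebra_simps)
  qed
qed


lemma lr_lam0: "lambda_ring lam \<Longrightarrow> lam 0 x = 1"
  by (simp add: lambda_ring_def pre_lambda_ring_def)
lemma lr_lam1: "lambda_ring lam \<Longrightarrow> lam 1 x = x"
  by (simp add: lambda_ring_def pre_lambda_ring_def)
lemma lr_add: "lambda_ring lam \<Longrightarrow> (\<lambda>i. lam i (x + y)) = conv (\<lambda>i. lam i x) (\<lambda>i. lam i y)"
  by (rule ext) (simp add: lambda_ring_def pre_lambda_ring_def conv_def)
lemma lr_one: "lambda_ring lam \<Longrightarrow> n \<ge> 2 \<Longrightarrow> lam n 1 = 0"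
  by (simp add: lambda_ring_def)
lemma lr_mul: "lambda_ring lam \<Longrightarrow> n \<ge> 1 \<Longrightarrow> lam n (x * y) = mpeval (Ev n (\<lambda>i. lam i x) (\<lambda>i. lam i y)) (Pmul n)"
  by (simp add: lambda_ring_def Ev_def[abs_def])
lemma lr_comp: "lambda_ring lam \<Longrightarrow> m \<ge> 1 \<Longrightarrow> n \<ge> 1 \<Longrightarrow> lam m (lam n x) = mpeval (Cv (m*n) (\<lambda>i. lam i x)) (Pcomp m n)"
  by (simp add: lambda_ring_def Cv_def[abs_def])

lemma psi_add:
  assumes L: "lambda_ring lam" and k: "k \<ge> 1"
  shows "adams lam k (x + y) = adams lam k x + adams lam k y"
proof -
  have N1: "Newt (\<lambda>i. lam i x) (nw (\<lambda>i. lam i x))" by (rule Newt_nw) (simp add: lr_lam0[OF L])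
  have N2: "Newt (\<lambda>i. lam i y) (nw (\<lambda>i. lam i y))" by (rule Newt_nw) (simp add: lr_lam0[OF L])
  have N: "Newt (conv (\<lambda>i. lam i x) (\<lambda>i. lam i y)) (\<lambda>k. nw (\<lambda>i. lam i x) k + nw (\<lambda>i. lam i y) k)"
    by (rule Newt_conv[OF N1 N2])
  have c0: "conv (\<lambda>i. lam i x) (\<lambda>i. lam i y) 0 = 1" by (simp add: conv_def lr_lam0[OF L])
  have "nw (\<lambda>i. lam i x) k + nw (\<lambda>i. lam i y) k = nw (conv (\<lambda>i. lam i x) (\<lambda>i. lam i y)) k"
    by (rule Newt_nw_eq[OF c0 N k])
  then show ?thesis by (simp add: adams_nw lr_add[OF L])
qed

lemma esym_single: "esym k {a} c = (if k = 0 then 1 else if k = 1 then c a else 0)"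
proof (cases k)
  case 0 then show ?thesis by (simp add: esym_0)
next
  case (Suc m)
  have "esym (Suc m) (insert a {}) c = esym (Suc m) {} c + c a * esym m {} c"
    by (rule esym_insert) auto
  then show ?thesis using Suc by (cases m) (simp_all add: esym_0 esym_empty_Suc)
qed

lemma psi_one:
  assumes L: "lambda_ring lam" and k: "k \<ge> 1"
  shows "adams lam k 1 = 1"
proof -
  have "(\<lambda>i. lam i 1) = (\<lambda>i. esym i {0::nat} (\<lambda>_. 1))"
  proof
    fix i show "lam i 1 = esym i {0::nat} (\<lambda>_. 1)"
      using lr_lam0[OF L] lr_lam1[OF L] lr_one[OF L, of i]
      by (cases i; cases "i = 1") (auto simp: esym_single)
  qed
  then show ?thesis using k by (simp add: adams_nw nw_esym)
qed

context
  fixes lam :: "nat \<Rightarrow> tr3 \<Rightarrow> tr3"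
  assumes L: "lambda_ring lam"
begin

lemma emb_lam_mul: "(\<lambda>n. emb (lam n (x * y))) = NI ivt (\<lambda>k. nw (\<lambda>i. emb (lam i x)) k * nw (\<lambda>i. emb (lam i y)) k)"
proof
  fix n show "emb (lam n (x * y)) = NI ivt (\<lambda>k. nw (\<lambda>i. emb (lam i x)) k * nw (\<lambda>i. emb (lam i y)) k) n"
  proof (cases "n = 0")
    case True then show ?thesis by (simp add: lr_lam0[OF L] rhom_1[OF rhom_emb])
  next
    case False
    then have "emb (lam n (x * y)) = mpeval (Ev n (\<lambda>i. emb (lam i x)) (\<lambda>i. emb (lam i y))) (Pmul n)"
      by (simp add: lr_mul[OF L] mpeval_hom[OF rhom_emb] Ev_hom[OF rhom_emb])
    then show ?thesis by (simp add: Imul_ct)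
  qed
qed

lemma psi_mult:
  assumes k: "k \<ge> 1"
  shows "adams lam k (x * y) = adams lam k x * adams lam k y"
proof (rule emb_inj)
  have "emb (adams lam k (x * y)) = nw (\<lambda>n. emb (lam n (x * y))) k"
    by (simp add: adams_nw nw_hom[OF rhom_emb])
  also have "\<dots> = nw (\<lambda>i. emb (lam i x)) k * nw (\<lambda>i. emb (lam i y)) k"
    unfolding emb_lam_mul by (rule nw_NI[OF ivcond_ivt k])
  also have "\<dots> = emb (adams lam k x * adams lam k y)"
    by (simp add: adams_nw nw_hom[OF rhom_emb] rhom_mult[OF rhom_emb])
  finally show "emb (adams lam k (x * y)) = emb (adams lam k x * adams lam k y)" .
qed

lemma rhom_psi: "k \<ge> 1 \<Longrightarrow> rhom (adams lam k)"
  unfolding rhom_def using psi_add[OF L] psi_mult psi_one[OF L] by auto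

lemma emb_lam_comp:
  assumes n: "n \<ge> 1"
  shows "(\<lambda>m. emb (lam m (lam n x))) = NI ivt (\<lambda>j. NI ivt (\<lambda>k. nw (\<lambda>i. emb (lam i x)) (j*k)) n)"
proof
  fix m show "emb (lam m (lam n x)) = NI ivt (\<lambda>j. NI ivt (\<lambda>k. nw (\<lambda>i. emb (lam i x)) (j*k)) n) m"
  proof (cases "m = 0")
    case True then show ?thesis by (simp add: lr_lam0[OF L] rhom_1[OF rhom_emb])
  next
    case False
    then have "emb (lam m (lam n x)) = mpeval (Cv (m*n) (\<lambda>i. emb (lam i x))) (Pcomp m n)"
      using n by (simp add: lr_comp[OF L] mpeval_hom[OF rhom_emb] Cv_hom[OF rhom_emb])
    then show ?thesis by (simp add: Icomp_ct)
  qed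
qed

lemma psi_lam:
  assumes j: "j \<ge> 1"
  shows "emb (adams lam j (lam n x)) = NI ivt (\<lambda>k. emb (adams lam (j*k) x)) n"
proof (cases "n = 0")
  case True
  then show ?thesis using psi_one[OF L j] by (simp add: lr_lam0[OF L] rhom_1[OF rhom_emb])
next
  case False
  then have n: "n \<ge> 1" by simp
  have "emb (adams lam j (lam n x)) = nw (\<lambda>m. emb (lam m (lam n x))) j"
    by (simp add: adams_nw nw_hom[OF rhom_emb])
  also have "\<dots> = NI ivt (\<lambda>k. nw (\<lambda>i. emb (lam i x)) (j*k)) n"
    unfolding emb_lam_comp[OF n] by (rule nw_NI[OF ivcond_ivt j])
  also have "\<dots> = NI ivt (\<lambda>k. emb (adams lam (j*k) x)) n"
    by (simp add: adams_nw nw_hom[OF rhom_emb])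
  finally show ?thesis .
qed

lemma psi_psi:
  assumes j: "j \<ge> 1" and k: "k \<ge> 1"
  shows "adams lam j (adams lam k x) = adams lam (j*k) x"
proof (rule emb_inj)
  have "emb (adams lam j (adams lam k x)) = emb (nw (\<lambda>i. adams lam j (lam i x)) k)"
    by (simp add: adams_nw[of lam k] nw_hom[OF rhom_psi[OF j]])
  also have "\<dots> = nw (\<lambda>i. emb (adams lam j (lam i x))) k"
    by (simp add: nw_hom[OF rhom_emb])
  also have "\<dots> = nw (NI ivt (\<lambda>k'. emb (adams lam (j*k') x))) k"
    by (simp add: psi_lam[OF j])
  also have "\<dots> = emb (adams lam (j*k) x)" by (rule nw_NI[OF ivcond_ivt k])
  finally show "emb (adams lam j (adams lam k x)) = emb (adams lam (j*k) x)" .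
qed

end


section \<open>Forward direction\<close>

lemma sum_Tr: "(\<Sum>i\<in>A. Tr (f i) (g i) (h i)) = Tr (\<Sum>i\<in>A. f i) (\<Sum>i\<in>A. g i) (\<Sum>i\<in>A. h i)"
  by (induction A rule: infinite_finite_induct) (simp_all add: zero_tr3_def)

lemma neg1_pow_tr3: "((-1)::tr3) ^ k = Tr ((-1)^k) 0 0"
proof -
  have "((-1)::tr3) ^ k = of_int ((-1)^k)" by simp
  then show ?thesis by (simp add: of_int_tr3)
qed

lemma double_sum:
  fixes f :: "nat \<Rightarrow> int"
  shows "2 * (\<Sum>i\<in>{1..<n}. int i * (f i * f (n - i))) = int n * (\<Sum>i\<in>{1..<n}. f i * f (n - i))"
proof -
  have R: "(\<Sum>i\<in>{1..<n}. int i * (f i * f (n - i))) = (\<Sum>i\<in>{1..<n}. int (n - i) * (f (n - i) * f i))"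
    by (rule sum.reindex_bij_witness[of _ "\<lambda>i. n - i" "\<lambda>i. n - i"]) auto
  have "2 * (\<Sum>i\<in>{1..<n}. int i * (f i * f (n - i))) =
        (\<Sum>i\<in>{1..<n}. int i * (f i * f (n - i))) + (\<Sum>i\<in>{1..<n}. int (n - i) * (f (n - i) * f i))"
    using R by simp
  also have "\<dots> = (\<Sum>i\<in>{1..<n}. (int i + int (n - i)) * (f i * f (n - i)))"
    by (simp add: sum.distrib[symmetric] algebra_simps)
  also have "\<dots> = (\<Sum>i\<in>{1..<n}. int n * (f i * f (n - i)))"
    by (intro sum.cong) auto
  finally show ?thesis by (simp add: sum_distrib_left)
qed

lemma X_fil: "X \<in> fil d d"
  by (auto simp: fil_def X_def)

lemma forward:
  fixes lam :: "nat \<Rightarrow> tr3 \<Rightarrow> tr3" and b c :: "nat \<Rightarrow> int"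
  assumes d: "d > 0" and F: "filtered_lambda_ring d lam"
    and A: "\<forall>p. prime p \<longrightarrow> adams lam p X = of_int (b p) * X + of_int (c p) * X^2"
  shows "(\<forall>p. prime p \<longrightarrow> int p dvd b p) \<and>
         odd (c 2) \<and> (\<forall>p. prime p \<and> p > 2 \<longrightarrow> int p dvd c p) \<and>
         (\<forall>p q. prime p \<and> prime q \<longrightarrow> (b q^2 - b q) * c p = (b p^2 - b p) * c q)"
proof -
  have L: "lambda_ring lam" using F by (simp add: filtered_lambda_ring_def)
  have AX: "adams lam p X = Tr 0 (b p) (c p)" if "prime p" for p
    using A that by (simp add: of_int_tr3 X_def power2_eq_square)
  have psiTr: "adams lam p (Tr 0 \<beta> \<gamma>) = Tr 0 (\<beta> * b p) (\<beta> * c p + \<gamma> * b p ^ 2)" if p: "prime p" for p \<beta> \<gamma>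
  proof -
    have p1: "p \<ge> 1" using p using prime_ge_1_nat by simp
    have h: "rhom (adams lam p)" by (rule rhom_psi[OF L p1])
    have "Tr 0 \<beta> \<gamma> = of_int \<beta> * X + of_int \<gamma> * X ^ 2" using Tr_decomp[of 0 \<beta> \<gamma>] by simp
    then have "adams lam p (Tr 0 \<beta> \<gamma>) = of_int \<beta> * adams lam p X + of_int \<gamma> * adams lam p X ^ 2"
      by (simp add: rhom_add[OF h] rhom_mult[OF h] rhom_of_int[OF h] rhom_power[OF h])
    then show ?thesis using AX[OF p] by (simp add: of_int_tr3 power2_eq_square)
  qed
  have C3: "(b q^2 - b q) * c p = (b p^2 - b p) * c q" if pq: "prime p" "prime q" for p q
  proof -
    have p1: "p \<ge> 1" and q1: "q \<ge> 1" using pq using prime_ge_1_nat by simp_all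
    have "adams lam p (adams lam q X) = adams lam (p * q) X" by (rule psi_psi[OF L p1 q1])
    also have "\<dots> = adams lam q (adams lam p X)" by (simp add: psi_psi[OF L q1 p1] mult.commute)
    finally have "adams lam p (adams lam q X) = adams lam q (adams lam p X)" .
    then have "b q * c p + c q * b p ^ 2 = b p * c q + c p * b q ^ 2"
      using AX[OF pq(1)] AX[OF pq(2)] psiTr[OF pq(1)] psiTr[OF pq(2)] by simp
    then show ?thesis by (simp add: algebra_simps power2_eq_square)
  qed
  define pp where "pp i = (case lam i X of Tr a b c \<Rightarrow> b)" for i
  define qq where "qq i = (case lam i X of Tr a b c \<Rightarrow> c)" for i
  have U: "lam i X = Tr 0 (pp i) (qq i)" if i: "i \<ge> 1" for i
  proof -
    have "lam i X \<in> fil d d" using F i X_fil unfolding filtered_lambda_ring_def by blast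
    then obtain a' b' c' where "lam i X = Tr a' b' c'" "a' = 0" using d by (auto simp: fil_def)
    then show ?thesis by (simp add: pp_def qq_def)
  qed
  have pp1: "pp 1 = 1" unfolding pp_def lr_lam1[OF L] X_def by simp
  have Z: "lam i X * lam j X * lam k X = 0" if "1 \<le> i" "1 \<le> j" "1 \<le> k" for i j k
    using that by (simp add: U zero_tr3_def)
  have NW: "adams lam p X = Tr 0 ((-1)^(p-1) * (int p * pp p))
      ((-1)^(p-1) * (int p * qq p - (\<Sum>i\<in>{1..<p}. int i * (pp i * pp (p - i)))))" if p: "p \<ge> 1" for p
  proof -
    have "adams lam p X = (-1)^(p - 1) * (of_nat p * lam p X - (\<Sum>i\<in>{1..<p}. of_nat i * lam i X * lam (p - i) X))"
      unfolding adams_nw by (rule nw_nil[OF Z p])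
    also have "(\<Sum>i\<in>{1..<p}. of_nat i * lam i X * lam (p - i) X) = (\<Sum>i\<in>{1..<p}. Tr 0 0 (int i * (pp i * pp (p - i))))"
      by (intro sum.cong) (auto simp: U of_nat_tr3)
    also have "\<dots> = Tr 0 0 (\<Sum>i\<in>{1..<p}. int i * (pp i * pp (p - i)))" by (simp add: sum_Tr)
    finally show ?thesis using p by (simp add: U neg1_pow_tr3 of_nat_tr3)
  qed
  have C1: "int p dvd b p" if p: "prime p" for p
  proof -
    have p1: "p \<ge> 1" using p using prime_ge_1_nat by simp
    have "b p = (-1)^(p-1) * (int p * pp p)" using AX[OF p] NW[OF p1] by simp
    then show ?thesis by simp
  qed
  have C2: "odd (c 2)"
  proof -
    have "c 2 = (-1)^(2-1) * (int 2 * qq 2 - (\<Sum>i\<in>{1..<2}. int i * (pp i * pp (2 - i))))"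
      using AX[of 2] NW[of 2] by simp
    also have "\<dots> = 1 - 2 * qq 2"
    proof -
      have "{1..<2::nat} = {1}" by auto
      then show ?thesis using pp1 by simp
    qed
    finally show ?thesis by simp
  qed
  have Cp: "int p dvd c p" if p: "prime p" "p > 2" for p
  proof -
    have p1: "p \<ge> 1" using p using prime_ge_1_nat by simp
    let ?S = "\<Sum>i\<in>{1..<p}. int i * (pp i * pp (p - i))"
    have cp: "c p = (-1)^(p-1) * (int p * qq p - ?S)" using AX[OF p(1)] NW[OF p1] by simp
    have "2 * ?S = int p * (\<Sum>i\<in>{1..<p}. pp i * pp (p - i))" by (rule double_sum)
    then have "int p dvd 2 * ?S" by (metis dvd_triv_left)
    moreover have "prime (int p)" using p by simp
    moreover have "\<not> int p dvd 2"
    proof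
      assume "int p dvd 2"
      then have "int p \<le> 2" by (rule zdvd_imp_le) simp
      then show False using p by simp
    qed
    ultimately have "int p dvd ?S" using prime_dvd_mult_iff by blast
    then show ?thesis unfolding cp by simp
  qed
  show ?thesis using C1 C2 Cp C3 by blast
qed


definition CONDS :: "(nat \<Rightarrow> int) \<Rightarrow> (nat \<Rightarrow> int) \<Rightarrow> bool" where
  "CONDS b c \<longleftrightarrow> (\<forall>p. prime p \<longrightarrow> int p dvd b p) \<and>
           odd (c 2) \<and> (\<forall>p. prime p \<and> p > 2 \<longrightarrow> int p dvd c p) \<and>
           (\<forall>p q. prime p \<and> prime q \<longrightarrow> (b q^2 - b q) * c p = (b p^2 - b p) * c q)"

lemma moreover_part:
  assumes "CONDS b c"
  shows "(b 2 \<noteq> 0 \<longrightarrow> (\<forall>p. prime p \<and> p > 2 \<longrightarrow> 2 ^ multiplicity 2 (b 2) dvd b p^2 - b p))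
          \<and> (b 2 = 0 \<longrightarrow> (\<forall>p. prime p \<and> p > 2 \<longrightarrow> b p = 0))"
proof (intro conjI impI allI)
  fix p :: nat assume b2: "b 2 \<noteq> 0" and p: "prime p \<and> p > 2"
  have E: "(b 2^2 - b 2) * c p = (b p^2 - b p) * c 2"
    using assms p unfolding CONDS_def by (metis two_is_prime_nat)
  have "2 ^ multiplicity 2 (b 2) dvd b 2" by (rule multiplicity_dvd)
  then have "2 ^ multiplicity 2 (b 2) dvd (b 2^2 - b 2) * c p"
    by (simp add: power2_eq_square right_diff_distrib)
  then have "2 ^ multiplicity 2 (b 2) dvd (b p^2 - b p) * c 2" using E by simp
  moreover have "coprime ((2::int) ^ multiplicity 2 (b 2)) (c 2)"
    using assms unfolding CONDS_def by simp
  ultimately show "2 ^ multiplicity 2 (b 2) dvd b p^2 - b p"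
    using coprime_dvd_mult_left_iff by blast
next
  fix p :: nat assume b2: "b 2 = 0" and p: "prime p \<and> p > 2"
  have E: "(b 2^2 - b 2) * c p = (b p^2 - b p) * c 2"
    using assms p unfolding CONDS_def by (metis two_is_prime_nat)
  have "c 2 \<noteq> 0" using assms unfolding CONDS_def by auto
  then have "b p^2 - b p = 0" using E b2 by simp
  then have "b p * (b p - 1) = 0" by (simp add: power2_eq_square algebra_simps)
  then have "b p = 0 \<or> b p = 1" by auto
  moreover have "b p \<noteq> 1"
  proof
    assume "b p = 1"
    moreover have "int p dvd b p" using assms p unfolding CONDS_def by auto
    ultimately have "int p dvd 1" by simp
    then show False using p by simp
  qed
  ultimately show "b p = 0" by simp
qed

section \<open>Multiplicative extension of the coefficients\<close>

definition Bf :: "(nat \<Rightarrow> int) \<Rightarrow> nat \<Rightarrow> int" where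
  "Bf b n = (\<Prod>p\<in>#prime_factorization n. b p)"

definition Cf :: "(nat \<Rightarrow> int) \<Rightarrow> (nat \<Rightarrow> int) \<Rightarrow> nat \<Rightarrow> int" where
  "Cf b c n = (if b 2 = 0 then (if prime n then c n else 0)
               else c 2 * (Bf b n ^ 2 - Bf b n) div (b 2 ^ 2 - b 2))"

lemma Bf_1 [simp]: "Bf b 1 = 1" by (simp add: Bf_def)
lemma Bf_Suc0 [simp]: "Bf b (Suc 0) = 1" by (simp add: Bf_def)
lemma Bf_prime: "prime p \<Longrightarrow> Bf b p = b p" by (simp add: Bf_def prime_factorization_prime)
lemma Bf_mult: "m \<noteq> 0 \<Longrightarrow> n \<noteq> 0 \<Longrightarrow> Bf b (m * n) = Bf b m * Bf b n"
  by (simp add: Bf_def prime_factorization_mult)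

lemma factor_step:
  assumes "n > (1::nat)"
  shows "\<exists>p m. prime p \<and> n = p * m \<and> 1 \<le> m \<and> m < n"
proof -
  obtain p where p: "prime p" "p dvd n" using prime_factor_nat[of n] assms by auto
  then obtain m where m: "n = p * m" by (auto elim: dvdE)
  have "m \<ge> 1" using m assms by (cases m) auto
  moreover have "p \<ge> 2" using p by (simp add: prime_ge_2_nat)
  then have "m < n" using m \<open>m \<ge> 1\<close> by simp
  ultimately show ?thesis using p m by blast
qed

context
  fixes b c :: "nat \<Rightarrow> int"
  assumes CD: "CONDS b c"
begin

lemma bp_dvd: "prime p \<Longrightarrow> int p dvd b p" using CD by (simp add: CONDS_def)
lemma c2_odd: "odd (c 2)" using CD by (simp add: CONDS_def)
lemma cp_dvd: "prime p \<Longrightarrow> p > 2 \<Longrightarrow> int p dvd c p" using CD by (simp add: CONDS_def)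
lemma comm: "prime p \<Longrightarrow> prime q \<Longrightarrow> (b q^2 - b q) * c p = (b p^2 - b p) * c q"
  using CD by (simp add: CONDS_def)
lemma b2_even: "even (b 2)" using bp_dvd[of 2] by simp

lemma Bf_dvd: "n \<ge> 1 \<Longrightarrow> int n dvd Bf b n"
proof (induction n rule: less_induct)
  case (less n)
  show ?case
  proof (cases "n = 1")
    case False
    then obtain p m where pm: "prime p" "n = p * m" "1 \<le> m" "m < n"
      using factor_step[of n] less.prems by auto
    have "Bf b n = b p * Bf b m" using pm by (simp add: Bf_mult Bf_prime prime_gt_0_nat)
    moreover have "int p dvd b p" by (rule bp_dvd[OF pm(1)])
    moreover have "int m dvd Bf b m" using less pm by simp
    ultimately show ?thesis using pm by (simp add: mult_dvd_mono)
  qed simp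
qed

lemma Bf_zero: "b 2 = 0 \<Longrightarrow> n > 1 \<Longrightarrow> Bf b n = 0"
proof -
  assume b2: "b 2 = 0" and n: "n > 1"
  obtain p m where pm: "prime p" "n = p * m" "1 \<le> m" "m < n"
    using factor_step[OF n] by auto
  have "b p = 0"
  proof (cases "p = 2")
    case True then show ?thesis using b2 by simp
  next
    case False
    then have "p > 2" using pm prime_ge_2_nat[of p] by simp
    then show ?thesis using moreover_part[OF CD] b2 pm by blast
  qed
  then show ?thesis using pm by (simp add: Bf_mult Bf_prime prime_gt_0_nat)
qed

lemma D_dvd:
  assumes "n \<ge> 1"
  shows "(b 2 ^ 2 - b 2) dvd c 2 * (Bf b n ^ 2 - Bf b n)"
  using assms
proof (induction n rule: less_induct)
  case (less n)
  show ?case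
  proof (cases "n = 1")
    case False
    then obtain p m where pm: "prime p" "n = p * m" "1 \<le> m" "m < n"
      using factor_step[of n] less.prems by auto
    have B: "Bf b n = b p * Bf b m" using pm by (simp add: Bf_mult Bf_prime prime_gt_0_nat)
    have "c 2 * (Bf b n ^ 2 - Bf b n) = Bf b m * (c 2 * (b p ^ 2 - b p)) + b p ^ 2 * (c 2 * (Bf b m ^ 2 - Bf b m))"
      unfolding B by (simp add: algebra_simps power2_eq_square)
    also have "c 2 * (b p ^ 2 - b p) = (b 2 ^ 2 - b 2) * c p"
      using comm[OF pm(1) two_is_prime_nat] by (simp add: mult.commute)
    finally show ?thesis using less pm by simp
  qed simp
qed

lemma D_nz: "b 2 \<noteq> 0 \<Longrightarrow> b 2 ^ 2 - b 2 \<noteq> 0"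
proof
  assume "b 2 \<noteq> 0" "b 2 ^ 2 - b 2 = 0"
  then have "b 2 * (b 2 - 1) = 0" by (simp add: power2_eq_square algebra_simps)
  then have "b 2 = 1" using \<open>b 2 \<noteq> 0\<close> by simp
  then show False using b2_even by simp
qed

lemma D_Cf: "b 2 \<noteq> 0 \<Longrightarrow> n \<ge> 1 \<Longrightarrow> (b 2 ^ 2 - b 2) * Cf b c n = c 2 * (Bf b n ^ 2 - Bf b n)"
  by (simp add: Cf_def D_dvd)

lemma Cf_1 [simp]: "Cf b c 1 = 0"
  by (simp add: Cf_def)

lemma Cf_Suc0 [simp]: "Cf b c (Suc 0) = 0"
  by (simp add: Cf_def)

lemma Cf_prime: "prime p \<Longrightarrow> Cf b c p = c p"
proof (cases "b 2 = 0")
  case False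
  assume p: "prime p"
  have "c 2 * (b p ^ 2 - b p) = (b 2 ^ 2 - b 2) * c p"
    using comm[OF p two_is_prime_nat] by (simp add: mult.commute)
  then show ?thesis using False D_nz[OF False] p by (simp add: Cf_def Bf_prime)
qed (simp add: Cf_def)

lemma Cf_mult:
  assumes m: "m \<ge> 1" and n: "n \<ge> 1"
  shows "Cf b c (m * n) = Bf b n * Cf b c m + Bf b m ^ 2 * Cf b c n"
proof (cases "b 2 = 0")
  case True
  show ?thesis
  proof (cases "m = 1 \<or> n = 1")
    case True then show ?thesis by auto
  next
    case False
    then have "m > 1" "n > 1" using m n by auto
    moreover have "\<not> prime (m * n)" using \<open>m > 1\<close> \<open>n > 1\<close> prime_product[of m n] by auto
    ultimately show ?thesis using True by (simp add: Cf_def Bf_zero)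
  qed
next
  case False
  have mn: "m * n \<ge> 1" using m n by simp
  let ?D = "b 2 ^ 2 - b 2"
  have m0: "m \<noteq> 0" and n0: "n \<noteq> 0" using m n by auto
  have 1: "?D * Cf b c (m * n) = c 2 * ((Bf b m * Bf b n) ^ 2 - Bf b m * Bf b n)"
    using D_Cf[OF False mn] Bf_mult[OF m0 n0] by simp
  have "?D * (Bf b n * Cf b c m + Bf b m ^ 2 * Cf b c n) = Bf b n * (?D * Cf b c m) + Bf b m ^ 2 * (?D * Cf b c n)"
    by (simp add: algebra_simps)
  also have "\<dots> = Bf b n * (c 2 * (Bf b m ^ 2 - Bf b m)) + Bf b m ^ 2 * (c 2 * (Bf b n ^ 2 - Bf b n))"
    using D_Cf[OF False m] D_Cf[OF False n] by simp
  also have "\<dots> = c 2 * ((Bf b m * Bf b n) ^ 2 - Bf b m * Bf b n)"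
    by (simp add: algebra_simps power2_eq_square)
  finally have "?D * Cf b c (m * n) = ?D * (Bf b n * Cf b c m + Bf b m ^ 2 * Cf b c n)" using 1 by simp
  then show ?thesis using D_nz[OF False] by simp
qed

lemma Cf_odd: "odd n \<Longrightarrow> int n dvd Cf b c n"
proof (induction n rule: less_induct)
  case (less n)
  show ?case
  proof (cases "n = 1")
    case False
    then have "n > 1" using less.prems by (cases n) auto
    then obtain p m where pm: "prime p" "n = p * m" "1 \<le> m" "m < n"
      using factor_step[of n] by auto
    have op: "odd p" and om: "odd m" using less.prems pm by auto
    have p2: "p > 2" using op pm prime_ge_2_nat[of p] by (cases "p = 2") auto
    have C: "Cf b c n = Bf b m * c p + b p ^ 2 * Cf b c m"
      using pm Cf_mult[of p m] prime_ge_1_nat[of p] by (simp add: Cf_prime Bf_prime)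
    have "int p * int m dvd c p * Bf b m"
      by (rule mult_dvd_mono[OF cp_dvd[OF pm(1) p2] Bf_dvd[OF pm(3)]])
    then have "int p * int m dvd Bf b m * c p" by (simp add: mult.commute)
    moreover have "int p * int m dvd b p ^ 2 * Cf b c m"
    proof -
      have "int p dvd b p ^ 2" using bp_dvd[OF pm(1)] by (simp add: power2_eq_square)
      moreover have "int m dvd Cf b c m" using less om pm by simp
      ultimately show ?thesis by (rule mult_dvd_mono)
    qed
    ultimately show ?thesis using C pm by simp
  qed simp
qed

lemma Cf_even: "k \<ge> 1 \<Longrightarrow> \<exists>g. Cf b c (2 * k) = int k * g \<and> (odd g \<longleftrightarrow> odd (Bf b k div int k))"
proof (induction k rule: less_induct)
  case (less k)
  obtain \<beta> where \<beta>: "Bf b k = int k * \<beta>" using Bf_dvd[OF less.prems] by (auto elim: dvdE)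
  have kk: "Bf b k div int k = \<beta>" using \<beta> less.prems by simp
  obtain h where h: "b 2 = 2 * h" using b2_even by (auto elim: evenE)
  have C: "Cf b c (2 * k) = Bf b k * c 2 + b 2 ^ 2 * Cf b c k"
    using Cf_mult[of 2 k] less.prems by (simp add: Cf_prime Bf_prime)
  show ?case
  proof (cases "odd k")
    case True
    obtain \<gamma> where \<gamma>: "Cf b c k = int k * \<gamma>" using Cf_odd[OF True] by (auto elim: dvdE)
    let ?g = "\<beta> * c 2 + b 2 ^ 2 * \<gamma>"
    have "Cf b c (2 * k) = int k * ?g" unfolding C \<beta> \<gamma> by (simp add: algebra_simps)
    moreover have "odd ?g \<longleftrightarrow> odd \<beta>" using c2_odd h by (simp add: power2_eq_square)
    ultimately show ?thesis using kk by blast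
  next
    case False
    then obtain k' where k': "k = 2 * k'" by (auto elim: evenE)
    then have k'1: "k' \<ge> 1" "k' < k" using less.prems by auto
    obtain g' where g': "Cf b c (2 * k') = int k' * g'" using less.IH[OF k'1(2) k'1(1)] by blast
    let ?g = "\<beta> * c 2 + 2 * h ^ 2 * g'"
    have "Cf b c (2 * k) = int k * ?g" unfolding C \<beta> using g' k' h by (simp add: algebra_simps power2_eq_square)
    moreover have "odd ?g \<longleftrightarrow> odd \<beta>" using c2_odd by simp
    ultimately show ?thesis using kk by blast
  qed
qed

end


lemma sym_sum_parity:
  fixes f :: "nat \<Rightarrow> int"
  assumes k: "k \<ge> 1"
  shows "odd (\<Sum>i\<in>{1..<2*k}. f i * f (2*k - i)) \<longleftrightarrow> odd (f k)"
proof -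
  let ?g = "\<lambda>i. f i * f (2*k - i)"
  have "(\<Sum>i\<in>{1..<2*k}. ?g i) = (\<Sum>i\<in>{1..<k}. ?g i) + (\<Sum>i\<in>{k..<2*k}. ?g i)"
    using k by (simp add: sum.atLeastLessThan_concat)
  also have "(\<Sum>i\<in>{k..<2*k}. ?g i) = ?g k + (\<Sum>i\<in>{Suc k..<2*k}. ?g i)"
    using k by (simp add: sum.atLeast_Suc_lessThan)
  also have "(\<Sum>i\<in>{Suc k..<2*k}. ?g i) = (\<Sum>i\<in>{1..<k}. ?g i)"
    by (rule sum.reindex_bij_witness[of _ "\<lambda>i. 2*k - i" "\<lambda>i. 2*k - i"]) (auto simp: mult.commute)
  finally have "(\<Sum>i\<in>{1..<2*k}. ?g i) = 2 * (\<Sum>i\<in>{1..<k}. ?g i) + f k * f k" by simp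
  then show ?thesis by simp
qed

context
  fixes b c :: "nat \<Rightarrow> int"
  assumes CD: "CONDS b c"
begin

definition \<beta>s :: "nat \<Rightarrow> int" where "\<beta>s n = Bf b n div int n"
definition Tf :: "nat \<Rightarrow> int" where "Tf n = (\<Sum>i\<in>{1..<n}. int i * (\<beta>s i * \<beta>s (n - i)))"

lemma Bf_eq: "n \<ge> 1 \<Longrightarrow> Bf b n = int n * \<beta>s n"
  using Bf_dvd[OF CD] by (simp add: \<beta>s_def)

lemma integrality:
  assumes n: "n \<ge> 1"
  shows "int n dvd Cf b c n * \<beta> - \<beta>^2 * Tf n"
proof -
  let ?S = "\<Sum>i\<in>{1..<n}. \<beta>s i * \<beta>s (n - i)"
  have TS: "2 * Tf n = int n * ?S" unfolding Tf_def by (rule double_sum)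
  show ?thesis
  proof (cases "odd n")
    case True
    have "int n dvd Cf b c n" by (rule Cf_odd[OF CD True])
    moreover have "int n dvd Tf n"
    proof -
      have "int n dvd 2 * Tf n" using TS by simp
      moreover have "coprime (int n) 2" using True by simp
      ultimately show ?thesis using coprime_dvd_mult_right_iff by blast
    qed
    ultimately show ?thesis by simp
  next
    case False
    then obtain k where k: "n = 2 * k" by (auto elim: evenE)
    then have k1: "k \<ge> 1" using n by simp
    obtain g where g: "Cf b c (2 * k) = int k * g" "odd g \<longleftrightarrow> odd (Bf b k div int k)"
      using Cf_even[OF CD k1] by blast
    have T: "Tf n = int k * ?S" using TS k by simp
    have par: "odd ?S \<longleftrightarrow> odd (\<beta>s k)" unfolding k by (rule sym_sum_parity[OF k1])
    have "even (g * \<beta> - \<beta>^2 * ?S)"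
    proof (cases "odd (\<beta>s k)")
      case True
      then have "odd g" "odd ?S" using g(2) par by (simp_all add: \<beta>s_def)
      then show ?thesis by (simp add: power2_eq_square)
    next
      case False
      then have "even g" "even ?S" using g(2) par by (simp_all add: \<beta>s_def)
      then show ?thesis by simp
    qed
    then obtain r where r: "g * \<beta> - \<beta>^2 * ?S = 2 * r" by (rule evenE)
    have "Cf b c n * \<beta> - \<beta>^2 * Tf n = int k * (g * \<beta> - \<beta>^2 * ?S)"
      unfolding T using g(1) k by (simp add: algebra_simps)
    also have "\<dots> = int n * r" using r k by simp
    finally show ?thesis by simp
  qed
qed

definition p\<mu> :: "int \<Rightarrow> nat \<Rightarrow> int" where
  "p\<mu> \<beta> k = (-1)^(k - 1) * \<beta> * \<beta>s k"
definition q\<mu> :: "int \<Rightarrow> int \<Rightarrow> nat \<Rightarrow> int" where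
  "q\<mu> \<beta> \<gamma> k = ((-1)^(k - 1) * (Cf b c k * \<beta> + Bf b k ^ 2 * \<gamma> - \<beta>^2 * Tf k)) div int k"

lemma p\<mu>_eq: "n \<ge> 1 \<Longrightarrow> (-1)^(n - 1) * (int n * p\<mu> \<beta> n) = \<beta> * Bf b n"
proof -
  assume n: "n \<ge> 1"
  have "((-1::int)^(n - 1)) * (-1)^(n - 1) = 1" by (simp flip: power_add)
  then have "(-1)^(n - 1) * (int n * p\<mu> \<beta> n) = \<beta> * (int n * \<beta>s n)"
    by (simp add: p\<mu>_def algebra_simps)
  then show ?thesis using Bf_eq[OF n] by simp
qed

lemma q\<mu>_eq:
  assumes n: "n \<ge> 1"
  shows "(-1)^(n - 1) * (int n * q\<mu> \<beta> \<gamma> n - (\<Sum>i\<in>{1..<n}. int i * (p\<mu> \<beta> i * p\<mu> \<beta> (n - i)))) = Cf b c n * \<beta> + Bf b n ^ 2 * \<gamma>"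
proof -
  let ?R = "Cf b c n * \<beta> + Bf b n ^ 2 * \<gamma> - \<beta>^2 * Tf n"
  have sq: "((-1::int)^(n - 1)) * (-1)^(n - 1) = 1" by (simp flip: power_add)
  have dR: "int n dvd ?R"
  proof -
    have "int n dvd Bf b n ^ 2 * \<gamma>" using Bf_dvd[OF CD n] by (simp add: power2_eq_square)
    moreover have "?R = (Cf b c n * \<beta> - \<beta>^2 * Tf n) + Bf b n ^ 2 * \<gamma>" by simp
    ultimately show ?thesis using integrality[OF n, of \<beta>] by (metis dvd_add)
  qed
  have Q: "int n * q\<mu> \<beta> \<gamma> n = (-1)^(n - 1) * ?R"
    using dR unfolding q\<mu>_def by simp
  have P: "(\<Sum>i\<in>{1..<n}. int i * (p\<mu> \<beta> i * p\<mu> \<beta> (n - i))) = - ((-1)^(n - 1) * \<beta>^2 * Tf n)"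
  proof -
    have "(\<Sum>i\<in>{1..<n}. int i * (p\<mu> \<beta> i * p\<mu> \<beta> (n - i))) = (\<Sum>i\<in>{1..<n}. - ((-1)^(n - 1) * \<beta>^2 * (int i * (\<beta>s i * \<beta>s (n - i)))))"
    proof (rule sum.cong)
      fix i assume "i \<in> {1..<n}"
      then have i: "1 \<le> i" "i < n" by auto
      have "(-1::int)^(i - 1) * (-1)^(n - i - 1) = (-1)^(n - 2)" using i by (simp flip: power_add)
      also have "(-1::int)^(n - 2) = - ((-1)^(n - 1))"
      proof -
        have "n - 1 = Suc (n - 2)" using i by simp
        then show ?thesis by simp
      qed
      finally have s: "(-1::int)^(i - 1) * (-1)^(n - i - 1) = - ((-1)^(n - 1))" .
      have "int i * (p\<mu> \<beta> i * p\<mu> \<beta> (n - i)) = ((-1::int)^(i - 1) * (-1)^(n - i - 1)) * \<beta>^2 * (int i * (\<beta>s i * \<beta>s (n - i)))"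
        by (simp add: p\<mu>_def power2_eq_square algebra_simps)
      then show "int i * (p\<mu> \<beta> i * p\<mu> \<beta> (n - i)) = - ((-1)^(n - 1) * \<beta>^2 * (int i * (\<beta>s i * \<beta>s (n - i))))"
        unfolding s by simp
    qed simp
    also have "\<dots> = - ((-1)^(n - 1) * \<beta>^2 * Tf n)"
      by (simp add: Tf_def sum_negf sum_distrib_left)
    finally show ?thesis .
  qed
  have "(-1)^(n - 1) * (int n * q\<mu> \<beta> \<gamma> n - (\<Sum>i\<in>{1..<n}. int i * (p\<mu> \<beta> i * p\<mu> \<beta> (n - i))))
      = ((-1)^(n - 1) * (-1)^(n - 1)) * (?R + \<beta>^2 * Tf n)"
    unfolding Q P by (simp add: algebra_simps)
  also have "\<dots> = Cf b c n * \<beta> + Bf b n ^ 2 * \<gamma>" unfolding sq by simp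
  finally show ?thesis .
qed

end


lemma Newt_hom:
  assumes h: "rhom h" and N: "Newt u s"
  shows "Newt (\<lambda>k. h (u k)) (\<lambda>k. h (s k))"
  unfolding Newt_def
proof (intro allI impI)
  fix k :: nat assume k: "k \<ge> 1"
  have "(\<Sum>i<k. (-1)^i * u i * s (k - i)) = (-1)^(k - 1) * of_nat k * u k" using N k unfolding Newt_def by blast
  then have "h (\<Sum>i<k. (-1)^i * u i * s (k - i)) = h ((-1)^(k - 1) * of_nat k * u k)" by simp
  then show "(\<Sum>i<k. (-1)^i * h (u i) * h (s (k - i))) = (-1)^(k - 1) * of_nat k * h (u k)"
    by (simp add: rhom_sum[OF h] rhom_mult[OF h] rhom_power[OF h] rhom_uminus[OF h] rhom_1[OF h] rhom_of_nat[OF h])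
qed

lemma conv_hom: "rhom h \<Longrightarrow> h (conv u v n) = conv (\<lambda>i. h (u i)) (\<lambda>i. h (v i)) n"
  by (simp add: conv_def rhom_sum rhom_mult)

definition dl :: "nat \<Rightarrow> int" where "dl k = (if k = 0 then 1 else 0)"
definition e1 :: "nat \<Rightarrow> int" where "e1 k = (if k \<le> 1 then 1 else 0)"
definition alt :: "nat \<Rightarrow> int" where "alt k = (-1)^k"

fun bsn :: "nat \<Rightarrow> nat \<Rightarrow> int" where
  "bsn 0 = dl" | "bsn (Suc m) = conv (bsn m) e1"
fun bsg :: "nat \<Rightarrow> nat \<Rightarrow> int" where
  "bsg 0 = dl" | "bsg (Suc m) = conv (bsg m) alt"

definition bs :: "int \<Rightarrow> nat \<Rightarrow> int" where
  "bs a = (if a \<ge> 0 then bsn (nat a) else bsg (nat (- a)))"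

lemma Newt_dl: "Newt dl (\<lambda>_. 0)"
  unfolding Newt_def dl_def by simp

lemma Newt_e1: "Newt e1 (\<lambda>_. 1)"
proof -
  have "e1 = (\<lambda>k. esym k {0::nat} (\<lambda>_. 1))" by (rule ext) (simp add: e1_def esym_single)
  then show ?thesis using Newt_esym[of "{0::nat}" "\<lambda>_. (1::int)"] by simp
qed

lemma Newt_alt: "Newt alt (\<lambda>_. -1)"
  unfolding Newt_def alt_def
proof (intro allI impI)
  fix k :: nat assume k: "k \<ge> 1"
  have "(\<Sum>i<k. (-1::int)^i * (-1)^i * (-1)) = (\<Sum>i<k. -1)"
    by (intro sum.cong) (simp_all flip: power_add)
  also have "\<dots> = - int k" by simp
  also have "\<dots> = (-1)^(k - 1) * int k * (-1)^k"
  proof -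
    have "(-1::int)^(k - 1) * (-1)^k = (-1)^(k - 1 + k)" by (simp add: power_add)
    also have "k - 1 + k = Suc (2 * (k - 1))" using k by simp
    finally have "(-1::int)^(k - 1) * (-1)^k = -1" by simp
    then show ?thesis by (simp add: algebra_simps)
  qed
  finally show "(\<Sum>i<k. (-1::int)^i * (-1)^i * (-1)) = (-1)^(k - 1) * of_nat k * (-1)^k" by simp
qed

lemma conv_0: "conv u v 0 = u 0 * v 0" by (simp add: conv_def)

lemma bsn_0: "bsn m 0 = 1" by (induction m) (simp_all add: dl_def e1_def conv_0)
lemma bsg_0: "bsg m 0 = 1" by (induction m) (simp_all add: dl_def alt_def conv_0)
lemma bs_0: "bs a 0 = 1" by (simp add: bs_def bsn_0 bsg_0)

lemma Newt_bsn: "Newt (bsn m) (\<lambda>_. int m)"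
proof (induction m)
  case 0 then show ?case using Newt_dl by simp
next
  case (Suc m)
  have "Newt (conv (bsn m) e1) (\<lambda>k. int m + 1)" using Newt_conv[OF Suc.IH Newt_e1] by simp
  moreover have "(\<lambda>k::nat. int m + 1) = (\<lambda>_. int (Suc m))" by auto
  ultimately show ?case by simp
qed

lemma Newt_bsg: "Newt (bsg m) (\<lambda>_. - int m)"
proof (induction m)
  case 0 then show ?case using Newt_dl by simp
next
  case (Suc m)
  have "Newt (conv (bsg m) alt) (\<lambda>k. - int m + - 1)" using Newt_conv[OF Suc.IH Newt_alt] by simp
  moreover have "(\<lambda>k::nat. - int m + - 1) = (\<lambda>_. - int (Suc m))" by auto
  ultimately show ?case by simp
qed

lemma Newt_bs: "Newt (bs a) (\<lambda>_. a)"
proof (cases "a \<ge> 0")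
  case True
  have "(\<lambda>_::nat. int (nat a)) = (\<lambda>_. a)" using True by auto
  then show ?thesis using True Newt_bsn[of "nat a"] by (simp add: bs_def)
next
  case False
  have "(\<lambda>_::nat. - int (nat (- a))) = (\<lambda>_. a)" using False by auto
  then show ?thesis using False Newt_bsg[of "nat (- a)"] by (simp add: bs_def)
qed

lemma bs_zero: "bs 0 = dl" by (simp add: bs_def)

lemma conv_dl: "conv (\<lambda>i. of_int (dl i)) v n = v n"
proof -
  have "conv (\<lambda>i. of_int (dl i)) v n = (\<Sum>i\<le>n. (if i = 0 then v (n - i) else 0))"
    unfolding conv_def by (intro sum.cong) (simp_all add: dl_def)
  also have "\<dots> = v n" by (simp add: sum.delta)
  finally show ?thesis .
qed

section \<open>The lambda-ring structure\<close>

context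
  fixes b c :: "nat \<Rightarrow> int"
  assumes CD: "CONDS b c"
begin

definition \<mu> :: "int \<Rightarrow> int \<Rightarrow> nat \<Rightarrow> tr3" where
  "\<mu> \<beta> \<gamma> k = (if k = 0 then 1 else Tr 0 (p\<mu> b \<beta> k) (q\<mu> b c \<beta> \<gamma> k))"

definition psif :: "nat \<Rightarrow> tr3 \<Rightarrow> tr3" where
  "psif k x = (case x of Tr a \<beta> \<gamma> \<Rightarrow> Tr a (\<beta> * Bf b k) (Cf b c k * \<beta> + Bf b k ^ 2 * \<gamma>))"

definition lamf :: "nat \<Rightarrow> tr3 \<Rightarrow> tr3" where
  "lamf k x = (case x of Tr a \<beta> \<gamma> \<Rightarrow> conv (\<lambda>i. of_int (bs a i)) (\<mu> \<beta> \<gamma>) k)"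

definition Psi :: "nat \<Rightarrow> ct \<Rightarrow> ct" where
  "Psi k y = (case y of CT a \<beta> \<gamma> \<Rightarrow> CT a (\<beta> * of_int (Bf b k)) (of_int (Cf b c k) * \<beta> + of_int (Bf b k) ^ 2 * \<gamma>))"

lemma nw_mu:
  assumes n: "n \<ge> 1"
  shows "nw (\<mu> \<beta> \<gamma>) n = Tr 0 (\<beta> * Bf b n) (Cf b c n * \<beta> + Bf b n ^ 2 * \<gamma>)"
proof -
  have Z: "\<mu> \<beta> \<gamma> i * \<mu> \<beta> \<gamma> j * \<mu> \<beta> \<gamma> k = 0" if "1 \<le> i" "1 \<le> j" "1 \<le> k" for i j k
    using that by (simp add: \<mu>_def zero_tr3_def)
  have "nw (\<mu> \<beta> \<gamma>) n = (-1)^(n - 1) * (of_nat n * \<mu> \<beta> \<gamma> n - (\<Sum>i\<in>{1..<n}. of_nat i * \<mu> \<beta> \<gamma> i * \<mu> \<beta> \<gamma> (n - i)))"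
    by (rule nw_nil[OF Z n])
  also have "(\<Sum>i\<in>{1..<n}. of_nat i * \<mu> \<beta> \<gamma> i * \<mu> \<beta> \<gamma> (n - i)) = (\<Sum>i\<in>{1..<n}. Tr 0 0 (int i * (p\<mu> b \<beta> i * p\<mu> b \<beta> (n - i))))"
    by (intro sum.cong) (auto simp: \<mu>_def of_nat_tr3)
  also have "\<dots> = Tr 0 0 (\<Sum>i\<in>{1..<n}. int i * (p\<mu> b \<beta> i * p\<mu> b \<beta> (n - i)))" by (simp add: sum_Tr)
  also have "\<mu> \<beta> \<gamma> n = Tr 0 (p\<mu> b \<beta> n) (q\<mu> b c \<beta> \<gamma> n)" using n by (simp add: \<mu>_def)
  finally have "nw (\<mu> \<beta> \<gamma>) n = Tr 0 ((-1)^(n - 1) * (int n * p\<mu> b \<beta> n))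
      ((-1)^(n - 1) * (int n * q\<mu> b c \<beta> \<gamma> n - (\<Sum>i\<in>{1..<n}. int i * (p\<mu> b \<beta> i * p\<mu> b \<beta> (n - i)))))"
    by (simp add: neg1_pow_tr3 of_nat_tr3)
  then show ?thesis using p\<mu>_eq[OF CD n] q\<mu>_eq[OF CD n] by simp
qed

lemma Newt_mu: "Newt (\<mu> \<beta> \<gamma>) (\<lambda>k. Tr 0 (\<beta> * Bf b k) (Cf b c k * \<beta> + Bf b k ^ 2 * \<gamma>))"
proof (rule Newt_cong)
  show "Newt (\<mu> \<beta> \<gamma>) (nw (\<mu> \<beta> \<gamma>))" by (rule Newt_nw) (simp add: \<mu>_def)
  fix k :: nat assume "k \<ge> 1"
  then show "nw (\<mu> \<beta> \<gamma>) k = Tr 0 (\<beta> * Bf b k) (Cf b c k * \<beta> + Bf b k ^ 2 * \<gamma>)" by (rule nw_mu)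
qed

lemma Newt_lamf: "Newt (\<lambda>k. lamf k x) (\<lambda>k. psif k x)"
proof (cases x)
  case (Tr a \<beta> \<gamma>)
  have N1: "Newt (\<lambda>i. of_int (bs a i) :: tr3) (\<lambda>i. of_int a)"
    using Newt_hom[OF rhom_of_int_fun Newt_bs[of a]] by simp
  have "Newt (conv (\<lambda>i. of_int (bs a i)) (\<mu> \<beta> \<gamma>)) (\<lambda>k. of_int a + Tr 0 (\<beta> * Bf b k) (Cf b c k * \<beta> + Bf b k ^ 2 * \<gamma>))"
    by (rule Newt_conv[OF N1 Newt_mu])
  then show ?thesis using Tr by (simp add: lamf_def psif_def of_int_tr3)
qed

lemma lamf_0: "lamf 0 x = 1"
  by (cases x) (simp add: lamf_def conv_0 bs_0 \<mu>_def)

lemma emb_psif: "emb (psif k x) = Psi k (emb x)"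
  by (cases x) (simp add: psif_def Psi_def algebra_simps)

lemma rhom_Psi: "rhom (Psi k)"
  unfolding rhom_def
proof (intro conjI allI)
  fix x y :: ct
  show "Psi k (x + y) = Psi k x + Psi k y" by (cases x; cases y) (simp add: Psi_def algebra_simps)
  show "Psi k (x * y) = Psi k x * Psi k y" by (cases x; cases y) (simp add: Psi_def algebra_simps power2_eq_square)
  show "Psi k 1 = 1" by (simp add: Psi_def one_ct_def)
qed

lemma Psi_ivt: "Psi k (ivt i) = ivt i"
  by (simp add: Psi_def ivt_def)

lemma Psi_Psi:
  assumes j: "j \<ge> 1" and k: "k \<ge> 1"
  shows "Psi j (Psi k y) = Psi (j * k) y"
proof (cases y)
  case (CT a \<beta> \<gamma>)
  have B: "Bf b (j * k) = Bf b j * Bf b k" using j k by (simp add: Bf_mult)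
  have C: "Cf b c (j * k) = Bf b k * Cf b c j + Bf b j ^ 2 * Cf b c k" by (rule Cf_mult[OF CD j k])
  show ?thesis using CT unfolding Psi_def B C by (simp add: algebra_simps power2_eq_square)
qed

lemma emb_lamf: "emb (lamf k x) = NI ivt (\<lambda>j. Psi j (emb x)) k"
proof -
  have N: "Newt (\<lambda>k. emb (lamf k x)) (\<lambda>k. Psi k (emb x))"
    using Newt_hom[OF rhom_emb Newt_lamf[of x]] by (simp add: emb_psif)
  show ?thesis
    by (rule Newt_NI_eq[OF ivcond_ivt _ N]) (simp add: lamf_0 rhom_1[OF rhom_emb])
qed

lemma nw_emb_lamf: "k \<ge> 1 \<Longrightarrow> nw (\<lambda>i. emb (lamf i x)) k = Psi k (emb x)"
  unfolding emb_lamf by (rule nw_NI[OF ivcond_ivt])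

lemma NI_one: "NI ivt (\<lambda>j. 1) n = (if n = 0 then 1 else if n = 1 then 1 else 0)"
proof -
  have "NI ivt (\<lambda>k. \<Sum>a\<in>{0::nat}. (\<lambda>_. (1::ct)) a ^ k) n = esym n {0::nat} (\<lambda>_. 1)"
    by (rule NI_esym[OF ivcond_ivt]) simp
  then show ?thesis by (simp add: esym_single)
qed

lemma lamf_lambda_ring: "lambda_ring lamf"
  unfolding lambda_ring_def pre_lambda_ring_def
proof (intro conjI allI impI)
  fix x :: tr3
  show "lamf 0 x = 1" by (rule lamf_0)
  show "lamf 1 x = x"
  proof (rule emb_inj)
    have "emb (lamf 1 x) = ivt 1 * Psi 1 (emb x)" unfolding emb_lamf by (simp add: NI.simps)
    also have "\<dots> = emb x" by (cases x) (simp add: ivt_def Psi_def one_ct_def Cf_Suc0[OF CD])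
    finally show "emb (lamf 1 x) = emb x" .
  qed
next
  fix n :: nat and x y :: tr3
  show "lamf n (x + y) = (\<Sum>i\<le>n. lamf i x * lamf (n - i) y)"
  proof (rule emb_inj)
    have NX: "Newt (\<lambda>k. emb (lamf k x)) (\<lambda>k. Psi k (emb x))"
      using Newt_hom[OF rhom_emb Newt_lamf[of x]] by (simp add: emb_psif)
    have NY: "Newt (\<lambda>k. emb (lamf k y)) (\<lambda>k. Psi k (emb y))"
      using Newt_hom[OF rhom_emb Newt_lamf[of y]] by (simp add: emb_psif)
    have NC: "Newt (conv (\<lambda>k. emb (lamf k x)) (\<lambda>k. emb (lamf k y))) (\<lambda>k. Psi k (emb x) + Psi k (emb y))"
      by (rule Newt_conv[OF NX NY])
    have "emb (lamf n (x + y)) = NI ivt (\<lambda>j. Psi j (emb x) + Psi j (emb y)) n"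
      unfolding emb_lamf by (simp add: rhom_add[OF rhom_emb] rhom_add[OF rhom_Psi])
    also have "\<dots> = conv (\<lambda>k. emb (lamf k x)) (\<lambda>k. emb (lamf k y)) n"
      by (rule Newt_NI_eq[OF ivcond_ivt _ NC, symmetric]) (simp add: conv_0 lamf_0 rhom_1[OF rhom_emb])
    also have "\<dots> = emb (\<Sum>i\<le>n. lamf i x * lamf (n - i) y)"
      by (simp add: conv_def rhom_sum[OF rhom_emb] rhom_mult[OF rhom_emb])
    finally show "emb (lamf n (x + y)) = emb (\<Sum>i\<le>n. lamf i x * lamf (n - i) y)" .
  qed
next
  fix n :: nat assume n: "n \<ge> 2"
  show "lamf n 1 = 0"
  proof (rule emb_inj)
    have "emb (lamf n 1) = NI ivt (\<lambda>j. 1) n"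
      unfolding emb_lamf by (simp add: rhom_1[OF rhom_emb] rhom_1[OF rhom_Psi])
    also have "\<dots> = 0" using n by (simp add: NI_one)
    finally show "emb (lamf n 1) = emb 0" by (simp add: rhom_0[OF rhom_emb])
  qed
next
  fix n :: nat and x y :: tr3 assume n: "n \<ge> 1"
  show "lamf n (x * y) = mpeval (\<lambda>j. if j < n then lamf (j + 1) x else if j < 2 * n then lamf (j - n + 1) y else 0) (Pmul n)"
  proof (rule emb_inj)
    have "emb (lamf n (x * y)) = NI ivt (\<lambda>k. Psi k (emb x) * Psi k (emb y)) n"
      unfolding emb_lamf by (simp add: rhom_mult[OF rhom_emb] rhom_mult[OF rhom_Psi])
    also have "\<dots> = NI ivt (\<lambda>k. nw (\<lambda>i. emb (lamf i x)) k * nw (\<lambda>i. emb (lamf i y)) k) n"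
      by (rule NI_cong) (simp add: nw_emb_lamf)
    also have "\<dots> = mpeval (Ev n (\<lambda>i. emb (lamf i x)) (\<lambda>i. emb (lamf i y))) (Pmul n)"
      by (rule Imul_ct[symmetric])
    also have "\<dots> = emb (mpeval (Ev n (\<lambda>i. lamf i x) (\<lambda>i. lamf i y)) (Pmul n))"
      by (simp add: mpeval_hom[OF rhom_emb] Ev_hom[OF rhom_emb])
    finally show "emb (lamf n (x * y)) = emb (mpeval (\<lambda>j. if j < n then lamf (j + 1) x else if j < 2 * n then lamf (j - n + 1) y else 0) (Pmul n))"
      by (simp add: Ev_def[abs_def])
  qed
next
  fix m n :: nat and x :: tr3 assume m: "m \<ge> 1" and n: "n \<ge> 1"
  show "lamf m (lamf n x) = mpeval (\<lambda>j. if j < m * n then lamf (j + 1) x else 0) (Pcomp m n)"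
  proof (rule emb_inj)
    have "emb (lamf m (lamf n x)) = NI ivt (\<lambda>j. Psi j (NI ivt (\<lambda>k. Psi k (emb x)) n)) m"
      by (simp add: emb_lamf)
    also have "\<dots> = NI ivt (\<lambda>j. NI ivt (\<lambda>k. Psi j (Psi k (emb x))) n) m"
      by (simp add: NI_hom[OF rhom_Psi Psi_ivt])
    also have "\<dots> = NI ivt (\<lambda>j. NI ivt (\<lambda>k. nw (\<lambda>i. emb (lamf i x)) (j * k)) n) m"
    proof (rule NI_cong)
      fix j assume j: "1 \<le> j" "j \<le> m"
      show "NI ivt (\<lambda>k. Psi j (Psi k (emb x))) n = NI ivt (\<lambda>k. nw (\<lambda>i. emb (lamf i x)) (j * k)) n"
      proof (rule NI_cong)
        fix k assume k: "1 \<le> k" "k \<le> n"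
        have "j * k \<ge> 1" using j k by simp
        then show "Psi j (Psi k (emb x)) = nw (\<lambda>i. emb (lamf i x)) (j * k)"
          using j k by (simp add: Psi_Psi nw_emb_lamf)
      qed
    qed
    also have "\<dots> = mpeval (Cv (m * n) (\<lambda>i. emb (lamf i x))) (Pcomp m n)"
      by (rule Icomp_ct[symmetric])
    also have "\<dots> = emb (mpeval (Cv (m * n) (\<lambda>i. lamf i x)) (Pcomp m n))"
      by (simp add: mpeval_hom[OF rhom_emb] Cv_hom[OF rhom_emb])
    finally show "emb (lamf m (lamf n x)) = emb (mpeval (\<lambda>j. if j < m * n then lamf (j + 1) x else 0) (Pcomp m n))"
      by (simp add: Cv_def[abs_def])
  qed
qed

lemma lamf_Tr0: "i \<ge> 1 \<Longrightarrow> lamf i (Tr 0 \<beta> \<gamma>) = Tr 0 (p\<mu> b \<beta> i) (q\<mu> b c \<beta> \<gamma> i)"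
  by (simp add: lamf_def bs_zero conv_dl \<mu>_def)

lemma lamf_filtered: "filtered_lambda_ring d lamf"
  unfolding filtered_lambda_ring_def
proof (intro conjI allI impI ballI)
  show "lambda_ring lamf" by (rule lamf_lambda_ring)
next
  fix k i :: nat and r :: tr3 assume i: "i \<ge> 1" and r: "r \<in> fil d k"
  show "lamf i r \<in> fil d k"
  proof (cases "k = 0")
    case True
    obtain a' b' c' where "lamf i r = Tr a' b' c'" by (cases "lamf i r")
    then show ?thesis using True by (simp add: fil_def)
  next
    case False
    obtain \<beta> \<gamma> where r': "r = Tr 0 \<beta> \<gamma>" "d < k \<longrightarrow> \<beta> = 0" "2 * d < k \<longrightarrow> \<gamma> = 0"
      using r False by (auto simp: fil_def)
    have "lamf i r = Tr 0 (p\<mu> b \<beta> i) (q\<mu> b c \<beta> \<gamma> i)" using r' lamf_Tr0[OF i] by simp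
    moreover have "d < k \<longrightarrow> p\<mu> b \<beta> i = 0" using r' by (auto simp: p\<mu>_def[OF CD])
    moreover have "2 * d < k \<longrightarrow> q\<mu> b c \<beta> \<gamma> i = 0" using r' by (auto simp: q\<mu>_def[OF CD])
    ultimately show ?thesis using False by (auto simp: fil_def)
  qed
qed

lemma lamf_adams: "prime p \<Longrightarrow> adams lamf p X = of_int (b p) * X + of_int (c p) * X^2"
proof -
  assume p: "prime p"
  have p1: "p \<ge> 1" using p prime_ge_1_nat by simp
  have "emb (adams lamf p X) = nw (\<lambda>i. emb (lamf i X)) p"
    by (simp add: adams_nw nw_hom[OF rhom_emb])
  also have "\<dots> = Psi p (emb X)" by (rule nw_emb_lamf[OF p1])
  also have "\<dots> = emb (Tr 0 (b p) (c p))"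
    using p by (simp add: X_def Psi_def Bf_prime Cf_prime[OF CD])
  finally have "adams lamf p X = Tr 0 (b p) (c p)" by (rule emb_inj)
  then show ?thesis by (simp add: of_int_tr3 X_def power2_eq_square)
qed

end


theorem lemma3p1:
  fixes b c :: "nat \<Rightarrow> int" and d :: nat
  assumes "d > 0"
  shows "((\<exists>lam. filtered_lambda_ring d lam \<and>
            (\<forall>p. prime p \<longrightarrow> adams lam p X = of_int (b p) * X + of_int (c p) * X^2))
          \<longleftrightarrow>
          ((\<forall>p. prime p \<longrightarrow> int p dvd b p) \<and>
           odd (c 2) \<and> (\<forall>p. prime p \<and> p > 2 \<longrightarrow> int p dvd c p) \<and>
           (\<forall>p q. prime p \<and> prime q \<longrightarrow> (b q^2 - b q) * c p = (b p^2 - b p) * c q)))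
     \<and> (((\<forall>p. prime p \<longrightarrow> int p dvd b p) \<and>
           odd (c 2) \<and> (\<forall>p. prime p \<and> p > 2 \<longrightarrow> int p dvd c p) \<and>
           (\<forall>p q. prime p \<and> prime q \<longrightarrow> (b q^2 - b q) * c p = (b p^2 - b p) * c q))
        \<longrightarrow> (b 2 \<noteq> 0 \<longrightarrow> (\<forall>p. prime p \<and> p > 2 \<longrightarrow> 2 ^ multiplicity 2 (b 2) dvd b p^2 - b p))
          \<and> (b 2 = 0 \<longrightarrow> (\<forall>p. prime p \<and> p > 2 \<longrightarrow> b p = 0)))"
proof -
  let ?E = "\<exists>lam. filtered_lambda_ring d lam \<and>
            (\<forall>p. prime p \<longrightarrow> adams lam p X = of_int (b p) * X + of_int (c p) * X^2)"
  let ?C = "(\<forall>p. prime p \<longrightarrow> int p dvd b p) \<and>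
           odd (c 2) \<and> (\<forall>p. prime p \<and> p > 2 \<longrightarrow> int p dvd c p) \<and>
           (\<forall>p q. prime p \<and> prime q \<longrightarrow> (b q^2 - b q) * c p = (b p^2 - b p) * c q)"
  have CC: "?C \<longleftrightarrow> CONDS b c" by (simp add: CONDS_def)
  have I: "?E \<longleftrightarrow> ?C"
  proof
    assume ?E
    then obtain lam where F: "filtered_lambda_ring d lam"
      and A: "\<forall>p. prime p \<longrightarrow> adams lam p X = of_int (b p) * X + of_int (c p) * X^2" by blast
    show ?C by (rule forward[OF assms F A])
  next
    assume ?C
    then have CD: "CONDS b c" using CC by simp
    show ?E using lamf_filtered[OF CD] lamf_adams[OF CD] by blast
  qed
  have M: "?C \<longrightarrow> (b 2 \<noteq> 0 \<longrightarrow> (\<forall>p. prime p \<and> p > 2 \<longrightarrow> 2 ^ multiplicity 2 (b 2) dvd b p^2 - b p))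
          \<and> (b 2 = 0 \<longrightarrow> (\<forall>p. prime p \<and> p > 2 \<longrightarrow> b p = 0))"
    using moreover_part CC by blast
  show ?thesis using I M by blast
qed


end
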